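(* Let $G=(V,E)$ be a connected edge-transitive graph that is not vertex-transitive, with minimum degree $\delta$ and maximum degree $\Delta$. If $\delta\geq 4$, or $\delta=3$ and $\Delta\geq 6$, then $|E|>2|V|-3$. If $\delta\leq 3$ and $\Delta\leq 5$, then either $|E|\leq 2|V|-3$, or $G$ is isomorphic to one of $K_{3,4}$, $K_{3,5}$, $H_{6,10}$.
   Context: All graphs are finite and simple. Vertex-transitive / edge-transitive: the automorphism group acts transitively on vertices / edges. $K_{a,b}$ is the complete bipartite graph. $H_{6,10}$ is the bipartite graph on vertex set $\{0,\dots,15\}$ with parts $\{0,\dots,5\}$ and $\{6,\dots,15\}$ and adjacency: $0:\{6,8,9,10,15\}$, $1:\{7,9,10,12,13\}$, $2:\{6,8,11,12,13\}$, $3:\{6,7,10,11,14\}$, $4:\{9,11,12,14,15\}$, $5:\{7,8,13,14,15\}$. *)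

theory Defs
  imports Main
begin

definition simple_graph :: "'a set \<Rightarrow> ('a \<Rightarrow> 'a \<Rightarrow> bool) \<Rightarrow> bool" where
  "simple_graph V E \<longleftrightarrow> finite V \<and> (\<forall>u v. E u v \<longrightarrow> u \<in> V \<and> v \<in> V)
     \<and> (\<forall>u v. E u v \<longrightarrow> E v u) \<and> (\<forall>u. \<not> E u u)"

definition edges :: "'a set \<Rightarrow> ('a \<Rightarrow> 'a \<Rightarrow> bool) \<Rightarrow> 'a set set" where
  "edges V E = {{u, v} | u v. u \<in> V \<and> v \<in> V \<and> E u v}"

definition degree :: "'a set \<Rightarrow> ('a \<Rightarrow> 'a \<Rightarrow> bool) \<Rightarrow> 'a \<Rightarrow> nat" where
  "degree V E v = card {u \<in> V. E v u}"

definition min_degree :: "'a set \<Rightarrow> ('a \<Rightarrow> 'a \<Rightarrow> bool) \<Rightarrow> nat" where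
  "min_degree V E = Min (degree V E ` V)"

definition max_degree :: "'a set \<Rightarrow> ('a \<Rightarrow> 'a \<Rightarrow> bool) \<Rightarrow> nat" where
  "max_degree V E = Max (degree V E ` V)"

definition connected_graph :: "'a set \<Rightarrow> ('a \<Rightarrow> 'a \<Rightarrow> bool) \<Rightarrow> bool" where
  "connected_graph V E \<longleftrightarrow> V \<noteq> {} \<and> (\<forall>u\<in>V. \<forall>v\<in>V. E\<^sup>*\<^sup>* u v)"

definition automorphism :: "'a set \<Rightarrow> ('a \<Rightarrow> 'a \<Rightarrow> bool) \<Rightarrow> ('a \<Rightarrow> 'a) \<Rightarrow> bool" where
  "automorphism V E f \<longleftrightarrow> bij_betw f V V \<and> (\<forall>u\<in>V. \<forall>v\<in>V. E u v \<longleftrightarrow> E (f u) (f v))"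

definition vertex_transitive :: "'a set \<Rightarrow> ('a \<Rightarrow> 'a \<Rightarrow> bool) \<Rightarrow> bool" where
  "vertex_transitive V E \<longleftrightarrow> (\<forall>u\<in>V. \<forall>v\<in>V. \<exists>f. automorphism V E f \<and> f u = v)"

definition edge_transitive :: "'a set \<Rightarrow> ('a \<Rightarrow> 'a \<Rightarrow> bool) \<Rightarrow> bool" where
  "edge_transitive V E \<longleftrightarrow> (\<forall>e\<in>edges V E. \<forall>e'\<in>edges V E.
      \<exists>f. automorphism V E f \<and> f ` e = e')"

definition graph_iso :: "'a set \<Rightarrow> ('a \<Rightarrow> 'a \<Rightarrow> bool) \<Rightarrow> 'b set \<Rightarrow> ('b \<Rightarrow> 'b \<Rightarrow> bool) \<Rightarrow> bool" where
  "graph_iso V E V' E' \<longleftrightarrow> (\<exists>f. bij_betw f V V' \<and> (\<forall>u\<in>V. \<forall>v\<in>V. E u v \<longleftrightarrow> E' (f u) (f v)))"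

definition K_bip_V :: "nat \<Rightarrow> nat \<Rightarrow> nat set" where
  "K_bip_V a b = {0..<a+b}"

definition K_bip_E :: "nat \<Rightarrow> nat \<Rightarrow> nat \<Rightarrow> nat \<Rightarrow> bool" where
  "K_bip_E a b u v \<longleftrightarrow> u < a+b \<and> v < a+b \<and> ((u < a \<and> a \<le> v) \<or> (v < a \<and> a \<le> u))"

definition H610_V :: "nat set" where
  "H610_V = {0..<16}"

definition H610_nbr :: "nat \<Rightarrow> nat set" where
  "H610_nbr i = (if i = 0 then {6,8,9,10,15}
     else if i = 1 then {7,9,10,12,13}
     else if i = 2 then {6,8,11,12,13}
     else if i = 3 then {6,7,10,11,14}
     else if i = 4 then {9,11,12,14,15}
     else if i = 5 then {7,8,13,14,15}
     else {})"

definition H610_E :: "nat \<Rightarrow> nat \<Rightarrow> bool" where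
  "H610_E u v \<longleftrightarrow> (u \<le> 5 \<and> v \<in> H610_nbr u) \<or> (v \<le> 5 \<and> u \<in> H610_nbr v)"

end

theory Submission
  imports Defs
begin

lemma sg_facts:
  assumes "simple_graph V E"
  shows "finite V" "E u v \<Longrightarrow> u \<in> V" "E u v \<Longrightarrow> v \<in> V" "E u v \<Longrightarrow> E v u" "\<not> E u u"
  using assms unfolding simple_graph_def by auto

lemma aut_id: "automorphism V E id"
  by (simp add: automorphism_def)

lemma aut_bij: "automorphism V E f \<Longrightarrow> bij_betw f V V"
  by (simp add: automorphism_def)

lemma aut_in: "automorphism V E f \<Longrightarrow> x \<in> V \<Longrightarrow> f x \<in> V"
  by (meson aut_bij bij_betw_apply)

lemma aut_E: "automorphism V E f \<Longrightarrow> u \<in> V \<Longrightarrow> v \<in> V \<Longrightarrow> E (f u) (f v) = E u v"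
  by (simp add: automorphism_def)

lemma aut_comp:
  assumes "automorphism V E f" "automorphism V E g"
  shows "automorphism V E (f \<circ> g)"
proof -
  have bf: "bij_betw f V V" and bg: "bij_betw g V V" using assms automorphism_def by auto
  have "bij_betw (f \<circ> g) V V" using bij_betw_trans[OF bg bf] .
  moreover have "\<forall>u\<in>V. \<forall>v\<in>V. E u v \<longleftrightarrow> E ((f \<circ> g) u) ((f \<circ> g) v)"
  proof (intro ballI)
    fix u v assume "u \<in> V" "v \<in> V"
    then have "g u \<in> V" "g v \<in> V" using assms(2) aut_in by metis+
    then show "E u v \<longleftrightarrow> E ((f \<circ> g) u) ((f \<circ> g) v)"
      using aut_E[OF assms(1) `g u \<in> V` `g v \<in> V`] aut_E[OF assms(2) `u\<in>V` `v\<in>V`] by simp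
  qed
  ultimately show ?thesis unfolding automorphism_def by blast
qed

lemma aut_inv:
  assumes "automorphism V E f"
  shows "automorphism V E (inv_into V f)"
proof -
  have bf: "bij_betw f V V" using assms automorphism_def by auto
  have bi: "bij_betw (inv_into V f) V V" by (rule bij_betw_inv_into[OF bf])
  moreover have "\<forall>u\<in>V. \<forall>v\<in>V. E u v \<longleftrightarrow> E (inv_into V f u) (inv_into V f v)"
  proof (intro ballI)
    fix u v assume u: "u \<in> V" and v: "v \<in> V"
    have iu: "inv_into V f u \<in> V" "inv_into V f v \<in> V" using bi u v bij_betw_apply by metis+
    have "f (inv_into V f u) = u" "f (inv_into V f v) = v"
      using bf u v by (meson bij_betw_inv_into_right)+
    then show "E u v \<longleftrightarrow> E (inv_into V f u) (inv_into V f v)"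
      using assms iu aut_E by metis
  qed
  ultimately show ?thesis unfolding automorphism_def by blast
qed

lemma aut_inv_left: "automorphism V E f \<Longrightarrow> x \<in> V \<Longrightarrow> inv_into V f (f x) = x"
  by (meson aut_bij bij_betw_imp_inj_on inv_into_f_f)

definition nb :: "'a set \<Rightarrow> ('a \<Rightarrow> 'a \<Rightarrow> bool) \<Rightarrow> 'a \<Rightarrow> 'a set" where
  "nb V E w = {u \<in> V. E w u}"

lemma degree_nb: "degree V E w = card (nb V E w)"
  by (simp add: degree_def nb_def)

lemma aut_nb:
  assumes "automorphism V E f" "w \<in> V"
  shows "f ` nb V E w = nb V E (f w)"
proof
  show "f ` nb V E w \<subseteq> nb V E (f w)"
    using assms aut_in aut_E unfolding nb_def by fastforce
  show "nb V E (f w) \<subseteq> f ` nb V E w"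
  proof
    fix u' assume "u' \<in> nb V E (f w)"
    then have u': "u' \<in> V" "E (f w) u'" by (auto simp: nb_def)
    then obtain u where u: "u \<in> V" "u' = f u"
      using aut_bij[OF assms(1)] by (metis bij_betw_imp_surj_on imageE)
    then have "E w u" using u' assms aut_E by metis
    then show "u' \<in> f ` nb V E w" using u by (auto simp: nb_def)
  qed
qed

lemma aut_degree:
  assumes "automorphism V E f" "w \<in> V"
  shows "degree V E (f w) = degree V E w"
proof -
  have "inj_on f (nb V E w)"
    using aut_bij[OF assms(1)] by (rule inj_on_subset[OF bij_betw_imp_inj_on]) (auto simp: nb_def)
  then show ?thesis using aut_nb[OF assms] by (metis card_image degree_nb)
qed

lemma graph_structure:
  assumes sg: "simple_graph V E" and cg: "connected_graph V E"
    and et: "edge_transitive V E" and nvt: "\<not> vertex_transitive V E"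
  obtains A B where "V = A \<union> B" "A \<inter> B = {}" "A \<noteq> {}" "B \<noteq> {}"
    "\<And>u v. E u v \<Longrightarrow> (u \<in> A \<and> v \<in> B) \<or> (u \<in> B \<and> v \<in> A)"
    "\<And>a a'. a \<in> A \<Longrightarrow> a' \<in> A \<Longrightarrow> degree V E a = degree V E a'"
    "\<And>b b'. b \<in> B \<Longrightarrow> b' \<in> B \<Longrightarrow> degree V E b = degree V E b'"
    "\<And>a b a' b'. a \<in> A \<Longrightarrow> b \<in> B \<Longrightarrow> a' \<in> A \<Longrightarrow> b' \<in> B \<Longrightarrow> E a b \<Longrightarrow> E a' b'
       \<Longrightarrow> \<exists>f. automorphism V E f \<and> f a = a' \<and> f b = b'"
proof -
  from nvt obtain u v where uv: "u \<in> V" "v \<in> V" "\<not> (\<exists>f. automorphism V E f \<and> f u = v)"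
    unfolding vertex_transitive_def by blast
  have "u \<noteq> v"
  proof
    assume "u = v"
    then have "automorphism V E id \<and> id u = v" using aut_id by simp
    then show False using uv(3) by blast
  qed
  have conn: "\<And>x y. x \<in> V \<Longrightarrow> y \<in> V \<Longrightarrow> E\<^sup>*\<^sup>* x y" using cg unfolding connected_graph_def by blast
  have nbex: "\<exists>y. E x y" if H: "x \<in> V" for x
  proof -
    have "\<exists>w\<in>V. w \<noteq> x"
    proof (cases "u = x")
      case True then show ?thesis using uv(2) `u \<noteq> v` by (intro bexI[of _ v]) auto
    next
      case False then show ?thesis using uv(1) by (intro bexI[of _ u]) auto
    qed
    then obtain w where w: "w \<in> V" "w \<noteq> x" by blast
    have "E\<^sup>*\<^sup>* x w" using conn[OF H w(1)] .
    then show ?thesis using w(2) by (cases rule: converse_rtranclpE) auto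
  qed
  obtain a0 b0 where e0: "E a0 b0" using nbex uv by blast
  have a0V: "a0 \<in> V" using sg_facts(2)[OF sg e0] .
  have b0V: "b0 \<in> V" using sg_facts(3)[OF sg e0] .
  have ed0: "{a0, b0} \<in> edges V E" using e0 a0V b0V unfolding edges_def by blast
  have edge_map: "\<exists>f. automorphism V E f \<and> ((f a0 = x \<and> f b0 = y) \<or> (f a0 = y \<and> f b0 = x))"
    if H: "E x y" for x y
  proof -
    have "x \<in> V" "y \<in> V" using sg_facts(2,3)[OF sg H] by auto
    then have "{x, y} \<in> edges V E" using H unfolding edges_def by blast
    then obtain f where f: "automorphism V E f" "f ` {a0, b0} = {x, y}"
      using et ed0 unfolding edge_transitive_def by blast
    then have "{f a0, f b0} = {x, y}" by simp
    then have "(f a0 = x \<and> f b0 = y) \<or> (f a0 = y \<and> f b0 = x)" by (simp add: doubleton_eq_iff)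
    then show ?thesis using f(1) by blast
  qed
  define orb where "orb x = {w. \<exists>f. automorphism V E f \<and> w = f x}" for x
  define A where "A = orb a0"
  define B where "B = orb b0"
  have AV: "A \<subseteq> V"
  proof
    fix w assume "w \<in> A"
    then obtain f where "automorphism V E f" "w = f a0" unfolding A_def orb_def by blast
    then show "w \<in> V" using aut_in a0V by simp
  qed
  have BV: "B \<subseteq> V"
  proof
    fix w assume "w \<in> B"
    then obtain f where "automorphism V E f" "w = f b0" unfolding B_def orb_def by blast
    then show "w \<in> V" using aut_in b0V by simp
  qed
  have "automorphism V E id \<and> a0 = id a0" using aut_id by simp
  then have a0A: "a0 \<in> A" unfolding A_def orb_def by blast
  have "automorphism V E id \<and> b0 = id b0" using aut_id by simp
  then have b0B: "b0 \<in> B" unfolding B_def orb_def by blast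
  have cover: "V \<subseteq> A \<union> B"
  proof
    fix x assume "x \<in> V"
    then obtain y where "E x y" using nbex by blast
    then obtain f where "automorphism V E f" "(f a0 = x \<and> f b0 = y) \<or> (f a0 = y \<and> f b0 = x)"
      using edge_map by blast
    then show "x \<in> A \<union> B" unfolding A_def B_def orb_def by blast
  qed
  have disj: "A \<inter> B = {}"
  proof (rule ccontr)
    assume "A \<inter> B \<noteq> {}"
    then obtain f g where fg: "automorphism V E f" "automorphism V E g" "f a0 = g b0"
      unfolding A_def B_def orb_def by blast
    have "b0 \<in> A"
    proof -
      have "(inv_into V g \<circ> f) a0 = b0" using fg aut_inv_left b0V by (metis comp_apply)
      moreover have "automorphism V E (inv_into V g \<circ> f)" using fg aut_comp aut_inv by blast
      ultimately show ?thesis unfolding A_def orb_def by blast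
    qed
    have allA: "x \<in> A" if H: "x \<in> V" for x
    proof -
      have "x \<in> A \<union> B" using cover H by blast
      moreover have "x \<in> A" if H2: "x \<in> B"
      proof -
        from H2 obtain h where h: "automorphism V E h" "x = h b0" unfolding B_def orb_def by blast
        from `b0 \<in> A` obtain k where k: "automorphism V E k" "b0 = k a0" unfolding A_def orb_def by blast
        have "automorphism V E (h \<circ> k)" using h k aut_comp by blast
        moreover have "x = (h \<circ> k) a0" using h k by simp
        ultimately show ?thesis unfolding A_def orb_def by blast
      qed
      ultimately show ?thesis by blast
    qed
    have "vertex_transitive V E"
      unfolding vertex_transitive_def
    proof (intro ballI)
      fix x y assume "x \<in> V" "y \<in> V"
      then obtain h k where h: "automorphism V E h" "x = h a0" and k: "automorphism V E k" "y = k a0"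
        using allA unfolding A_def orb_def by blast
      have "automorphism V E (k \<circ> inv_into V h)" using h k aut_comp aut_inv by blast
      moreover have "(k \<circ> inv_into V h) x = y" using h k aut_inv_left[OF h(1) a0V] by simp
      ultimately show "\<exists>f. automorphism V E f \<and> f x = y" by blast
    qed
    then show False using nvt by blast
  qed
  have autA: "f x \<in> A" if H: "automorphism V E f" "x \<in> A" for f x
  proof -
    obtain g where g: "automorphism V E g" "x = g a0" using H(2) unfolding A_def orb_def by blast
    have "automorphism V E (f \<circ> g)" using aut_comp[OF H(1) g(1)] .
    moreover have "f x = (f \<circ> g) a0" using g by simp
    ultimately show ?thesis unfolding A_def orb_def by blast
  qed
  have flag0: "\<exists>f. automorphism V E f \<and> f a0 = a \<and> f b0 = b" if H: "a \<in> A" "b \<in> B" "E a b" for a b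
  proof -
    obtain f where f: "automorphism V E f" "(f a0 = a \<and> f b0 = b) \<or> (f a0 = b \<and> f b0 = a)"
      using edge_map[OF H(3)] by blast
    have "f a0 \<in> A" using autA f(1) a0A .
    then have "\<not> (f a0 = b)" using H(2) disj by blast
    then show ?thesis using f by blast
  qed
  show ?thesis
  proof (rule that)
    show "V = A \<union> B" using cover AV BV by blast
    show "A \<inter> B = {}" by (rule disj)
    show "A \<noteq> {}" using a0A by blast
    show "B \<noteq> {}" using b0B by blast
    show "(u \<in> A \<and> v \<in> B) \<or> (u \<in> B \<and> v \<in> A)" if H: "E u v" for u v
    proof -
      obtain f where "automorphism V E f" "(f a0 = u \<and> f b0 = v) \<or> (f a0 = v \<and> f b0 = u)"
        using edge_map[OF H] by blast
      then show ?thesis unfolding A_def B_def orb_def by blast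
    qed
    show "degree V E a = degree V E a'" if H: "a \<in> A" "a' \<in> A" for a a'
    proof -
      obtain g where g: "automorphism V E g" "a = g a0" using H(1) unfolding A_def orb_def by blast
      obtain g' where g': "automorphism V E g'" "a' = g' a0" using H(2) unfolding A_def orb_def by blast
      show ?thesis using aut_degree[OF g(1) a0V] aut_degree[OF g'(1) a0V] g(2) g'(2) by simp
    qed
    show "degree V E b = degree V E b'" if H: "b \<in> B" "b' \<in> B" for b b'
    proof -
      obtain g where g: "automorphism V E g" "b = g b0" using H(1) unfolding B_def orb_def by blast
      obtain g' where g': "automorphism V E g'" "b' = g' b0" using H(2) unfolding B_def orb_def by blast
      show ?thesis using aut_degree[OF g(1) b0V] aut_degree[OF g'(1) b0V] g(2) g'(2) by simp
    qed
    show "\<exists>f. automorphism V E f \<and> f a = a' \<and> f b = b'"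
      if H: "a \<in> A" "b \<in> B" "a' \<in> A" "b' \<in> B" "E a b" "E a' b'" for a b a' b'
    proof -
      obtain f where f: "automorphism V E f" "f a0 = a" "f b0 = b" using flag0[OF H(1,2,5)] by blast
      obtain g where g: "automorphism V E g" "g a0 = a'" "g b0 = b'" using flag0[OF H(3,4,6)] by blast
      have "automorphism V E (g \<circ> inv_into V f)" using f g aut_comp aut_inv by blast
      moreover have "(g \<circ> inv_into V f) a = a'" "(g \<circ> inv_into V f) b = b'"
        using f g aut_inv_left[OF f(1) a0V] aut_inv_left[OF f(1) b0V] by auto
      ultimately show ?thesis by blast
    qed
  qed
qed

locale bip =
  fixes V :: "'a set" and E :: "'a \<Rightarrow> 'a \<Rightarrow> bool" and A B :: "'a set" and d1 d2 :: nat
  assumes sg: "simple_graph V E" and cg: "connected_graph V E"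
    and VAB: "V = A \<union> B" and disj: "A \<inter> B = {}" and Ane: "A \<noteq> {}" and Bne: "B \<noteq> {}"
    and eAB: "\<And>u v. E u v \<Longrightarrow> (u \<in> A \<and> v \<in> B) \<or> (u \<in> B \<and> v \<in> A)"
    and degA: "\<And>a. a \<in> A \<Longrightarrow> degree V E a = d1"
    and degB: "\<And>b. b \<in> B \<Longrightarrow> degree V E b = d2"
    and flag: "\<And>a b a' b'. a \<in> A \<Longrightarrow> b \<in> B \<Longrightarrow> a' \<in> A \<Longrightarrow> b' \<in> B \<Longrightarrow> E a b \<Longrightarrow> E a' b'
       \<Longrightarrow> \<exists>f. automorphism V E f \<and> f a = a' \<and> f b = b'"
begin

lemma swap: "bip V E B A d2 d1"
proof
  show "V = B \<union> A" using VAB by blast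
  show "B \<inter> A = {}" using disj by blast
  show "(u \<in> B \<and> v \<in> A) \<or> (u \<in> A \<and> v \<in> B)" if H: "E u v" for u v using eAB[OF H] by blast
  show "\<exists>f. automorphism V E f \<and> f a = a' \<and> f b = b'"
    if H: "a \<in> B" "b \<in> A" "a' \<in> B" "b' \<in> A" "E a b" "E a' b'" for a b a' b'
  proof -
    have "E b a" "E b' a'" using H(5,6) sg_facts(4)[OF sg] by auto
    then obtain f where "automorphism V E f \<and> f b = b' \<and> f a = a'" using flag[OF H(2,1,4,3)] by blast
    then show ?thesis by blast
  qed
qed (use sg cg Ane Bne degA degB in auto)

lemma finV: "finite V" using sg_facts(1)[OF sg] .
lemma finA: "finite A" using finV VAB by simp
lemma finB: "finite B" using finV VAB by simp
lemma cardV: "card V = card A + card B" using VAB disj finA finB card_Un_disjoint by metis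
lemma Esym: "E u v \<Longrightarrow> E v u" using sg_facts(4)[OF sg] .

lemma nbA: "a \<in> A \<Longrightarrow> nb V E a \<subseteq> B"
  unfolding nb_def using eAB disj by blast
lemma nbB: "b \<in> B \<Longrightarrow> nb V E b \<subseteq> A"
  unfolding nb_def using eAB disj by blast
lemma card_nbA: "a \<in> A \<Longrightarrow> card (nb V E a) = d1" using degA degree_nb by metis
lemma card_nbB: "b \<in> B \<Longrightarrow> card (nb V E b) = d2" using degB degree_nb by metis

lemma d1_le: "d1 \<le> card B"
proof -
  obtain a where "a \<in> A" using Ane by blast
  then show ?thesis using card_nbA nbA card_mono finB by metis
qed

lemma d1_pos: "d1 \<ge> 1"
proof -
  obtain a where a: "a \<in> A" using Ane by blast
  obtain b where b: "b \<in> B" using Bne by blast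
  have "a \<noteq> b" using a b disj by blast
  have "E\<^sup>*\<^sup>* a b" using cg a b VAB unfolding connected_graph_def by blast
  then obtain y where "E a y" using `a \<noteq> b` by (cases rule: converse_rtranclpE) auto
  then have "y \<in> nb V E a" using sg_facts(3)[OF sg] unfolding nb_def by blast
  moreover have "finite (nb V E a)" using finV unfolding nb_def by simp
  ultimately have "card (nb V E a) \<ge> 1"
    by (metis One_nat_def Suc_leI card_gt_0_iff empty_iff)
  then show ?thesis using card_nbA[OF a] by simp
qed

lemma edges_eq: "edges V E = (\<lambda>p. {fst p, snd p}) ` (SIGMA a:A. nb V E a)"
proof
  show "edges V E \<subseteq> (\<lambda>p. {fst p, snd p}) ` (SIGMA a:A. nb V E a)"
  proof
    fix e assume "e \<in> edges V E"
    then obtain u v where uv: "e = {u, v}" "u \<in> V" "v \<in> V" "E u v" unfolding edges_def by blast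
    show "e \<in> (\<lambda>p. {fst p, snd p}) ` (SIGMA a:A. nb V E a)"
    proof (cases "u \<in> A")
      case True
      then have "(u, v) \<in> (SIGMA a:A. nb V E a)" using uv unfolding nb_def by blast
      then show ?thesis using uv(1) by force
    next
      case False
      then have "v \<in> A" using eAB[OF uv(4)] by blast
      then have "(v, u) \<in> (SIGMA a:A. nb V E a)" using uv Esym unfolding nb_def by blast
      moreover have "e = {v, u}" using uv(1) by blast
      ultimately show ?thesis by force
    qed
  qed
  show "(\<lambda>p. {fst p, snd p}) ` (SIGMA a:A. nb V E a) \<subseteq> edges V E"
  proof
    fix e assume "e \<in> (\<lambda>p. {fst p, snd p}) ` (SIGMA a:A. nb V E a)"
    then obtain a b where ab: "e = {a, b}" "a \<in> A" "b \<in> V" "E a b" unfolding nb_def by auto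
    have "a \<in> V" using ab(2) VAB by blast
    then show "e \<in> edges V E" unfolding edges_def using ab by blast
  qed
qed

lemma card_edges: "card (edges V E) = card A * d1"
proof -
  have inj: "inj_on (\<lambda>p. {fst p, snd p}) (SIGMA a:A. nb V E a)"
  proof (rule inj_onI)
    fix p q assume p: "p \<in> (SIGMA a:A. nb V E a)" and q: "q \<in> (SIGMA a:A. nb V E a)"
      and eq: "{fst p, snd p} = {fst q, snd q}"
    have "fst p \<in> A" "fst q \<in> A" "snd p \<in> nb V E (fst p)" "snd q \<in> nb V E (fst q)" using p q by auto
    then have "fst p \<in> A" "snd p \<in> B" "fst q \<in> A" "snd q \<in> B" using nbA by blast+
    then have "fst p = fst q \<and> snd p = snd q" using eq disj by (metis disjoint_iff doubleton_eq_iff)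
    then show "p = q" by (simp add: prod_eq_iff)
  qed
  have "card (edges V E) = card (SIGMA a:A. nb V E a)"
    using edges_eq card_image[OF inj] by simp
  also have "\<dots> = (\<Sum>a\<in>A. card (nb V E a))"
    using finA finV by (intro card_SigmaI) (auto simp: nb_def)
  also have "\<dots> = (\<Sum>a\<in>A. d1)" using card_nbA by simp
  finally show ?thesis by simp
qed

lemma degs: "degree V E ` V = {d1, d2}"
  using degA degB VAB Ane Bne by auto

lemma min_deg: "min_degree V E = min d1 d2"
  unfolding min_degree_def degs by simp
lemma max_deg: "max_degree V E = max d1 d2"
  unfolding max_degree_def degs by simp

end

lemma dc:
  assumes "finite S" "finite T"
  shows "(\<Sum>a\<in>S. card {y\<in>T. R a y}) = (\<Sum>y\<in>T. card {a\<in>S. R a y})"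
proof -
  have c1: "card {y\<in>T. R a y} = (\<Sum>y\<in>T. if R a y then 1 else 0)" for a
    using assms(2) by (simp add: sum.inter_filter[symmetric])
  have c2: "card {a\<in>S. R a y} = (\<Sum>a\<in>S. if R a y then 1 else 0)" for y
    using assms(1) by (simp add: sum.inter_filter[symmetric])
  show ?thesis unfolding c1 c2 by (rule sum.swap)
qed

lemma two_vals:
  assumes "S = {u, v}" "u \<noteq> v" "f ` S = {p, q}" "p \<noteq> q"
  shows "card {w\<in>S. f w = p} = 1"
proof -
  have "{f u, f v} = {p, q}" using assms(1,3) by simp
  then have "(f u = p \<and> f v = q) \<or> (f u = q \<and> f v = p)" by (simp add: doubleton_eq_iff)
  then have "{w\<in>S. f w = p} = {u} \<or> {w\<in>S. f w = p} = {v}" using assms(1,2,4) by auto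
  then show ?thesis by auto
qed

lemma ar10: "(c::nat) * p = 10 \<Longrightarrow> c \<le> 5 \<Longrightarrow> p \<le> 5 \<Longrightarrow> (c = 5 \<and> p = 2) \<or> (c = 2 \<and> p = 5)"
proof -
  assume H: "c * p = 10" "c \<le> 5" "p \<le> 5"
  have "c = 0 \<or> c = 1 \<or> c = 2 \<or> c = 3 \<or> c = 4 \<or> c = 5" using H by arith
  then show ?thesis using H by (elim disjE) (simp_all, presburger+)
qed

lemma ar5: "(c::nat) * p = 5 \<Longrightarrow> c \<le> 5 \<Longrightarrow> (c = 1 \<and> p = 5) \<or> (c = 5 \<and> p = 1)"
proof -
  assume H: "c * p = 5" "c \<le> 5"
  have "c = 0 \<or> c = 1 \<or> c = 2 \<or> c = 3 \<or> c = 4 \<or> c = 5" using H by arith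
  then show ?thesis using H by (elim disjE) (simp_all, presburger+)
qed

locale hcase = bip +
  assumes h1: "d1 = 3" and h2: "d2 = 5" and hA: "card A = 10" and hB: "card B = 6"
begin

abbreviation N where "N \<equiv> nb V E"
definition lam where "lam x y = card (N x \<inter> N y)"

lemma N_iff: "u \<in> N w \<longleftrightarrow> u \<in> V \<and> E w u" by (simp add: nb_def)
lemma N_sym: "u \<in> V \<Longrightarrow> w \<in> V \<Longrightarrow> u \<in> N w \<longleftrightarrow> w \<in> N u"
  using N_iff Esym by blast
lemma N_V: "N w \<subseteq> V" by (auto simp: nb_def)
lemma finN: "finite (N w)" using finite_subset[OF N_V finV] .

lemma aut_lam:
  assumes f: "automorphism V E f" and xy: "x \<in> V" "y \<in> V"
  shows "lam (f x) (f y) = lam x y"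
proof -
  have inj: "inj_on f V" using aut_bij[OF f] bij_betw_imp_inj_on by blast
  have "N (f x) \<inter> N (f y) = f ` N x \<inter> f ` N y" using aut_nb[OF f] xy by simp
  also have "\<dots> = f ` (N x \<inter> N y)" using inj_on_image_Int[OF inj N_V N_V] by simp
  finally have "card (N (f x) \<inter> N (f y)) = card (N x \<inter> N y)"
    using card_image inj_on_subset[OF inj] N_V by (metis Int_lower1 subset_trans)
  then show ?thesis unfolding lam_def .
qed

lemma Lconst:
  assumes x: "x \<in> B" and a: "a \<in> N x" and a': "a' \<in> N x"
  shows "lam x ` (N a - {x}) = lam x ` (N a' - {x})"
proof -
  have aA: "a \<in> A" and a'A: "a' \<in> A" using a a' nbB[OF x] by auto
  have xV: "x \<in> V" using x VAB by blast
  have "E a x" "E a' x" using a a' N_iff Esym by blast+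
  then obtain f where f: "automorphism V E f" "f a = a'" "f x = x" using flag[OF aA x a'A x] by blast
  have inj: "inj_on f V" using aut_bij[OF f(1)] bij_betw_imp_inj_on by blast
  have aV: "a \<in> V" using aA VAB by blast
  have "f ` (N a - {x}) = f ` N a - f ` {x}"
    using inj_on_image_set_diff[OF inj, of "N a" "{x}"] N_V[of a] xV by blast
  also have "\<dots> = N a' - {x}" using aut_nb[OF f(1) aV] f by simp
  finally have im: "f ` (N a - {x}) = N a' - {x}" .
  have "lam x ` (N a' - {x}) = lam x ` f ` (N a - {x})" using im by simp
  also have "\<dots> = (\<lambda>y. lam x (f y)) ` (N a - {x})" by (simp add: image_image)
  also have "\<dots> = lam x ` (N a - {x})"
  proof (rule image_cong[OF refl])
    fix y assume "y \<in> N a - {x}"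
    then have "y \<in> V" using N_V by blast
    then show "lam x (f y) = lam x y" using aut_lam[OF f(1) xV] f(3) by metis
  qed
  finally show ?thesis by simp
qed

lemma S1:
  assumes x: "x \<in> B"
  shows "(\<Sum>a\<in>N x. card {y\<in>N a - {x}. P (lam x y)}) = (\<Sum>y\<in>{y\<in>B-{x}. P (lam x y)}. lam x y)"
proof -
  define T where "T = {y\<in>B-{x}. P (lam x y)}"
  have finT: "finite T" unfolding T_def using finB by simp
  have l: "{y\<in>N a - {x}. P (lam x y)} = {y\<in>T. E a y}" if a: "a \<in> N x" for a
  proof -
    have "a \<in> A" using a nbB[OF x] by blast
    then have "N a \<subseteq> B" using nbA by blast
    then show ?thesis unfolding T_def using VAB by (auto simp: nb_def)
  qed
  have r: "card {a\<in>N x. E a y} = lam x y" if y: "y \<in> T" for y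
  proof -
    have "y \<in> V" using y VAB unfolding T_def by blast
    then have "{a\<in>N x. E a y} = N x \<inter> N y" using Esym by (auto simp: nb_def)
    then show ?thesis unfolding lam_def by simp
  qed
  have "(\<Sum>a\<in>N x. card {y\<in>N a - {x}. P (lam x y)}) = (\<Sum>a\<in>N x. card {y\<in>T. E a y})"
    using l by simp
  also have "\<dots> = (\<Sum>y\<in>T. card {a\<in>N x. E a y})" by (rule dc[OF finN finT])
  also have "\<dots> = (\<Sum>y\<in>T. lam x y)" using r by simp
  finally show ?thesis unfolding T_def .
qed

lemma lam2:
  assumes x: "x \<in> B" and w: "w \<in> B" "w \<noteq> x"
  shows "lam x w = 2"
proof -
  have xV: "x \<in> V" using x VAB by blast
  have NxA: "N x \<subseteq> A" and cNx: "card (N x) = 5" using nbB[OF x] card_nbB[OF x] h2 by auto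
  have NaB: "N a \<subseteq> B" "card (N a) = 3" if "a \<in> N x" for a
    using that NxA nbA card_nbA h1 by auto
  have xin: "x \<in> N a" if "a \<in> N x" for a
    using that N_sym xV N_V by blast
  have card2: "card (N a - {x}) = 2" if "a \<in> N x" for a
    using NaB(2)[OF that] xin[OF that] finN by (simp add: card_Diff_singleton)
  have lam_le: "lam x v \<le> 5" for v
    unfolding lam_def using cNx card_mono[OF finN, of "N x \<inter> N v" x] by auto
  have cBx: "card (B - {x}) = 5" using hB x finB by (simp add: card_Diff_singleton)
  obtain a0 where a0: "a0 \<in> N x" using cNx by (metis card.empty equals0I zero_neq_numeral)
  obtain y z where yz: "N a0 - {x} = {y, z}" "y \<noteq> z"
    using card2[OF a0] by (metis card_2_iff)
  define p where "p = lam x y"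
  define q where "q = lam x z"
  have L: "lam x ` (N a - {x}) = {p, q}" if "a \<in> N x" for a
    using Lconst[OF x that a0] yz p_def q_def by simp
  have sum10: "(\<Sum>a\<in>N x. card (N a - {x})) = 10"
  proof -
    have "(\<Sum>a\<in>N x. card (N a - {x})) = (\<Sum>a\<in>N x. 2)" using card2 by simp
    then show ?thesis using cNx by simp
  qed
  have yzB: "y \<in> B" "z \<in> B" "y \<noteq> x" "z \<noteq> x" using yz NaB[OF a0] by auto
  show ?thesis
  proof (cases "p = q")
    case True
    define Y where "Y = {v\<in>B-{x}. lam x v = p}"
    have each: "{v\<in>N a - {x}. lam x v = p} = N a - {x}" if "a \<in> N x" for a
      using L[OF that] True by auto
    have "(\<Sum>a\<in>N x. card {v\<in>N a - {x}. lam x v = p}) = 10" using each sum10 by simp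
    then have "(\<Sum>v\<in>Y. lam x v) = 10" using S1[OF x, of "\<lambda>t. t = p"] unfolding Y_def by simp
    moreover have "(\<Sum>v\<in>Y. lam x v) = card Y * p" unfolding Y_def by simp
    ultimately have cY: "card Y * p = 10" by simp
    have YB: "Y \<subseteq> B - {x}" unfolding Y_def by blast
    have "card Y \<le> 5" using card_mono[OF _ YB] finB cBx by simp
    then have "(card Y = 5 \<and> p = 2) \<or> (card Y = 2 \<and> p = 5)" using ar10 cY lam_le p_def by blast
    then show ?thesis
    proof
      assume H: "card Y = 5 \<and> p = 2"
      then have "Y = B - {x}" using card_subset_eq[OF _ YB] finB cBx by simp
      then show ?thesis using w H unfolding Y_def by blast
    next
      assume H: "card Y = 2 \<and> p = 5"
      have eqN: "N v = N x" if v: "v \<in> B" "lam x v = 5" for v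
      proof -
        have "N x \<inter> N v = N x" using card_subset_eq[OF finN Int_lower1] v(2) cNx unfolding lam_def by simp
        then have "N x \<subseteq> N v" by blast
        moreover have "card (N v) = 5" using card_nbB[OF v(1)] h2 by simp
        ultimately show ?thesis using card_subset_eq[OF finN] cNx by metis
      qed
      have Ny: "N y = N x" using eqN yzB H p_def by simp
      have Nz: "N z = N x" using eqN yzB H q_def True by simp
      have yV: "y \<in> V" and zV: "z \<in> V" using yzB VAB by auto
      have Na: "N a = {x, y, z}" if a: "a \<in> N x" for a
      proof -
        have aV: "a \<in> V" using a N_V by blast
        have "y \<in> N a" using N_sym[OF yV aV] a Ny by simp
        moreover have "z \<in> N a" using N_sym[OF zV aV] a Nz by simp
        ultimately have sub: "{x, y, z} \<subseteq> N a" using xin[OF a] by blast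
        have "card {x, y, z} = 3" using yzB yz(2) by simp
        then show ?thesis using card_subset_eq[OF finN sub] NaB(2)[OF a] by simp
      qed
      define C where "C = N x \<union> {x, y, z}"
      have closed: "N v \<subseteq> C" if "v \<in> C" for v
        using that Na Ny Nz unfolding C_def by auto
      have reach: "v \<in> C" if "E\<^sup>*\<^sup>* x v" for v
        using that
      proof (induction rule: rtranclp_induct)
        case base then show ?case unfolding C_def by blast
      next
        case (step v v')
        have "v' \<in> N v" using step(2) sg_facts(3)[OF sg] N_iff by blast
        then show ?case using closed[OF step(3)] by blast
      qed
      have "V \<subseteq> C" using reach cg xV unfolding connected_graph_def by blast
      moreover have "finite C" unfolding C_def using finN by simp
      ultimately have "card V \<le> card C" using card_mono by blast
      also have "\<dots> \<le> card (N x) + card {x, y, z}" unfolding C_def using card_Un_le by blast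
      also have "\<dots> \<le> 5 + 3" using cNx card_insert_le_m1 by (simp add: card_insert_if)
      finally have "card V \<le> 8" by simp
      moreover have "card V = 16" using cardV hA hB by simp
      ultimately show ?thesis by simp
    qed
  next
    case False
    define Yp where "Yp = {v\<in>B-{x}. lam x v = p}"
    define Yq where "Yq = {v\<in>B-{x}. lam x v = q}"
    have one: "card {v\<in>N a - {x}. lam x v = r} = 1" if a: "a \<in> N x" and r: "r = p \<or> r = q" for a r
    proof -
      obtain u v where uv: "N a - {x} = {u, v}" "u \<noteq> v" using card2[OF a] by (metis card_2_iff)
      show ?thesis
      proof (cases "r = p")
        case True
        then show ?thesis using two_vals[OF uv L[OF a] False] uv by simp
      next
        case False2: False
        then have "r = q" using r by simp
        moreover have "lam x ` (N a - {x}) = {q, p}" using L[OF a] by blast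
        ultimately show ?thesis using two_vals[OF uv _ ] uv False by (metis False2)
      qed
    qed
    have sp: "(\<Sum>v\<in>Yp. lam x v) = 5"
    proof -
      have "(\<Sum>a\<in>N x. card {v\<in>N a - {x}. lam x v = p}) = (\<Sum>a\<in>N x. 1)" using one by simp
      then show ?thesis using S1[OF x, of "\<lambda>t. t = p"] cNx unfolding Yp_def by simp
    qed
    have sq: "(\<Sum>v\<in>Yq. lam x v) = 5"
    proof -
      have "(\<Sum>a\<in>N x. card {v\<in>N a - {x}. lam x v = q}) = (\<Sum>a\<in>N x. 1)" using one by simp
      then show ?thesis using S1[OF x, of "\<lambda>t. t = q"] cNx unfolding Yq_def by simp
    qed
    have "(\<Sum>v\<in>Yp. lam x v) = card Yp * p" unfolding Yp_def by simp
    then have cp: "card Yp * p = 5" using sp by simp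
    have "(\<Sum>v\<in>Yq. lam x v) = card Yq * q" unfolding Yq_def by simp
    then have cq: "card Yq * q = 5" using sq by simp
    have disjY: "Yp \<inter> Yq = {}" using False unfolding Yp_def Yq_def by blast
    have sub: "Yp \<union> Yq \<subseteq> B - {x}" unfolding Yp_def Yq_def by blast
    have finY: "finite Yp" "finite Yq" using finB unfolding Yp_def Yq_def by auto
    have "card Yp + card Yq = card (Yp \<union> Yq)" using card_Un_disjoint[OF finY disjY] by simp
    also have "\<dots> \<le> 5" using card_mono[OF _ sub] finB cBx by simp
    finally have le: "card Yp + card Yq \<le> 5" .
    have "(card Yp = 1 \<and> p = 5) \<or> (card Yp = 5 \<and> p = 1)" using ar5 cp le by simp
    moreover have "(card Yq = 1 \<and> q = 5) \<or> (card Yq = 5 \<and> q = 1)" using ar5 cq le by simp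
    ultimately show ?thesis using False le by auto
  qed
qed

end

lemma design_arith:
  fixes x0 x1 x2 x3 x4 x5 x6 x7 x8 x9 x10 x11 x12 x13 x14 x15 x16 x17 x18 x19 :: nat
  assumes "x0+x1+x2+x3 = 2"
    and "x0+x4+x5+x6 = 2"
    and "x1+x4+x7+x8 = 2"
    and "x2+x5+x7+x9 = 2"
    and "x3+x6+x8+x9 = 2"
    and "x0+x10+x11+x12 = 2"
    and "x1+x10+x13+x14 = 2"
    and "x2+x11+x13+x15 = 2"
    and "x3+x12+x14+x15 = 2"
    and "x4+x10+x16+x17 = 2"
    and "x5+x11+x16+x18 = 2"
    and "x6+x12+x17+x18 = 2"
    and "x7+x13+x16+x19 = 2"
    and "x8+x14+x17+x19 = 2"
    and "x9+x15+x18+x19 = 2"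
  shows "(x0 = 0 \<and> x1 = 0 \<and> x2 = 1 \<and> x3 = 1 \<and> x4 = 1 \<and> x5 = 0 \<and> x6 = 1 \<and> x7 = 1 \<and> x8 = 0 \<and> x9 = 0 \<and> x10 = 1 \<and> x11 = 1 \<and> x12 = 0 \<and> x13 = 0 \<and> x14 = 1 \<and> x15 = 0 \<and> x16 = 0 \<and> x17 = 0 \<and> x18 = 1 \<and> x19 = 1)
   \<or> (x0 = 0 \<and> x1 = 0 \<and> x2 = 1 \<and> x3 = 1 \<and> x4 = 1 \<and> x5 = 1 \<and> x6 = 0 \<and> x7 = 0 \<and> x8 = 1 \<and> x9 = 0 \<and> x10 = 1 \<and> x11 = 0 \<and> x12 = 1 \<and> x13 = 1 \<and> x14 = 0 \<and> x15 = 0 \<and> x16 = 0 \<and> x17 = 0 \<and> x18 = 1 \<and> x19 = 1)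
   \<or> (x0 = 0 \<and> x1 = 1 \<and> x2 = 0 \<and> x3 = 1 \<and> x4 = 0 \<and> x5 = 1 \<and> x6 = 1 \<and> x7 = 1 \<and> x8 = 0 \<and> x9 = 0 \<and> x10 = 1 \<and> x11 = 1 \<and> x12 = 0 \<and> x13 = 0 \<and> x14 = 0 \<and> x15 = 1 \<and> x16 = 0 \<and> x17 = 1 \<and> x18 = 0 \<and> x19 = 1)
   \<or> (x0 = 0 \<and> x1 = 1 \<and> x2 = 0 \<and> x3 = 1 \<and> x4 = 1 \<and> x5 = 1 \<and> x6 = 0 \<and> x7 = 0 \<and> x8 = 0 \<and> x9 = 1 \<and> x10 = 0 \<and> x11 = 1 \<and> x12 = 1 \<and> x13 = 1 \<and> x14 = 0 \<and> x15 = 0 \<and> x16 = 0 \<and> x17 = 1 \<and> x18 = 0 \<and> x19 = 1)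
   \<or> (x0 = 0 \<and> x1 = 1 \<and> x2 = 1 \<and> x3 = 0 \<and> x4 = 0 \<and> x5 = 1 \<and> x6 = 1 \<and> x7 = 0 \<and> x8 = 1 \<and> x9 = 0 \<and> x10 = 1 \<and> x11 = 0 \<and> x12 = 1 \<and> x13 = 0 \<and> x14 = 0 \<and> x15 = 1 \<and> x16 = 1 \<and> x17 = 0 \<and> x18 = 0 \<and> x19 = 1)
   \<or> (x0 = 0 \<and> x1 = 1 \<and> x2 = 1 \<and> x3 = 0 \<and> x4 = 1 \<and> x5 = 0 \<and> x6 = 1 \<and> x7 = 0 \<and> x8 = 0 \<and> x9 = 1 \<and> x10 = 0 \<and> x11 = 1 \<and> x12 = 1 \<and> x13 = 0 \<and> x14 = 1 \<and> x15 = 0 \<and> x16 = 1 \<and> x17 = 0 \<and> x18 = 0 \<and> x19 = 1)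
   \<or> (x0 = 1 \<and> x1 = 0 \<and> x2 = 0 \<and> x3 = 1 \<and> x4 = 0 \<and> x5 = 1 \<and> x6 = 0 \<and> x7 = 1 \<and> x8 = 1 \<and> x9 = 0 \<and> x10 = 1 \<and> x11 = 0 \<and> x12 = 0 \<and> x13 = 1 \<and> x14 = 0 \<and> x15 = 1 \<and> x16 = 0 \<and> x17 = 1 \<and> x18 = 1 \<and> x19 = 0)
   \<or> (x0 = 1 \<and> x1 = 0 \<and> x2 = 0 \<and> x3 = 1 \<and> x4 = 1 \<and> x5 = 0 \<and> x6 = 0 \<and> x7 = 1 \<and> x8 = 0 \<and> x9 = 1 \<and> x10 = 0 \<and> x11 = 1 \<and> x12 = 0 \<and> x13 = 1 \<and> x14 = 1 \<and> x15 = 0 \<and> x16 = 0 \<and> x17 = 1 \<and> x18 = 1 \<and> x19 = 0)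
   \<or> (x0 = 1 \<and> x1 = 0 \<and> x2 = 1 \<and> x3 = 0 \<and> x4 = 0 \<and> x5 = 0 \<and> x6 = 1 \<and> x7 = 1 \<and> x8 = 1 \<and> x9 = 0 \<and> x10 = 1 \<and> x11 = 0 \<and> x12 = 0 \<and> x13 = 0 \<and> x14 = 1 \<and> x15 = 1 \<and> x16 = 1 \<and> x17 = 0 \<and> x18 = 1 \<and> x19 = 0)
   \<or> (x0 = 1 \<and> x1 = 0 \<and> x2 = 1 \<and> x3 = 0 \<and> x4 = 1 \<and> x5 = 0 \<and> x6 = 0 \<and> x7 = 0 \<and> x8 = 1 \<and> x9 = 1 \<and> x10 = 0 \<and> x11 = 0 \<and> x12 = 1 \<and> x13 = 1 \<and> x14 = 1 \<and> x15 = 0 \<and> x16 = 1 \<and> x17 = 0 \<and> x18 = 1 \<and> x19 = 0)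
   \<or> (x0 = 1 \<and> x1 = 1 \<and> x2 = 0 \<and> x3 = 0 \<and> x4 = 0 \<and> x5 = 0 \<and> x6 = 1 \<and> x7 = 1 \<and> x8 = 0 \<and> x9 = 1 \<and> x10 = 0 \<and> x11 = 1 \<and> x12 = 0 \<and> x13 = 0 \<and> x14 = 1 \<and> x15 = 1 \<and> x16 = 1 \<and> x17 = 1 \<and> x18 = 0 \<and> x19 = 0)
   \<or> (x0 = 1 \<and> x1 = 1 \<and> x2 = 0 \<and> x3 = 0 \<and> x4 = 0 \<and> x5 = 1 \<and> x6 = 0 \<and> x7 = 0 \<and> x8 = 1 \<and> x9 = 1 \<and> x10 = 0 \<and> x11 = 0 \<and> x12 = 1 \<and> x13 = 1 \<and> x14 = 0 \<and> x15 = 1 \<and> x16 = 1 \<and> x17 = 1 \<and> x18 = 0 \<and> x19 = 0)"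
proof -
  have "x0 = 0 \<or> x0 = 1 \<or> x0 = 2" using assms(1) by arith
  then show ?thesis
  proof (elim disjE)
    assume b1: "x0 = 0"
    have "x1 = 0 \<or> x1 = 1 \<or> x1 = 2" using assms(1) by arith
    then show ?thesis
    proof (elim disjE)
      assume b2: "x1 = 0"
      have "x2 = 0 \<or> x2 = 1 \<or> x2 = 2" using assms(1) by arith
      then show ?thesis
      proof (elim disjE)
        assume b3: "x2 = 0"
        have f4: "x3 = 2" using assms(1) b1 b2 b3 by linarith
        have f5: "x6 = 0" using assms(5) f4 by linarith
        have f6: "x8 = 0" using assms(5) f4 by linarith
        have f7: "x9 = 0" using assms(5) f4 by linarith
        have f8: "x12 = 0" using assms(9) f4 by linarith
        have f9: "x14 = 0" using assms(9) f4 by linarith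
        have f10: "x15 = 0" using assms(9) f4 by linarith
        have "x4 = 0 \<or> x4 = 1 \<or> x4 = 2" using assms(2) by arith
        then show ?thesis
        proof (elim disjE)
          assume b11: "x4 = 0"
          have f12: "x5 = 2" using assms(2) b1 b11 f5 by linarith
          have f13: "x7 = 2" using assms(3) b2 b11 f6 by linarith
          have False using assms(4) b3 f12 f13 f7 by linarith
          then show ?thesis by simp
        next
          assume b14: "x4 = 1"
          have f15: "x5 = 1" using assms(2) b1 b14 f5 by linarith
          have f16: "x7 = 1" using assms(3) b2 b14 f6 by linarith
          have "x10 = 0 \<or> x10 = 1 \<or> x10 = 2" using assms(6) by arith
          then show ?thesis
          proof (elim disjE)
            assume b17: "x10 = 0"
            have f18: "x11 = 2" using assms(6) b1 b17 f8 by linarith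
            have f19: "x13 = 2" using assms(7) b2 b17 f9 by linarith
            have False using assms(8) b3 f18 f19 f10 by linarith
            then show ?thesis by simp
          next
            assume b20: "x10 = 1"
            have f21: "x11 = 1" using assms(6) b1 b20 f8 by linarith
            have f22: "x13 = 1" using assms(7) b2 b20 f9 by linarith
            have f23: "x16 = 0" using assms(10) b14 b20 by linarith
            have f24: "x17 = 0" using assms(10) b14 b20 by linarith
            have f25: "x18 = 0" using assms(11) f15 f21 f23 by linarith
            have False using assms(12) f5 f8 f24 f25 by linarith
            then show ?thesis by simp
          next
            assume b26: "x10 = 2"
            have f27: "x11 = 0" using assms(6) b1 b26 f8 by linarith
            have f28: "x13 = 0" using assms(7) b2 b26 f9 by linarith
            have False using assms(8) b3 f27 f28 f10 by linarith
            then show ?thesis by simp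
          qed
        next
          assume b29: "x4 = 2"
          have f30: "x5 = 0" using assms(2) b1 b29 f5 by linarith
          have f31: "x7 = 0" using assms(3) b2 b29 f6 by linarith
          have False using assms(4) b3 f30 f31 f7 by linarith
          then show ?thesis by simp
        qed
      next
        assume b32: "x2 = 1"
        have f33: "x3 = 1" using assms(1) b1 b2 b32 by linarith
        have "x4 = 0 \<or> x4 = 1 \<or> x4 = 2" using assms(2) by arith
        then show ?thesis
        proof (elim disjE)
          assume b34: "x4 = 0"
          have "x5 = 0 \<or> x5 = 1 \<or> x5 = 2" using assms(2) by arith
          then show ?thesis
          proof (elim disjE)
            assume b35: "x5 = 0"
            have f36: "x6 = 2" using assms(2) b1 b34 b35 by linarith
            have False using assms(5) f33 f36 by linarith
            then show ?thesis by simp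
          next
            assume b37: "x5 = 1"
            have f38: "x6 = 1" using assms(2) b1 b34 b37 by linarith
            have f39: "x7 = 0" using assms(4) b32 b37 by linarith
            have f40: "x9 = 0" using assms(4) b32 b37 by linarith
            have f41: "x8 = 2" using assms(3) b2 b34 f39 by linarith
            have False using assms(5) f33 f38 f41 f40 by linarith
            then show ?thesis by simp
          next
            assume b42: "x5 = 2"
            have f43: "x6 = 0" using assms(2) b1 b34 b42 by linarith
            have False using assms(4) b32 b42 by linarith
            then show ?thesis by simp
          qed
        next
          assume b44: "x4 = 1"
          have "x5 = 0 \<or> x5 = 1 \<or> x5 = 2" using assms(2) by arith
          then show ?thesis
          proof (elim disjE)
            assume b45: "x5 = 0"
            have f46: "x6 = 1" using assms(2) b1 b44 b45 by linarith
            have f47: "x8 = 0" using assms(5) f33 f46 by linarith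
            have f48: "x9 = 0" using assms(5) f33 f46 by linarith
            have f49: "x7 = 1" using assms(3) b2 b44 f47 by linarith
            have "x10 = 0 \<or> x10 = 1 \<or> x10 = 2" using assms(6) by arith
            then show ?thesis
            proof (elim disjE)
              assume b50: "x10 = 0"
              have "x11 = 0 \<or> x11 = 1 \<or> x11 = 2" using assms(6) by arith
              then show ?thesis
              proof (elim disjE)
                assume b51: "x11 = 0"
                have f52: "x12 = 2" using assms(6) b1 b50 b51 by linarith
                have False using assms(9) f33 f52 by linarith
                then show ?thesis by simp
              next
                assume b53: "x11 = 1"
                have f54: "x12 = 1" using assms(6) b1 b50 b53 by linarith
                have f55: "x13 = 0" using assms(8) b32 b53 by linarith
                have f56: "x15 = 0" using assms(8) b32 b53 by linarith
                have f57: "x14 = 2" using assms(7) b2 b50 f55 by linarith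
                have False using assms(9) f33 f54 f57 f56 by linarith
                then show ?thesis by simp
              next
                assume b58: "x11 = 2"
                have f59: "x12 = 0" using assms(6) b1 b50 b58 by linarith
                have False using assms(8) b32 b58 by linarith
                then show ?thesis by simp
              qed
            next
              assume b60: "x10 = 1"
              have f61: "x16 = 0" using assms(10) b44 b60 by linarith
              have f62: "x17 = 0" using assms(10) b44 b60 by linarith
              have "x11 = 0 \<or> x11 = 1 \<or> x11 = 2" using assms(6) by arith
              then show ?thesis
              proof (elim disjE)
                assume b63: "x11 = 0"
                have f64: "x12 = 1" using assms(6) b1 b60 b63 by linarith
                have f65: "x14 = 0" using assms(9) f33 f64 by linarith
                have f66: "x15 = 0" using assms(9) f33 f64 by linarith
                have f67: "x13 = 1" using assms(7) b2 b60 f65 by linarith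
                have f68: "x18 = 2" using assms(11) b45 b63 f61 by linarith
                have False using assms(12) f46 f64 f62 f68 by linarith
                then show ?thesis by simp
              next
                assume b69: "x11 = 1"
                have f70: "x12 = 0" using assms(6) b1 b60 b69 by linarith
                have f71: "x13 = 0" using assms(8) b32 b69 by linarith
                have f72: "x15 = 0" using assms(8) b32 b69 by linarith
                have f73: "x14 = 1" using assms(7) b2 b60 f71 by linarith
                have f74: "x18 = 1" using assms(11) b45 b69 f61 by linarith
                have f75: "x19 = 1" using assms(13) f49 f71 f61 by linarith
                show ?thesis using b1 b2 b32 f33 b44 b45 f46 f49 f47 f48 b60 b69 f70 f71 f73 f72 f61 f62 f74 f75 by simp
              next
                assume b76: "x11 = 2"
                have False using assms(6) b1 b60 b76 by linarith
                then show ?thesis by simp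
              qed
            next
              assume b77: "x10 = 2"
              have f78: "x11 = 0" using assms(6) b1 b77 by linarith
              have f79: "x12 = 0" using assms(6) b1 b77 by linarith
              have f80: "x13 = 0" using assms(7) b2 b77 by linarith
              have f81: "x14 = 0" using assms(7) b2 b77 by linarith
              have f82: "x15 = 1" using assms(8) b32 f78 f80 by linarith
              have False using assms(10) b44 b77 by linarith
              then show ?thesis by simp
            qed
          next
            assume b83: "x5 = 1"
            have f84: "x6 = 0" using assms(2) b1 b44 b83 by linarith
            have f85: "x7 = 0" using assms(4) b32 b83 by linarith
            have f86: "x9 = 0" using assms(4) b32 b83 by linarith
            have f87: "x8 = 1" using assms(3) b2 b44 f85 by linarith
            have "x10 = 0 \<or> x10 = 1 \<or> x10 = 2" using assms(6) by arith
            then show ?thesis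
            proof (elim disjE)
              assume b88: "x10 = 0"
              have "x11 = 0 \<or> x11 = 1 \<or> x11 = 2" using assms(6) by arith
              then show ?thesis
              proof (elim disjE)
                assume b89: "x11 = 0"
                have f90: "x12 = 2" using assms(6) b1 b88 b89 by linarith
                have False using assms(9) f33 f90 by linarith
                then show ?thesis by simp
              next
                assume b91: "x11 = 1"
                have f92: "x12 = 1" using assms(6) b1 b88 b91 by linarith
                have f93: "x13 = 0" using assms(8) b32 b91 by linarith
                have f94: "x15 = 0" using assms(8) b32 b91 by linarith
                have f95: "x14 = 2" using assms(7) b2 b88 f93 by linarith
                have False using assms(9) f33 f92 f95 f94 by linarith
                then show ?thesis by simp
              next
                assume b96: "x11 = 2"
                have f97: "x12 = 0" using assms(6) b1 b88 b96 by linarith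
                have False using assms(8) b32 b96 by linarith
                then show ?thesis by simp
              qed
            next
              assume b98: "x10 = 1"
              have f99: "x16 = 0" using assms(10) b44 b98 by linarith
              have f100: "x17 = 0" using assms(10) b44 b98 by linarith
              have "x11 = 0 \<or> x11 = 1 \<or> x11 = 2" using assms(6) by arith
              then show ?thesis
              proof (elim disjE)
                assume b101: "x11 = 0"
                have f102: "x12 = 1" using assms(6) b1 b98 b101 by linarith
                have f103: "x14 = 0" using assms(9) f33 f102 by linarith
                have f104: "x15 = 0" using assms(9) f33 f102 by linarith
                have f105: "x13 = 1" using assms(7) b2 b98 f103 by linarith
                have f106: "x18 = 1" using assms(11) b83 b101 f99 by linarith
                have f107: "x19 = 1" using assms(13) f85 f105 f99 by linarith
                show ?thesis using b1 b2 b32 f33 b44 b83 f84 f85 f87 f86 b98 b101 f102 f105 f103 f104 f99 f100 f106 f107 by simp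
              next
                assume b108: "x11 = 1"
                have f109: "x12 = 0" using assms(6) b1 b98 b108 by linarith
                have f110: "x13 = 0" using assms(8) b32 b108 by linarith
                have f111: "x15 = 0" using assms(8) b32 b108 by linarith
                have f112: "x14 = 1" using assms(7) b2 b98 f110 by linarith
                have f113: "x18 = 0" using assms(11) b83 b108 f99 by linarith
                have False using assms(12) f84 f109 f100 f113 by linarith
                then show ?thesis by simp
              next
                assume b114: "x11 = 2"
                have False using assms(6) b1 b98 b114 by linarith
                then show ?thesis by simp
              qed
            next
              assume b115: "x10 = 2"
              have f116: "x11 = 0" using assms(6) b1 b115 by linarith
              have f117: "x12 = 0" using assms(6) b1 b115 by linarith
              have f118: "x13 = 0" using assms(7) b2 b115 by linarith
              have f119: "x14 = 0" using assms(7) b2 b115 by linarith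
              have f120: "x15 = 1" using assms(8) b32 f116 f118 by linarith
              have False using assms(10) b44 b115 by linarith
              then show ?thesis by simp
            qed
          next
            assume b121: "x5 = 2"
            have False using assms(2) b1 b44 b121 by linarith
            then show ?thesis by simp
          qed
        next
          assume b122: "x4 = 2"
          have f123: "x5 = 0" using assms(2) b1 b122 by linarith
          have f124: "x6 = 0" using assms(2) b1 b122 by linarith
          have f125: "x7 = 0" using assms(3) b2 b122 by linarith
          have f126: "x8 = 0" using assms(3) b2 b122 by linarith
          have f127: "x9 = 1" using assms(4) b32 f123 f125 by linarith
          have f128: "x10 = 0" using assms(10) b122 by linarith
          have f129: "x16 = 0" using assms(10) b122 by linarith
          have f130: "x17 = 0" using assms(10) b122 by linarith
          have "x11 = 0 \<or> x11 = 1 \<or> x11 = 2" using assms(6) by arith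
          then show ?thesis
          proof (elim disjE)
            assume b131: "x11 = 0"
            have f132: "x12 = 2" using assms(6) b1 f128 b131 by linarith
            have False using assms(9) f33 f132 by linarith
            then show ?thesis by simp
          next
            assume b133: "x11 = 1"
            have f134: "x12 = 1" using assms(6) b1 f128 b133 by linarith
            have f135: "x13 = 0" using assms(8) b32 b133 by linarith
            have f136: "x15 = 0" using assms(8) b32 b133 by linarith
            have f137: "x14 = 2" using assms(7) b2 f128 f135 by linarith
            have False using assms(9) f33 f134 f137 f136 by linarith
            then show ?thesis by simp
          next
            assume b138: "x11 = 2"
            have f139: "x12 = 0" using assms(6) b1 f128 b138 by linarith
            have False using assms(8) b32 b138 by linarith
            then show ?thesis by simp
          qed
        qed
      next
        assume b140: "x2 = 2"
        have f141: "x3 = 0" using assms(1) b1 b2 b140 by linarith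
        have f142: "x5 = 0" using assms(4) b140 by linarith
        have f143: "x7 = 0" using assms(4) b140 by linarith
        have f144: "x9 = 0" using assms(4) b140 by linarith
        have f145: "x11 = 0" using assms(8) b140 by linarith
        have f146: "x13 = 0" using assms(8) b140 by linarith
        have f147: "x15 = 0" using assms(8) b140 by linarith
        have "x4 = 0 \<or> x4 = 1 \<or> x4 = 2" using assms(2) by arith
        then show ?thesis
        proof (elim disjE)
          assume b148: "x4 = 0"
          have f149: "x6 = 2" using assms(2) b1 b148 f142 by linarith
          have f150: "x8 = 2" using assms(3) b2 b148 f143 by linarith
          have False using assms(5) f141 f149 f150 f144 by linarith
          then show ?thesis by simp
        next
          assume b151: "x4 = 1"
          have f152: "x6 = 1" using assms(2) b1 b151 f142 by linarith
          have f153: "x8 = 1" using assms(3) b2 b151 f143 by linarith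
          have "x10 = 0 \<or> x10 = 1 \<or> x10 = 2" using assms(6) by arith
          then show ?thesis
          proof (elim disjE)
            assume b154: "x10 = 0"
            have f155: "x12 = 2" using assms(6) b1 b154 f145 by linarith
            have f156: "x14 = 2" using assms(7) b2 b154 f146 by linarith
            have False using assms(9) f141 f155 f156 f147 by linarith
            then show ?thesis by simp
          next
            assume b157: "x10 = 1"
            have f158: "x12 = 1" using assms(6) b1 b157 f145 by linarith
            have f159: "x14 = 1" using assms(7) b2 b157 f146 by linarith
            have f160: "x16 = 0" using assms(10) b151 b157 by linarith
            have f161: "x17 = 0" using assms(10) b151 b157 by linarith
            have f162: "x18 = 2" using assms(11) f142 f145 f160 by linarith
            have False using assms(12) f152 f158 f161 f162 by linarith
            then show ?thesis by simp
          next
            assume b163: "x10 = 2"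
            have f164: "x12 = 0" using assms(6) b1 b163 f145 by linarith
            have f165: "x14 = 0" using assms(7) b2 b163 f146 by linarith
            have False using assms(9) f141 f164 f165 f147 by linarith
            then show ?thesis by simp
          qed
        next
          assume b166: "x4 = 2"
          have f167: "x6 = 0" using assms(2) b1 b166 f142 by linarith
          have f168: "x8 = 0" using assms(3) b2 b166 f143 by linarith
          have False using assms(5) f141 f167 f168 f144 by linarith
          then show ?thesis by simp
        qed
      qed
    next
      assume b169: "x1 = 1"
      have "x2 = 0 \<or> x2 = 1 \<or> x2 = 2" using assms(1) by arith
      then show ?thesis
      proof (elim disjE)
        assume b170: "x2 = 0"
        have f171: "x3 = 1" using assms(1) b1 b169 b170 by linarith
        have "x4 = 0 \<or> x4 = 1 \<or> x4 = 2" using assms(2) by arith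
        then show ?thesis
        proof (elim disjE)
          assume b172: "x4 = 0"
          have "x5 = 0 \<or> x5 = 1 \<or> x5 = 2" using assms(2) by arith
          then show ?thesis
          proof (elim disjE)
            assume b173: "x5 = 0"
            have f174: "x6 = 2" using assms(2) b1 b172 b173 by linarith
            have False using assms(5) f171 f174 by linarith
            then show ?thesis by simp
          next
            assume b175: "x5 = 1"
            have f176: "x6 = 1" using assms(2) b1 b172 b175 by linarith
            have f177: "x8 = 0" using assms(5) f171 f176 by linarith
            have f178: "x9 = 0" using assms(5) f171 f176 by linarith
            have f179: "x7 = 1" using assms(3) b169 b172 f177 by linarith
            have "x10 = 0 \<or> x10 = 1 \<or> x10 = 2" using assms(6) by arith
            then show ?thesis
            proof (elim disjE)
              assume b180: "x10 = 0"
              have "x11 = 0 \<or> x11 = 1 \<or> x11 = 2" using assms(6) by arith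
              then show ?thesis
              proof (elim disjE)
                assume b181: "x11 = 0"
                have f182: "x12 = 2" using assms(6) b1 b180 b181 by linarith
                have False using assms(9) f171 f182 by linarith
                then show ?thesis by simp
              next
                assume b183: "x11 = 1"
                have f184: "x12 = 1" using assms(6) b1 b180 b183 by linarith
                have f185: "x14 = 0" using assms(9) f171 f184 by linarith
                have f186: "x15 = 0" using assms(9) f171 f184 by linarith
                have f187: "x13 = 1" using assms(7) b169 b180 f185 by linarith
                have f188: "x16 = 0" using assms(11) b175 b183 by linarith
                have f189: "x18 = 0" using assms(11) b175 b183 by linarith
                have f190: "x17 = 2" using assms(10) b172 b180 f188 by linarith
                have False using assms(12) f176 f184 f190 f189 by linarith
                then show ?thesis by simp
              next
                assume b191: "x11 = 2"
                have f192: "x12 = 0" using assms(6) b1 b180 b191 by linarith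
                have f193: "x13 = 0" using assms(8) b170 b191 by linarith
                have f194: "x15 = 0" using assms(8) b170 b191 by linarith
                have f195: "x14 = 1" using assms(7) b169 b180 f193 by linarith
                have False using assms(11) b175 b191 by linarith
                then show ?thesis by simp
              qed
            next
              assume b196: "x10 = 1"
              have f197: "x13 = 0" using assms(7) b169 b196 by linarith
              have f198: "x14 = 0" using assms(7) b169 b196 by linarith
              have "x11 = 0 \<or> x11 = 1 \<or> x11 = 2" using assms(6) by arith
              then show ?thesis
              proof (elim disjE)
                assume b199: "x11 = 0"
                have f200: "x12 = 1" using assms(6) b1 b196 b199 by linarith
                have f201: "x15 = 2" using assms(8) b170 b199 f197 by linarith
                have False using assms(9) f171 f200 f198 f201 by linarith
                then show ?thesis by simp
              next
                assume b202: "x11 = 1"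
                have f203: "x12 = 0" using assms(6) b1 b196 b202 by linarith
                have f204: "x15 = 1" using assms(8) b170 b202 f197 by linarith
                have f205: "x16 = 0" using assms(11) b175 b202 by linarith
                have f206: "x18 = 0" using assms(11) b175 b202 by linarith
                have f207: "x17 = 1" using assms(10) b172 b196 f205 by linarith
                have f208: "x19 = 1" using assms(13) f179 f197 f205 by linarith
                show ?thesis using b1 b169 b170 f171 b172 b175 f176 f179 f177 f178 b196 b202 f203 f197 f198 f204 f205 f207 f206 f208 by simp
              next
                assume b209: "x11 = 2"
                have False using assms(6) b1 b196 b209 by linarith
                then show ?thesis by simp
              qed
            next
              assume b210: "x10 = 2"
              have f211: "x11 = 0" using assms(6) b1 b210 by linarith
              have f212: "x12 = 0" using assms(6) b1 b210 by linarith
              have False using assms(7) b169 b210 by linarith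
              then show ?thesis by simp
            qed
          next
            assume b213: "x5 = 2"
            have f214: "x6 = 0" using assms(2) b1 b172 b213 by linarith
            have f215: "x7 = 0" using assms(4) b170 b213 by linarith
            have f216: "x9 = 0" using assms(4) b170 b213 by linarith
            have f217: "x8 = 1" using assms(3) b169 b172 f215 by linarith
            have f218: "x11 = 0" using assms(11) b213 by linarith
            have f219: "x16 = 0" using assms(11) b213 by linarith
            have f220: "x18 = 0" using assms(11) b213 by linarith
            have "x10 = 0 \<or> x10 = 1 \<or> x10 = 2" using assms(6) by arith
            then show ?thesis
            proof (elim disjE)
              assume b221: "x10 = 0"
              have f222: "x12 = 2" using assms(6) b1 b221 f218 by linarith
              have False using assms(9) f171 f222 by linarith
              then show ?thesis by simp
            next
              assume b223: "x10 = 1"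
              have f224: "x12 = 1" using assms(6) b1 b223 f218 by linarith
              have f225: "x13 = 0" using assms(7) b169 b223 by linarith
              have f226: "x14 = 0" using assms(7) b169 b223 by linarith
              have f227: "x15 = 2" using assms(8) b170 f218 f225 by linarith
              have False using assms(9) f171 f224 f226 f227 by linarith
              then show ?thesis by simp
            next
              assume b228: "x10 = 2"
              have f229: "x12 = 0" using assms(6) b1 b228 f218 by linarith
              have False using assms(7) b169 b228 by linarith
              then show ?thesis by simp
            qed
          qed
        next
          assume b230: "x4 = 1"
          have f231: "x7 = 0" using assms(3) b169 b230 by linarith
          have f232: "x8 = 0" using assms(3) b169 b230 by linarith
          have "x5 = 0 \<or> x5 = 1 \<or> x5 = 2" using assms(2) by arith
          then show ?thesis
          proof (elim disjE)
            assume b233: "x5 = 0"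
            have f234: "x6 = 1" using assms(2) b1 b230 b233 by linarith
            have f235: "x9 = 2" using assms(4) b170 b233 f231 by linarith
            have False using assms(5) f171 f234 f232 f235 by linarith
            then show ?thesis by simp
          next
            assume b236: "x5 = 1"
            have f237: "x6 = 0" using assms(2) b1 b230 b236 by linarith
            have f238: "x9 = 1" using assms(4) b170 b236 f231 by linarith
            have "x10 = 0 \<or> x10 = 1 \<or> x10 = 2" using assms(6) by arith
            then show ?thesis
            proof (elim disjE)
              assume b239: "x10 = 0"
              have "x11 = 0 \<or> x11 = 1 \<or> x11 = 2" using assms(6) by arith
              then show ?thesis
              proof (elim disjE)
                assume b240: "x11 = 0"
                have f241: "x12 = 2" using assms(6) b1 b239 b240 by linarith
                have False using assms(9) f171 f241 by linarith
                then show ?thesis by simp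
              next
                assume b242: "x11 = 1"
                have f243: "x12 = 1" using assms(6) b1 b239 b242 by linarith
                have f244: "x14 = 0" using assms(9) f171 f243 by linarith
                have f245: "x15 = 0" using assms(9) f171 f243 by linarith
                have f246: "x13 = 1" using assms(7) b169 b239 f244 by linarith
                have f247: "x16 = 0" using assms(11) b236 b242 by linarith
                have f248: "x18 = 0" using assms(11) b236 b242 by linarith
                have f249: "x17 = 1" using assms(10) b230 b239 f247 by linarith
                have f250: "x19 = 1" using assms(13) f231 f246 f247 by linarith
                show ?thesis using b1 b169 b170 f171 b230 b236 f237 f231 f232 f238 b239 b242 f243 f246 f244 f245 f247 f249 f248 f250 by simp
              next
                assume b251: "x11 = 2"
                have f252: "x12 = 0" using assms(6) b1 b239 b251 by linarith
                have f253: "x13 = 0" using assms(8) b170 b251 by linarith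
                have f254: "x15 = 0" using assms(8) b170 b251 by linarith
                have f255: "x14 = 1" using assms(7) b169 b239 f253 by linarith
                have False using assms(11) b236 b251 by linarith
                then show ?thesis by simp
              qed
            next
              assume b256: "x10 = 1"
              have f257: "x13 = 0" using assms(7) b169 b256 by linarith
              have f258: "x14 = 0" using assms(7) b169 b256 by linarith
              have f259: "x16 = 0" using assms(10) b230 b256 by linarith
              have f260: "x17 = 0" using assms(10) b230 b256 by linarith
              have f261: "x19 = 2" using assms(13) f231 f257 f259 by linarith
              have False using assms(15) f238 f261 by linarith
              then show ?thesis by simp
            next
              assume b262: "x10 = 2"
              have f263: "x11 = 0" using assms(6) b1 b262 by linarith
              have f264: "x12 = 0" using assms(6) b1 b262 by linarith
              have False using assms(7) b169 b262 by linarith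
              then show ?thesis by simp
            qed
          next
            assume b265: "x5 = 2"
            have False using assms(2) b1 b230 b265 by linarith
            then show ?thesis by simp
          qed
        next
          assume b266: "x4 = 2"
          have f267: "x5 = 0" using assms(2) b1 b266 by linarith
          have f268: "x6 = 0" using assms(2) b1 b266 by linarith
          have False using assms(3) b169 b266 by linarith
          then show ?thesis by simp
        qed
      next
        assume b269: "x2 = 1"
        have f270: "x3 = 0" using assms(1) b1 b169 b269 by linarith
        have "x4 = 0 \<or> x4 = 1 \<or> x4 = 2" using assms(2) by arith
        then show ?thesis
        proof (elim disjE)
          assume b271: "x4 = 0"
          have "x5 = 0 \<or> x5 = 1 \<or> x5 = 2" using assms(2) by arith
          then show ?thesis
          proof (elim disjE)
            assume b272: "x5 = 0"
            have f273: "x6 = 2" using assms(2) b1 b271 b272 by linarith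
            have f274: "x8 = 0" using assms(5) f270 f273 by linarith
            have f275: "x9 = 0" using assms(5) f270 f273 by linarith
            have f276: "x7 = 1" using assms(3) b169 b271 f274 by linarith
            have f277: "x12 = 0" using assms(12) f273 by linarith
            have f278: "x17 = 0" using assms(12) f273 by linarith
            have f279: "x18 = 0" using assms(12) f273 by linarith
            have "x10 = 0 \<or> x10 = 1 \<or> x10 = 2" using assms(6) by arith
            then show ?thesis
            proof (elim disjE)
              assume b280: "x10 = 0"
              have f281: "x11 = 2" using assms(6) b1 b280 f277 by linarith
              have False using assms(8) b269 f281 by linarith
              then show ?thesis by simp
            next
              assume b282: "x10 = 1"
              have f283: "x11 = 1" using assms(6) b1 b282 f277 by linarith
              have f284: "x13 = 0" using assms(7) b169 b282 by linarith
              have f285: "x14 = 0" using assms(7) b169 b282 by linarith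
              have f286: "x15 = 0" using assms(8) b269 f283 f284 by linarith
              have False using assms(9) f270 f277 f285 f286 by linarith
              then show ?thesis by simp
            next
              assume b287: "x10 = 2"
              have f288: "x11 = 0" using assms(6) b1 b287 f277 by linarith
              have False using assms(7) b169 b287 by linarith
              then show ?thesis by simp
            qed
          next
            assume b289: "x5 = 1"
            have f290: "x6 = 1" using assms(2) b1 b271 b289 by linarith
            have f291: "x7 = 0" using assms(4) b269 b289 by linarith
            have f292: "x9 = 0" using assms(4) b269 b289 by linarith
            have f293: "x8 = 1" using assms(3) b169 b271 f291 by linarith
            have "x10 = 0 \<or> x10 = 1 \<or> x10 = 2" using assms(6) by arith
            then show ?thesis
            proof (elim disjE)
              assume b294: "x10 = 0"
              have "x11 = 0 \<or> x11 = 1 \<or> x11 = 2" using assms(6) by arith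
              then show ?thesis
              proof (elim disjE)
                assume b295: "x11 = 0"
                have f296: "x12 = 2" using assms(6) b1 b294 b295 by linarith
                have f297: "x14 = 0" using assms(9) f270 f296 by linarith
                have f298: "x15 = 0" using assms(9) f270 f296 by linarith
                have f299: "x13 = 1" using assms(7) b169 b294 f297 by linarith
                have False using assms(12) f290 f296 by linarith
                then show ?thesis by simp
              next
                assume b300: "x11 = 1"
                have f301: "x12 = 1" using assms(6) b1 b294 b300 by linarith
                have f302: "x13 = 0" using assms(8) b269 b300 by linarith
                have f303: "x15 = 0" using assms(8) b269 b300 by linarith
                have f304: "x14 = 1" using assms(7) b169 b294 f302 by linarith
                have f305: "x16 = 0" using assms(11) b289 b300 by linarith
                have f306: "x18 = 0" using assms(11) b289 b300 by linarith
                have f307: "x17 = 2" using assms(10) b271 b294 f305 by linarith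
                have False using assms(12) f290 f301 f307 f306 by linarith
                then show ?thesis by simp
              next
                assume b308: "x11 = 2"
                have f309: "x12 = 0" using assms(6) b1 b294 b308 by linarith
                have False using assms(8) b269 b308 by linarith
                then show ?thesis by simp
              qed
            next
              assume b310: "x10 = 1"
              have f311: "x13 = 0" using assms(7) b169 b310 by linarith
              have f312: "x14 = 0" using assms(7) b169 b310 by linarith
              have "x11 = 0 \<or> x11 = 1 \<or> x11 = 2" using assms(6) by arith
              then show ?thesis
              proof (elim disjE)
                assume b313: "x11 = 0"
                have f314: "x12 = 1" using assms(6) b1 b310 b313 by linarith
                have f315: "x15 = 1" using assms(8) b269 b313 f311 by linarith
                have f316: "x17 = 0" using assms(12) f290 f314 by linarith
                have f317: "x18 = 0" using assms(12) f290 f314 by linarith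
                have f318: "x16 = 1" using assms(10) b271 b310 f316 by linarith
                have f319: "x19 = 1" using assms(13) f291 f311 f318 by linarith
                show ?thesis using b1 b169 b269 f270 b271 b289 f290 f291 f293 f292 b310 b313 f314 f311 f312 f315 f318 f316 f317 f319 by simp
              next
                assume b320: "x11 = 1"
                have f321: "x12 = 0" using assms(6) b1 b310 b320 by linarith
                have f322: "x15 = 0" using assms(8) b269 b320 f311 by linarith
                have False using assms(9) f270 f321 f312 f322 by linarith
                then show ?thesis by simp
              next
                assume b323: "x11 = 2"
                have False using assms(6) b1 b310 b323 by linarith
                then show ?thesis by simp
              qed
            next
              assume b324: "x10 = 2"
              have f325: "x11 = 0" using assms(6) b1 b324 by linarith
              have f326: "x12 = 0" using assms(6) b1 b324 by linarith
              have False using assms(7) b169 b324 by linarith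
              then show ?thesis by simp
            qed
          next
            assume b327: "x5 = 2"
            have f328: "x6 = 0" using assms(2) b1 b271 b327 by linarith
            have False using assms(4) b269 b327 by linarith
            then show ?thesis by simp
          qed
        next
          assume b329: "x4 = 1"
          have f330: "x7 = 0" using assms(3) b169 b329 by linarith
          have f331: "x8 = 0" using assms(3) b169 b329 by linarith
          have "x5 = 0 \<or> x5 = 1 \<or> x5 = 2" using assms(2) by arith
          then show ?thesis
          proof (elim disjE)
            assume b332: "x5 = 0"
            have f333: "x6 = 1" using assms(2) b1 b329 b332 by linarith
            have f334: "x9 = 1" using assms(4) b269 b332 f330 by linarith
            have "x10 = 0 \<or> x10 = 1 \<or> x10 = 2" using assms(6) by arith
            then show ?thesis
            proof (elim disjE)
              assume b335: "x10 = 0"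
              have "x11 = 0 \<or> x11 = 1 \<or> x11 = 2" using assms(6) by arith
              then show ?thesis
              proof (elim disjE)
                assume b336: "x11 = 0"
                have f337: "x12 = 2" using assms(6) b1 b335 b336 by linarith
                have f338: "x14 = 0" using assms(9) f270 f337 by linarith
                have f339: "x15 = 0" using assms(9) f270 f337 by linarith
                have f340: "x13 = 1" using assms(7) b169 b335 f338 by linarith
                have False using assms(12) f333 f337 by linarith
                then show ?thesis by simp
              next
                assume b341: "x11 = 1"
                have f342: "x12 = 1" using assms(6) b1 b335 b341 by linarith
                have f343: "x13 = 0" using assms(8) b269 b341 by linarith
                have f344: "x15 = 0" using assms(8) b269 b341 by linarith
                have f345: "x14 = 1" using assms(7) b169 b335 f343 by linarith
                have f346: "x17 = 0" using assms(12) f333 f342 by linarith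
                have f347: "x18 = 0" using assms(12) f333 f342 by linarith
                have f348: "x16 = 1" using assms(10) b329 b335 f346 by linarith
                have f349: "x19 = 1" using assms(13) f330 f343 f348 by linarith
                show ?thesis using b1 b169 b269 f270 b329 b332 f333 f330 f331 f334 b335 b341 f342 f343 f345 f344 f348 f346 f347 f349 by simp
              next
                assume b350: "x11 = 2"
                have f351: "x12 = 0" using assms(6) b1 b335 b350 by linarith
                have False using assms(8) b269 b350 by linarith
                then show ?thesis by simp
              qed
            next
              assume b352: "x10 = 1"
              have f353: "x13 = 0" using assms(7) b169 b352 by linarith
              have f354: "x14 = 0" using assms(7) b169 b352 by linarith
              have f355: "x16 = 0" using assms(10) b329 b352 by linarith
              have f356: "x17 = 0" using assms(10) b329 b352 by linarith
              have f357: "x19 = 2" using assms(13) f330 f353 f355 by linarith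
              have False using assms(15) f334 f357 by linarith
              then show ?thesis by simp
            next
              assume b358: "x10 = 2"
              have f359: "x11 = 0" using assms(6) b1 b358 by linarith
              have f360: "x12 = 0" using assms(6) b1 b358 by linarith
              have False using assms(7) b169 b358 by linarith
              then show ?thesis by simp
            qed
          next
            assume b361: "x5 = 1"
            have f362: "x6 = 0" using assms(2) b1 b329 b361 by linarith
            have f363: "x9 = 0" using assms(4) b269 b361 f330 by linarith
            have False using assms(5) f270 f362 f331 f363 by linarith
            then show ?thesis by simp
          next
            assume b364: "x5 = 2"
            have False using assms(2) b1 b329 b364 by linarith
            then show ?thesis by simp
          qed
        next
          assume b365: "x4 = 2"
          have f366: "x5 = 0" using assms(2) b1 b365 by linarith
          have f367: "x6 = 0" using assms(2) b1 b365 by linarith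
          have False using assms(3) b169 b365 by linarith
          then show ?thesis by simp
        qed
      next
        assume b368: "x2 = 2"
        have False using assms(1) b1 b169 b368 by linarith
        then show ?thesis by simp
      qed
    next
      assume b369: "x1 = 2"
      have f370: "x2 = 0" using assms(1) b1 b369 by linarith
      have f371: "x3 = 0" using assms(1) b1 b369 by linarith
      have f372: "x4 = 0" using assms(3) b369 by linarith
      have f373: "x7 = 0" using assms(3) b369 by linarith
      have f374: "x8 = 0" using assms(3) b369 by linarith
      have f375: "x10 = 0" using assms(7) b369 by linarith
      have f376: "x13 = 0" using assms(7) b369 by linarith
      have f377: "x14 = 0" using assms(7) b369 by linarith
      have "x5 = 0 \<or> x5 = 1 \<or> x5 = 2" using assms(2) by arith
      then show ?thesis
      proof (elim disjE)
        assume b378: "x5 = 0"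
        have f379: "x6 = 2" using assms(2) b1 f372 b378 by linarith
        have f380: "x9 = 2" using assms(4) f370 b378 f373 by linarith
        have False using assms(5) f371 f379 f374 f380 by linarith
        then show ?thesis by simp
      next
        assume b381: "x5 = 1"
        have f382: "x6 = 1" using assms(2) b1 f372 b381 by linarith
        have f383: "x9 = 1" using assms(4) f370 b381 f373 by linarith
        have "x11 = 0 \<or> x11 = 1 \<or> x11 = 2" using assms(6) by arith
        then show ?thesis
        proof (elim disjE)
          assume b384: "x11 = 0"
          have f385: "x12 = 2" using assms(6) b1 f375 b384 by linarith
          have f386: "x15 = 2" using assms(8) f370 b384 f376 by linarith
          have False using assms(9) f371 f385 f377 f386 by linarith
          then show ?thesis by simp
        next
          assume b387: "x11 = 1"
          have f388: "x12 = 1" using assms(6) b1 f375 b387 by linarith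
          have f389: "x15 = 1" using assms(8) f370 b387 f376 by linarith
          have f390: "x16 = 0" using assms(11) b381 b387 by linarith
          have f391: "x18 = 0" using assms(11) b381 b387 by linarith
          have f392: "x17 = 2" using assms(10) f372 f375 f390 by linarith
          have False using assms(12) f382 f388 f392 f391 by linarith
          then show ?thesis by simp
        next
          assume b393: "x11 = 2"
          have f394: "x12 = 0" using assms(6) b1 f375 b393 by linarith
          have f395: "x15 = 0" using assms(8) f370 b393 f376 by linarith
          have False using assms(9) f371 f394 f377 f395 by linarith
          then show ?thesis by simp
        qed
      next
        assume b396: "x5 = 2"
        have f397: "x6 = 0" using assms(2) b1 f372 b396 by linarith
        have f398: "x9 = 0" using assms(4) f370 b396 f373 by linarith
        have False using assms(5) f371 f397 f374 f398 by linarith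
        then show ?thesis by simp
      qed
    qed
  next
    assume b399: "x0 = 1"
    have "x1 = 0 \<or> x1 = 1 \<or> x1 = 2" using assms(1) by arith
    then show ?thesis
    proof (elim disjE)
      assume b400: "x1 = 0"
      have "x2 = 0 \<or> x2 = 1 \<or> x2 = 2" using assms(1) by arith
      then show ?thesis
      proof (elim disjE)
        assume b401: "x2 = 0"
        have f402: "x3 = 1" using assms(1) b399 b400 b401 by linarith
        have "x4 = 0 \<or> x4 = 1 \<or> x4 = 2" using assms(2) by arith
        then show ?thesis
        proof (elim disjE)
          assume b403: "x4 = 0"
          have "x5 = 0 \<or> x5 = 1 \<or> x5 = 2" using assms(2) by arith
          then show ?thesis
          proof (elim disjE)
            assume b404: "x5 = 0"
            have f405: "x6 = 1" using assms(2) b399 b403 b404 by linarith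
            have f406: "x8 = 0" using assms(5) f402 f405 by linarith
            have f407: "x9 = 0" using assms(5) f402 f405 by linarith
            have f408: "x7 = 2" using assms(3) b400 b403 f406 by linarith
            have f409: "x13 = 0" using assms(13) f408 by linarith
            have f410: "x16 = 0" using assms(13) f408 by linarith
            have f411: "x19 = 0" using assms(13) f408 by linarith
            have "x10 = 0 \<or> x10 = 1 \<or> x10 = 2" using assms(6) by arith
            then show ?thesis
            proof (elim disjE)
              assume b412: "x10 = 0"
              have f413: "x14 = 2" using assms(7) b400 b412 f409 by linarith
              have False using assms(9) f402 f413 by linarith
              then show ?thesis by simp
            next
              assume b414: "x10 = 1"
              have f415: "x11 = 0" using assms(6) b399 b414 by linarith
              have f416: "x12 = 0" using assms(6) b399 b414 by linarith
              have f417: "x14 = 1" using assms(7) b400 b414 f409 by linarith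
              have f418: "x15 = 2" using assms(8) b401 f415 f409 by linarith
              have False using assms(9) f402 f416 f417 f418 by linarith
              then show ?thesis by simp
            next
              assume b419: "x10 = 2"
              have False using assms(6) b399 b419 by linarith
              then show ?thesis by simp
            qed
          next
            assume b420: "x5 = 1"
            have f421: "x6 = 0" using assms(2) b399 b403 b420 by linarith
            have "x7 = 0 \<or> x7 = 1 \<or> x7 = 2" using assms(3) by arith
            then show ?thesis
            proof (elim disjE)
              assume b422: "x7 = 0"
              have f423: "x8 = 2" using assms(3) b400 b403 b422 by linarith
              have f424: "x9 = 1" using assms(4) b401 b420 b422 by linarith
              have False using assms(5) f402 f421 f423 f424 by linarith
              then show ?thesis by simp
            next
              assume b425: "x7 = 1"
              have f426: "x8 = 1" using assms(3) b400 b403 b425 by linarith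
              have f427: "x9 = 0" using assms(4) b401 b420 b425 by linarith
              have "x10 = 0 \<or> x10 = 1 \<or> x10 = 2" using assms(6) by arith
              then show ?thesis
              proof (elim disjE)
                assume b428: "x10 = 0"
                have "x11 = 0 \<or> x11 = 1 \<or> x11 = 2" using assms(6) by arith
                then show ?thesis
                proof (elim disjE)
                  assume b429: "x11 = 0"
                  have f430: "x12 = 1" using assms(6) b399 b428 b429 by linarith
                  have f431: "x14 = 0" using assms(9) f402 f430 by linarith
                  have f432: "x15 = 0" using assms(9) f402 f430 by linarith
                  have f433: "x13 = 2" using assms(7) b400 b428 f431 by linarith
                  have False using assms(13) b425 f433 by linarith
                  then show ?thesis by simp
                next
                  assume b434: "x11 = 1"
                  have f435: "x12 = 0" using assms(6) b399 b428 b434 by linarith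
                  have f436: "x16 = 0" using assms(11) b420 b434 by linarith
                  have f437: "x18 = 0" using assms(11) b420 b434 by linarith
                  have f438: "x17 = 2" using assms(10) b403 b428 f436 by linarith
                  have False using assms(14) f426 f438 by linarith
                  then show ?thesis by simp
                next
                  assume b439: "x11 = 2"
                  have False using assms(6) b399 b428 b439 by linarith
                  then show ?thesis by simp
                qed
              next
                assume b440: "x10 = 1"
                have f441: "x11 = 0" using assms(6) b399 b440 by linarith
                have f442: "x12 = 0" using assms(6) b399 b440 by linarith
                have "x13 = 0 \<or> x13 = 1 \<or> x13 = 2" using assms(7) by arith
                then show ?thesis
                proof (elim disjE)
                  assume b443: "x13 = 0"
                  have f444: "x14 = 1" using assms(7) b400 b440 b443 by linarith
                  have f445: "x15 = 2" using assms(8) b401 f441 b443 by linarith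
                  have False using assms(9) f402 f442 f444 f445 by linarith
                  then show ?thesis by simp
                next
                  assume b446: "x13 = 1"
                  have f447: "x14 = 0" using assms(7) b400 b440 b446 by linarith
                  have f448: "x15 = 1" using assms(8) b401 f441 b446 by linarith
                  have f449: "x16 = 0" using assms(13) b425 b446 by linarith
                  have f450: "x19 = 0" using assms(13) b425 b446 by linarith
                  have f451: "x17 = 1" using assms(10) b403 b440 f449 by linarith
                  have f452: "x18 = 1" using assms(11) b420 f441 f449 by linarith
                  show ?thesis using b399 b400 b401 f402 b403 b420 f421 b425 f426 f427 b440 f441 f442 b446 f447 f448 f449 f451 f452 f450 by simp
                next
                  assume b453: "x13 = 2"
                  have False using assms(7) b400 b440 b453 by linarith
                  then show ?thesis by simp
                qed
              next
                assume b454: "x10 = 2"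
                have False using assms(6) b399 b454 by linarith
                then show ?thesis by simp
              qed
            next
              assume b455: "x7 = 2"
              have f456: "x8 = 0" using assms(3) b400 b403 b455 by linarith
              have False using assms(4) b401 b420 b455 by linarith
              then show ?thesis by simp
            qed
          next
            assume b457: "x5 = 2"
            have False using assms(2) b399 b403 b457 by linarith
            then show ?thesis by simp
          qed
        next
          assume b458: "x4 = 1"
          have f459: "x5 = 0" using assms(2) b399 b458 by linarith
          have f460: "x6 = 0" using assms(2) b399 b458 by linarith
          have "x7 = 0 \<or> x7 = 1 \<or> x7 = 2" using assms(3) by arith
          then show ?thesis
          proof (elim disjE)
            assume b461: "x7 = 0"
            have f462: "x8 = 1" using assms(3) b400 b458 b461 by linarith
            have f463: "x9 = 2" using assms(4) b401 f459 b461 by linarith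
            have False using assms(5) f402 f460 f462 f463 by linarith
            then show ?thesis by simp
          next
            assume b464: "x7 = 1"
            have f465: "x8 = 0" using assms(3) b400 b458 b464 by linarith
            have f466: "x9 = 1" using assms(4) b401 f459 b464 by linarith
            have "x10 = 0 \<or> x10 = 1 \<or> x10 = 2" using assms(6) by arith
            then show ?thesis
            proof (elim disjE)
              assume b467: "x10 = 0"
              have "x11 = 0 \<or> x11 = 1 \<or> x11 = 2" using assms(6) by arith
              then show ?thesis
              proof (elim disjE)
                assume b468: "x11 = 0"
                have f469: "x12 = 1" using assms(6) b399 b467 b468 by linarith
                have f470: "x14 = 0" using assms(9) f402 f469 by linarith
                have f471: "x15 = 0" using assms(9) f402 f469 by linarith
                have f472: "x13 = 2" using assms(7) b400 b467 f470 by linarith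
                have False using assms(13) b464 f472 by linarith
                then show ?thesis by simp
              next
                assume b473: "x11 = 1"
                have f474: "x12 = 0" using assms(6) b399 b467 b473 by linarith
                have "x13 = 0 \<or> x13 = 1 \<or> x13 = 2" using assms(7) by arith
                then show ?thesis
                proof (elim disjE)
                  assume b475: "x13 = 0"
                  have f476: "x14 = 2" using assms(7) b400 b467 b475 by linarith
                  have f477: "x15 = 1" using assms(8) b401 b473 b475 by linarith
                  have False using assms(9) f402 f474 f476 f477 by linarith
                  then show ?thesis by simp
                next
                  assume b478: "x13 = 1"
                  have f479: "x14 = 1" using assms(7) b400 b467 b478 by linarith
                  have f480: "x15 = 0" using assms(8) b401 b473 b478 by linarith
                  have f481: "x16 = 0" using assms(13) b464 b478 by linarith
                  have f482: "x19 = 0" using assms(13) b464 b478 by linarith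
                  have f483: "x17 = 1" using assms(10) b458 b467 f481 by linarith
                  have f484: "x18 = 1" using assms(11) f459 b473 f481 by linarith
                  show ?thesis using b399 b400 b401 f402 b458 f459 f460 b464 f465 f466 b467 b473 f474 b478 f479 f480 f481 f483 f484 f482 by simp
                next
                  assume b485: "x13 = 2"
                  have f486: "x14 = 0" using assms(7) b400 b467 b485 by linarith
                  have False using assms(8) b401 b473 b485 by linarith
                  then show ?thesis by simp
                qed
              next
                assume b487: "x11 = 2"
                have False using assms(6) b399 b467 b487 by linarith
                then show ?thesis by simp
              qed
            next
              assume b488: "x10 = 1"
              have f489: "x11 = 0" using assms(6) b399 b488 by linarith
              have f490: "x12 = 0" using assms(6) b399 b488 by linarith
              have f491: "x16 = 0" using assms(10) b458 b488 by linarith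
              have f492: "x17 = 0" using assms(10) b458 b488 by linarith
              have f493: "x18 = 2" using assms(11) f459 f489 f491 by linarith
              have False using assms(15) f466 f493 by linarith
              then show ?thesis by simp
            next
              assume b494: "x10 = 2"
              have False using assms(6) b399 b494 by linarith
              then show ?thesis by simp
            qed
          next
            assume b495: "x7 = 2"
            have False using assms(3) b400 b458 b495 by linarith
            then show ?thesis by simp
          qed
        next
          assume b496: "x4 = 2"
          have False using assms(2) b399 b496 by linarith
          then show ?thesis by simp
        qed
      next
        assume b497: "x2 = 1"
        have f498: "x3 = 0" using assms(1) b399 b400 b497 by linarith
        have "x4 = 0 \<or> x4 = 1 \<or> x4 = 2" using assms(2) by arith
        then show ?thesis
        proof (elim disjE)
          assume b499: "x4 = 0"
          have "x5 = 0 \<or> x5 = 1 \<or> x5 = 2" using assms(2) by arith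
          then show ?thesis
          proof (elim disjE)
            assume b500: "x5 = 0"
            have f501: "x6 = 1" using assms(2) b399 b499 b500 by linarith
            have "x7 = 0 \<or> x7 = 1 \<or> x7 = 2" using assms(3) by arith
            then show ?thesis
            proof (elim disjE)
              assume b502: "x7 = 0"
              have f503: "x8 = 2" using assms(3) b400 b499 b502 by linarith
              have f504: "x9 = 1" using assms(4) b497 b500 b502 by linarith
              have False using assms(5) f498 f501 f503 f504 by linarith
              then show ?thesis by simp
            next
              assume b505: "x7 = 1"
              have f506: "x8 = 1" using assms(3) b400 b499 b505 by linarith
              have f507: "x9 = 0" using assms(4) b497 b500 b505 by linarith
              have "x10 = 0 \<or> x10 = 1 \<or> x10 = 2" using assms(6) by arith
              then show ?thesis
              proof (elim disjE)
                assume b508: "x10 = 0"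
                have "x11 = 0 \<or> x11 = 1 \<or> x11 = 2" using assms(6) by arith
                then show ?thesis
                proof (elim disjE)
                  assume b509: "x11 = 0"
                  have f510: "x12 = 1" using assms(6) b399 b508 b509 by linarith
                  have f511: "x17 = 0" using assms(12) f501 f510 by linarith
                  have f512: "x18 = 0" using assms(12) f501 f510 by linarith
                  have f513: "x16 = 2" using assms(10) b499 b508 f511 by linarith
                  have False using assms(13) b505 f513 by linarith
                  then show ?thesis by simp
                next
                  assume b514: "x11 = 1"
                  have f515: "x12 = 0" using assms(6) b399 b508 b514 by linarith
                  have f516: "x13 = 0" using assms(8) b497 b514 by linarith
                  have f517: "x15 = 0" using assms(8) b497 b514 by linarith
                  have f518: "x14 = 2" using assms(7) b400 b508 f516 by linarith
                  have False using assms(14) f506 f518 by linarith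
                  then show ?thesis by simp
                next
                  assume b519: "x11 = 2"
                  have False using assms(6) b399 b508 b519 by linarith
                  then show ?thesis by simp
                qed
              next
                assume b520: "x10 = 1"
                have f521: "x11 = 0" using assms(6) b399 b520 by linarith
                have f522: "x12 = 0" using assms(6) b399 b520 by linarith
                have "x13 = 0 \<or> x13 = 1 \<or> x13 = 2" using assms(7) by arith
                then show ?thesis
                proof (elim disjE)
                  assume b523: "x13 = 0"
                  have f524: "x14 = 1" using assms(7) b400 b520 b523 by linarith
                  have f525: "x15 = 1" using assms(8) b497 f521 b523 by linarith
                  have f526: "x17 = 0" using assms(14) f506 f524 by linarith
                  have f527: "x19 = 0" using assms(14) f506 f524 by linarith
                  have f528: "x16 = 1" using assms(10) b499 b520 f526 by linarith
                  have f529: "x18 = 1" using assms(11) b500 f521 f528 by linarith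
                  show ?thesis using b399 b400 b497 f498 b499 b500 f501 b505 f506 f507 b520 f521 f522 b523 f524 f525 f528 f526 f529 f527 by simp
                next
                  assume b530: "x13 = 1"
                  have f531: "x14 = 0" using assms(7) b400 b520 b530 by linarith
                  have f532: "x15 = 0" using assms(8) b497 f521 b530 by linarith
                  have False using assms(9) f498 f522 f531 f532 by linarith
                  then show ?thesis by simp
                next
                  assume b533: "x13 = 2"
                  have False using assms(7) b400 b520 b533 by linarith
                  then show ?thesis by simp
                qed
              next
                assume b534: "x10 = 2"
                have False using assms(6) b399 b534 by linarith
                then show ?thesis by simp
              qed
            next
              assume b535: "x7 = 2"
              have f536: "x8 = 0" using assms(3) b400 b499 b535 by linarith
              have False using assms(4) b497 b500 b535 by linarith
              then show ?thesis by simp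
            qed
          next
            assume b537: "x5 = 1"
            have f538: "x6 = 0" using assms(2) b399 b499 b537 by linarith
            have f539: "x7 = 0" using assms(4) b497 b537 by linarith
            have f540: "x9 = 0" using assms(4) b497 b537 by linarith
            have f541: "x8 = 2" using assms(3) b400 b499 f539 by linarith
            have f542: "x14 = 0" using assms(14) f541 by linarith
            have f543: "x17 = 0" using assms(14) f541 by linarith
            have f544: "x19 = 0" using assms(14) f541 by linarith
            have "x10 = 0 \<or> x10 = 1 \<or> x10 = 2" using assms(6) by arith
            then show ?thesis
            proof (elim disjE)
              assume b545: "x10 = 0"
              have f546: "x13 = 2" using assms(7) b400 b545 f542 by linarith
              have False using assms(8) b497 f546 by linarith
              then show ?thesis by simp
            next
              assume b547: "x10 = 1"
              have f548: "x11 = 0" using assms(6) b399 b547 by linarith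
              have f549: "x12 = 0" using assms(6) b399 b547 by linarith
              have f550: "x13 = 1" using assms(7) b400 b547 f542 by linarith
              have f551: "x15 = 0" using assms(8) b497 f548 f550 by linarith
              have False using assms(9) f498 f549 f542 f551 by linarith
              then show ?thesis by simp
            next
              assume b552: "x10 = 2"
              have False using assms(6) b399 b552 by linarith
              then show ?thesis by simp
            qed
          next
            assume b553: "x5 = 2"
            have False using assms(2) b399 b499 b553 by linarith
            then show ?thesis by simp
          qed
        next
          assume b554: "x4 = 1"
          have f555: "x5 = 0" using assms(2) b399 b554 by linarith
          have f556: "x6 = 0" using assms(2) b399 b554 by linarith
          have "x7 = 0 \<or> x7 = 1 \<or> x7 = 2" using assms(3) by arith
          then show ?thesis
          proof (elim disjE)
            assume b557: "x7 = 0"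
            have f558: "x8 = 1" using assms(3) b400 b554 b557 by linarith
            have f559: "x9 = 1" using assms(4) b497 f555 b557 by linarith
            have "x10 = 0 \<or> x10 = 1 \<or> x10 = 2" using assms(6) by arith
            then show ?thesis
            proof (elim disjE)
              assume b560: "x10 = 0"
              have "x11 = 0 \<or> x11 = 1 \<or> x11 = 2" using assms(6) by arith
              then show ?thesis
              proof (elim disjE)
                assume b561: "x11 = 0"
                have f562: "x12 = 1" using assms(6) b399 b560 b561 by linarith
                have "x13 = 0 \<or> x13 = 1 \<or> x13 = 2" using assms(7) by arith
                then show ?thesis
                proof (elim disjE)
                  assume b563: "x13 = 0"
                  have f564: "x14 = 2" using assms(7) b400 b560 b563 by linarith
                  have f565: "x15 = 1" using assms(8) b497 b561 b563 by linarith
                  have False using assms(9) f498 f562 f564 f565 by linarith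
                  then show ?thesis by simp
                next
                  assume b566: "x13 = 1"
                  have f567: "x14 = 1" using assms(7) b400 b560 b566 by linarith
                  have f568: "x15 = 0" using assms(8) b497 b561 b566 by linarith
                  have f569: "x17 = 0" using assms(14) f558 f567 by linarith
                  have f570: "x19 = 0" using assms(14) f558 f567 by linarith
                  have f571: "x16 = 1" using assms(10) b554 b560 f569 by linarith
                  have f572: "x18 = 1" using assms(11) f555 b561 f571 by linarith
                  show ?thesis using b399 b400 b497 f498 b554 f555 f556 b557 f558 f559 b560 b561 f562 b566 f567 f568 f571 f569 f572 f570 by simp
                next
                  assume b573: "x13 = 2"
                  have f574: "x14 = 0" using assms(7) b400 b560 b573 by linarith
                  have False using assms(8) b497 b561 b573 by linarith
                  then show ?thesis by simp
                qed
              next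
                assume b575: "x11 = 1"
                have f576: "x12 = 0" using assms(6) b399 b560 b575 by linarith
                have f577: "x13 = 0" using assms(8) b497 b575 by linarith
                have f578: "x15 = 0" using assms(8) b497 b575 by linarith
                have f579: "x14 = 2" using assms(7) b400 b560 f577 by linarith
                have False using assms(14) f558 f579 by linarith
                then show ?thesis by simp
              next
                assume b580: "x11 = 2"
                have False using assms(6) b399 b560 b580 by linarith
                then show ?thesis by simp
              qed
            next
              assume b581: "x10 = 1"
              have f582: "x11 = 0" using assms(6) b399 b581 by linarith
              have f583: "x12 = 0" using assms(6) b399 b581 by linarith
              have f584: "x16 = 0" using assms(10) b554 b581 by linarith
              have f585: "x17 = 0" using assms(10) b554 b581 by linarith
              have f586: "x18 = 2" using assms(11) f555 f582 f584 by linarith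
              have False using assms(15) f559 f586 by linarith
              then show ?thesis by simp
            next
              assume b587: "x10 = 2"
              have False using assms(6) b399 b587 by linarith
              then show ?thesis by simp
            qed
          next
            assume b588: "x7 = 1"
            have f589: "x8 = 0" using assms(3) b400 b554 b588 by linarith
            have f590: "x9 = 0" using assms(4) b497 f555 b588 by linarith
            have False using assms(5) f498 f556 f589 f590 by linarith
            then show ?thesis by simp
          next
            assume b591: "x7 = 2"
            have False using assms(3) b400 b554 b591 by linarith
            then show ?thesis by simp
          qed
        next
          assume b592: "x4 = 2"
          have False using assms(2) b399 b592 by linarith
          then show ?thesis by simp
        qed
      next
        assume b593: "x2 = 2"
        have False using assms(1) b399 b400 b593 by linarith
        then show ?thesis by simp
      qed
    next
      assume b594: "x1 = 1"
      have f595: "x2 = 0" using assms(1) b399 b594 by linarith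
      have f596: "x3 = 0" using assms(1) b399 b594 by linarith
      have "x4 = 0 \<or> x4 = 1 \<or> x4 = 2" using assms(2) by arith
      then show ?thesis
      proof (elim disjE)
        assume b597: "x4 = 0"
        have "x5 = 0 \<or> x5 = 1 \<or> x5 = 2" using assms(2) by arith
        then show ?thesis
        proof (elim disjE)
          assume b598: "x5 = 0"
          have f599: "x6 = 1" using assms(2) b399 b597 b598 by linarith
          have "x7 = 0 \<or> x7 = 1 \<or> x7 = 2" using assms(3) by arith
          then show ?thesis
          proof (elim disjE)
            assume b600: "x7 = 0"
            have f601: "x8 = 1" using assms(3) b594 b597 b600 by linarith
            have f602: "x9 = 2" using assms(4) f595 b598 b600 by linarith
            have False using assms(5) f596 f599 f601 f602 by linarith
            then show ?thesis by simp
          next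
            assume b603: "x7 = 1"
            have f604: "x8 = 0" using assms(3) b594 b597 b603 by linarith
            have f605: "x9 = 1" using assms(4) f595 b598 b603 by linarith
            have "x10 = 0 \<or> x10 = 1 \<or> x10 = 2" using assms(6) by arith
            then show ?thesis
            proof (elim disjE)
              assume b606: "x10 = 0"
              have "x11 = 0 \<or> x11 = 1 \<or> x11 = 2" using assms(6) by arith
              then show ?thesis
              proof (elim disjE)
                assume b607: "x11 = 0"
                have f608: "x12 = 1" using assms(6) b399 b606 b607 by linarith
                have f609: "x17 = 0" using assms(12) f599 f608 by linarith
                have f610: "x18 = 0" using assms(12) f599 f608 by linarith
                have f611: "x16 = 2" using assms(10) b597 b606 f609 by linarith
                have False using assms(13) b603 f611 by linarith
                then show ?thesis by simp
              next
                assume b612: "x11 = 1"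
                have f613: "x12 = 0" using assms(6) b399 b606 b612 by linarith
                have "x13 = 0 \<or> x13 = 1 \<or> x13 = 2" using assms(7) by arith
                then show ?thesis
                proof (elim disjE)
                  assume b614: "x13 = 0"
                  have f615: "x14 = 1" using assms(7) b594 b606 b614 by linarith
                  have f616: "x15 = 1" using assms(8) f595 b612 b614 by linarith
                  have f617: "x18 = 0" using assms(15) f605 f616 by linarith
                  have f618: "x19 = 0" using assms(15) f605 f616 by linarith
                  have f619: "x16 = 1" using assms(11) b598 b612 f617 by linarith
                  have f620: "x17 = 1" using assms(10) b597 b606 f619 by linarith
                  show ?thesis using b399 b594 f595 f596 b597 b598 f599 b603 f604 f605 b606 b612 f613 b614 f615 f616 f619 f620 f617 f618 by simp
                next
                  assume b621: "x13 = 1"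
                  have f622: "x14 = 0" using assms(7) b594 b606 b621 by linarith
                  have f623: "x15 = 0" using assms(8) f595 b612 b621 by linarith
                  have False using assms(9) f596 f613 f622 f623 by linarith
                  then show ?thesis by simp
                next
                  assume b624: "x13 = 2"
                  have False using assms(7) b594 b606 b624 by linarith
                  then show ?thesis by simp
                qed
              next
                assume b625: "x11 = 2"
                have False using assms(6) b399 b606 b625 by linarith
                then show ?thesis by simp
              qed
            next
              assume b626: "x10 = 1"
              have f627: "x11 = 0" using assms(6) b399 b626 by linarith
              have f628: "x12 = 0" using assms(6) b399 b626 by linarith
              have f629: "x13 = 0" using assms(7) b594 b626 by linarith
              have f630: "x14 = 0" using assms(7) b594 b626 by linarith
              have f631: "x15 = 2" using assms(8) f595 f627 f629 by linarith
              have False using assms(15) f605 f631 by linarith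
              then show ?thesis by simp
            next
              assume b632: "x10 = 2"
              have False using assms(6) b399 b632 by linarith
              then show ?thesis by simp
            qed
          next
            assume b633: "x7 = 2"
            have False using assms(3) b594 b597 b633 by linarith
            then show ?thesis by simp
          qed
        next
          assume b634: "x5 = 1"
          have f635: "x6 = 0" using assms(2) b399 b597 b634 by linarith
          have "x7 = 0 \<or> x7 = 1 \<or> x7 = 2" using assms(3) by arith
          then show ?thesis
          proof (elim disjE)
            assume b636: "x7 = 0"
            have f637: "x8 = 1" using assms(3) b594 b597 b636 by linarith
            have f638: "x9 = 1" using assms(4) f595 b634 b636 by linarith
            have "x10 = 0 \<or> x10 = 1 \<or> x10 = 2" using assms(6) by arith
            then show ?thesis
            proof (elim disjE)
              assume b639: "x10 = 0"
              have "x11 = 0 \<or> x11 = 1 \<or> x11 = 2" using assms(6) by arith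
              then show ?thesis
              proof (elim disjE)
                assume b640: "x11 = 0"
                have f641: "x12 = 1" using assms(6) b399 b639 b640 by linarith
                have "x13 = 0 \<or> x13 = 1 \<or> x13 = 2" using assms(7) by arith
                then show ?thesis
                proof (elim disjE)
                  assume b642: "x13 = 0"
                  have f643: "x14 = 1" using assms(7) b594 b639 b642 by linarith
                  have f644: "x15 = 2" using assms(8) f595 b640 b642 by linarith
                  have False using assms(9) f596 f641 f643 f644 by linarith
                  then show ?thesis by simp
                next
                  assume b645: "x13 = 1"
                  have f646: "x14 = 0" using assms(7) b594 b639 b645 by linarith
                  have f647: "x15 = 1" using assms(8) f595 b640 b645 by linarith
                  have f648: "x18 = 0" using assms(15) f638 f647 by linarith
                  have f649: "x19 = 0" using assms(15) f638 f647 by linarith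
                  have f650: "x16 = 1" using assms(11) b634 b640 f648 by linarith
                  have f651: "x17 = 1" using assms(10) b597 b639 f650 by linarith
                  show ?thesis using b399 b594 f595 f596 b597 b634 f635 b636 f637 f638 b639 b640 f641 b645 f646 f647 f650 f651 f648 f649 by simp
                next
                  assume b652: "x13 = 2"
                  have False using assms(7) b594 b639 b652 by linarith
                  then show ?thesis by simp
                qed
              next
                assume b653: "x11 = 1"
                have f654: "x12 = 0" using assms(6) b399 b639 b653 by linarith
                have f655: "x16 = 0" using assms(11) b634 b653 by linarith
                have f656: "x18 = 0" using assms(11) b634 b653 by linarith
                have f657: "x17 = 2" using assms(10) b597 b639 f655 by linarith
                have False using assms(14) f637 f657 by linarith
                then show ?thesis by simp
              next
                assume b658: "x11 = 2"
                have False using assms(6) b399 b639 b658 by linarith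
                then show ?thesis by simp
              qed
            next
              assume b659: "x10 = 1"
              have f660: "x11 = 0" using assms(6) b399 b659 by linarith
              have f661: "x12 = 0" using assms(6) b399 b659 by linarith
              have f662: "x13 = 0" using assms(7) b594 b659 by linarith
              have f663: "x14 = 0" using assms(7) b594 b659 by linarith
              have f664: "x15 = 2" using assms(8) f595 f660 f662 by linarith
              have False using assms(15) f638 f664 by linarith
              then show ?thesis by simp
            next
              assume b665: "x10 = 2"
              have False using assms(6) b399 b665 by linarith
              then show ?thesis by simp
            qed
          next
            assume b666: "x7 = 1"
            have f667: "x8 = 0" using assms(3) b594 b597 b666 by linarith
            have f668: "x9 = 0" using assms(4) f595 b634 b666 by linarith
            have False using assms(5) f596 f635 f667 f668 by linarith
            then show ?thesis by simp
          next
            assume b669: "x7 = 2"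
            have False using assms(3) b594 b597 b669 by linarith
            then show ?thesis by simp
          qed
        next
          assume b670: "x5 = 2"
          have False using assms(2) b399 b597 b670 by linarith
          then show ?thesis by simp
        qed
      next
        assume b671: "x4 = 1"
        have f672: "x5 = 0" using assms(2) b399 b671 by linarith
        have f673: "x6 = 0" using assms(2) b399 b671 by linarith
        have f674: "x7 = 0" using assms(3) b594 b671 by linarith
        have f675: "x8 = 0" using assms(3) b594 b671 by linarith
        have f676: "x9 = 2" using assms(4) f595 f672 f674 by linarith
        have f677: "x15 = 0" using assms(15) f676 by linarith
        have f678: "x18 = 0" using assms(15) f676 by linarith
        have f679: "x19 = 0" using assms(15) f676 by linarith
        have "x11 = 0 \<or> x11 = 1 \<or> x11 = 2" using assms(6) by arith
        then show ?thesis
        proof (elim disjE)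
          assume b680: "x11 = 0"
          have f681: "x13 = 2" using assms(8) f595 b680 f677 by linarith
          have False using assms(7) b594 f681 by linarith
          then show ?thesis by simp
        next
          assume b682: "x11 = 1"
          have f683: "x10 = 0" using assms(6) b399 b682 by linarith
          have f684: "x12 = 0" using assms(6) b399 b682 by linarith
          have f685: "x13 = 1" using assms(8) f595 b682 f677 by linarith
          have f686: "x14 = 0" using assms(7) b594 f683 f685 by linarith
          have False using assms(9) f596 f684 f686 f677 by linarith
          then show ?thesis by simp
        next
          assume b687: "x11 = 2"
          have False using assms(6) b399 b687 by linarith
          then show ?thesis by simp
        qed
      next
        assume b688: "x4 = 2"
        have False using assms(2) b399 b688 by linarith
        then show ?thesis by simp
      qed
    next
      assume b689: "x1 = 2"
      have False using assms(1) b399 b689 by linarith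
      then show ?thesis by simp
    qed
  next
    assume b690: "x0 = 2"
    have f691: "x1 = 0" using assms(1) b690 by linarith
    have f692: "x2 = 0" using assms(1) b690 by linarith
    have f693: "x3 = 0" using assms(1) b690 by linarith
    have f694: "x4 = 0" using assms(2) b690 by linarith
    have f695: "x5 = 0" using assms(2) b690 by linarith
    have f696: "x6 = 0" using assms(2) b690 by linarith
    have f697: "x10 = 0" using assms(6) b690 by linarith
    have f698: "x11 = 0" using assms(6) b690 by linarith
    have f699: "x12 = 0" using assms(6) b690 by linarith
    have "x7 = 0 \<or> x7 = 1 \<or> x7 = 2" using assms(3) by arith
    then show ?thesis
    proof (elim disjE)
      assume b700: "x7 = 0"
      have f701: "x8 = 2" using assms(3) f691 f694 b700 by linarith
      have f702: "x9 = 2" using assms(4) f692 f695 b700 by linarith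
      have False using assms(5) f693 f696 f701 f702 by linarith
      then show ?thesis by simp
    next
      assume b703: "x7 = 1"
      have f704: "x8 = 1" using assms(3) f691 f694 b703 by linarith
      have f705: "x9 = 1" using assms(4) f692 f695 b703 by linarith
      have "x13 = 0 \<or> x13 = 1 \<or> x13 = 2" using assms(7) by arith
      then show ?thesis
      proof (elim disjE)
        assume b706: "x13 = 0"
        have f707: "x14 = 2" using assms(7) f691 f697 b706 by linarith
        have f708: "x15 = 2" using assms(8) f692 f698 b706 by linarith
        have False using assms(9) f693 f699 f707 f708 by linarith
        then show ?thesis by simp
      next
        assume b709: "x13 = 1"
        have f710: "x14 = 1" using assms(7) f691 f697 b709 by linarith
        have f711: "x15 = 1" using assms(8) f692 f698 b709 by linarith
        have f712: "x16 = 0" using assms(13) b703 b709 by linarith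
        have f713: "x19 = 0" using assms(13) b703 b709 by linarith
        have f714: "x17 = 2" using assms(10) f694 f697 f712 by linarith
        have f715: "x18 = 2" using assms(11) f695 f698 f712 by linarith
        have False using assms(12) f696 f699 f714 f715 by linarith
        then show ?thesis by simp
      next
        assume b716: "x13 = 2"
        have f717: "x14 = 0" using assms(7) f691 f697 b716 by linarith
        have f718: "x15 = 0" using assms(8) f692 f698 b716 by linarith
        have False using assms(9) f693 f699 f717 f718 by linarith
        then show ?thesis by simp
      qed
    next
      assume b719: "x7 = 2"
      have f720: "x8 = 0" using assms(3) f691 f694 b719 by linarith
      have f721: "x9 = 0" using assms(4) f692 f695 b719 by linarith
      have False using assms(5) f693 f696 f720 f721 by linarith
      then show ?thesis by simp
    qed
  qed
qed

lemma all20: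
  assumes ijk: "i < j" "j < k" "k < (6::nat)"
    and "P 0 1 2"
    "P 0 1 3"
    "P 0 1 4"
    "P 0 1 5"
    "P 0 2 3"
    "P 0 2 4"
    "P 0 2 5"
    "P 0 3 4"
    "P 0 3 5"
    "P 0 4 5"
    "P 1 2 3"
    "P 1 2 4"
    "P 1 2 5"
    "P 1 3 4"
    "P 1 3 5"
    "P 1 4 5"
    "P 2 3 4"
    "P 2 3 5"
    "P 2 4 5"
    "P 3 4 5"
  shows "P i j k"
proof -
  have "i = 0 \<or> i = 1 \<or> i = 2 \<or> i = 3 \<or> i = 4 \<or> i = 5" using ijk by arith
  moreover have "j = 0 \<or> j = 1 \<or> j = 2 \<or> j = 3 \<or> j = 4 \<or> j = 5" using ijk by arith
  moreover have "k = 0 \<or> k = 1 \<or> k = 2 \<or> k = 3 \<or> k = 4 \<or> k = 5" using ijk by arith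
  ultimately show ?thesis using assms by (elim disjE) simp_all
qed


lemma sorted3:
  assumes "S \<subseteq> {0..<6::nat}" "card S = 3"
  shows "\<exists>i j k. i < j \<and> j < k \<and> k < 6 \<and> S = {i, j, k}"
proof -
  have fin: "finite S" using assms(1) finite_subset by blast
  define l where "l = sorted_list_of_set S"
  have len: "length l = 3" using assms(2) fin unfolding l_def by simp
  have st: "sorted_wrt (<) l" unfolding l_def by simp
  have sl: "set l = S" using fin unfolding l_def by simp
  obtain a b c where abc: "l = [a, b, c]" using len
    by (metis (no_types, lifting) length_0_conv length_Suc_conv numeral_3_eq_3)
  have "a < b" "b < c" using st abc by auto
  moreover have "S = {a, b, c}" using sl abc by simp
  moreover have "c < 6" using assms(1) calculation(3) by auto
  ultimately show ?thesis by blast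
qed

definition Hblk :: "nat \<Rightarrow> nat set" where "Hblk j = {i. i < 6 \<and> j \<in> H610_nbr i}"

lemma Hblk_img: "Hblk ` {6..<16} = {{0,2,3},{1,3,5},{0,2,5},{0,1,4},{0,1,3},{2,3,4},{1,2,4},{1,2,5},{3,4,5},{0,4,5}}"
proof -
  have r: "{6..<16::nat} = {6,7,8,9,10,11,12,13,14,15}" by (auto; arith)
  have "Hblk 6 = {0,2,3}" "Hblk 7 = {1,3,5}" "Hblk 8 = {0,2,5}" "Hblk 9 = {0,1,4}" "Hblk 10 = {0,1,3}"
    "Hblk 11 = {2,3,4}" "Hblk 12 = {1,2,4}" "Hblk 13 = {1,2,5}" "Hblk 14 = {3,4,5}" "Hblk 15 = {0,4,5}"
    unfolding Hblk_def H610_nbr_def by (auto split: if_splits)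
  then show ?thesis unfolding r by simp
qed

lemma nbr_ge: "x \<in> H610_nbr i \<Longrightarrow> 6 \<le> x"
  unfolding H610_nbr_def by (auto split: if_splits)

lemma HE_lo_hi: "i < 6 \<Longrightarrow> 6 \<le> j \<Longrightarrow> H610_E i j \<longleftrightarrow> i \<in> Hblk j"
  unfolding H610_E_def Hblk_def by auto
lemma HE_hi_lo: "i < 6 \<Longrightarrow> 6 \<le> j \<Longrightarrow> H610_E j i \<longleftrightarrow> i \<in> Hblk j"
  unfolding H610_E_def Hblk_def by auto
lemma HE_lo_lo: "i < 6 \<Longrightarrow> i' < 6 \<Longrightarrow> \<not> H610_E i i'"
  unfolding H610_E_def using nbr_ge by fastforce
lemma HE_hi_hi: "6 \<le> j \<Longrightarrow> 6 \<le> j' \<Longrightarrow> \<not> H610_E j j'"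
  unfolding H610_E_def by auto

locale hcase_lab = hcase +
  fixes beta :: "'a \<Rightarrow> nat"
  assumes bij: "bij_betw beta B {0..<6}"
begin

definition T where "T a = beta ` N a"
definition cntS where "cntS t = card {a\<in>A. T a = t}"
definition bi where "bi i = inv_into B beta i"

lemma injb: "inj_on beta B" using bij bij_betw_imp_inj_on by blast
lemma bi_in: "i < 6 \<Longrightarrow> bi i \<in> B"
  unfolding bi_def using bij by (metis atLeastLessThan_iff bij_betw_def inv_into_into zero_le)
lemma beta_bi: "i < 6 \<Longrightarrow> beta (bi i) = i"
  unfolding bi_def using bij by (metis atLeastLessThan_iff bij_betw_def f_inv_into_f zero_le)
lemma beta_lt: "x \<in> B \<Longrightarrow> beta x < 6"
  using bij bij_betw_apply by fastforce

lemma NA_B: "a \<in> A \<Longrightarrow> N a \<subseteq> B" using nbA by blast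

lemma T_sub: "a \<in> A \<Longrightarrow> T a \<subseteq> {0..<6}"
  unfolding T_def using NA_B beta_lt by fastforce

lemma card_T: "a \<in> A \<Longrightarrow> card (T a) = 3"
  unfolding T_def using card_image[OF inj_on_subset[OF injb NA_B]] card_nbA h1 by simp

lemma memT_B: "a \<in> A \<Longrightarrow> x \<in> B \<Longrightarrow> beta x \<in> T a \<longleftrightarrow> x \<in> N a"
  unfolding T_def using NA_B injb by (meson inj_on_image_mem_iff)

lemma memT: "a \<in> A \<Longrightarrow> i < 6 \<Longrightarrow> i \<in> T a \<longleftrightarrow> a \<in> N (bi i)"
proof -
  assume a: "a \<in> A" and i: "i < 6"
  have "i \<in> T a \<longleftrightarrow> bi i \<in> N a" using memT_B[OF a bi_in[OF i]] beta_bi[OF i] by simp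
  also have "\<dots> \<longleftrightarrow> a \<in> N (bi i)" using N_sym a bi_in[OF i] VAB by blast
  finally show ?thesis .
qed

lemma pair:
  assumes ij: "i \<noteq> j" "i < 6" "j < 6"
  shows "(\<Sum>k\<in>{0..<6}-{i,j}. cntS {i,j,k}) = 2"
proof -
  define S where "S = {a\<in>A. i \<in> T a \<and> j \<in> T a}"
  have S1: "S = N (bi i) \<inter> N (bi j)"
  proof
    show "S \<subseteq> N (bi i) \<inter> N (bi j)" unfolding S_def using memT ij by blast
    show "N (bi i) \<inter> N (bi j) \<subseteq> S"
    proof
      fix a assume "a \<in> N (bi i) \<inter> N (bi j)"
      moreover then have "a \<in> A" using nbB[OF bi_in[OF ij(2)]] by blast
      ultimately show "a \<in> S" unfolding S_def using memT ij by blast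
    qed
  qed
  have "bi i \<noteq> bi j" using beta_bi ij by metis
  then have cS: "card S = 2" unfolding S1 using lam2[OF bi_in[OF ij(2)] bi_in[OF ij(3)]] lam_def by simp
  have S2: "S = (\<Union>k\<in>{0..<6}-{i,j}. {a\<in>A. T a = {i,j,k}})"
  proof
    show "S \<subseteq> (\<Union>k\<in>{0..<6}-{i,j}. {a\<in>A. T a = {i,j,k}})"
    proof
      fix a assume "a \<in> S"
      then have a: "a \<in> A" "i \<in> T a" "j \<in> T a" unfolding S_def by auto
      have fin: "finite (T a)" using T_sub[OF a(1)] finite_subset by blast
      have "card (T a - {i,j}) = 1"
        using card_Diff_subset[of "{i,j}" "T a"] a card_T[OF a(1)] ij(1) fin by simp
      then obtain k where k: "T a - {i,j} = {k}" by (meson card_1_singletonE)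
      have "k \<in> {0..<6} - {i,j}" using k T_sub[OF a(1)] by blast
      moreover have "T a = {i,j,k}" using k a(2,3) by blast
      ultimately show "a \<in> (\<Union>k\<in>{0..<6}-{i,j}. {a\<in>A. T a = {i,j,k}})" using a(1) by blast
    qed
    show "(\<Union>k\<in>{0..<6}-{i,j}. {a\<in>A. T a = {i,j,k}}) \<subseteq> S" unfolding S_def by blast
  qed
  have "card S = (\<Sum>k\<in>{0..<6}-{i,j}. card {a\<in>A. T a = {i,j,k}})"
    unfolding S2
  proof (rule card_UN_disjoint)
    show "finite ({0..<6::nat} - {i, j})" by simp
    show "\<forall>k\<in>{0..<6} - {i, j}. finite {a \<in> A. T a = {i, j, k}}" using finA by simp
    show "\<forall>k\<in>{0..<6} - {i, j}. \<forall>k'\<in>{0..<6} - {i, j}. k \<noteq> k' \<longrightarrow>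
        {a \<in> A. T a = {i, j, k}} \<inter> {a \<in> A. T a = {i, j, k'}} = {}"
    proof (intro ballI impI)
      fix k k' assume "k \<in> {0..<6} - {i, j}" "k' \<in> {0..<6} - {i, j}" "k \<noteq> k'"
      then have "{i,j,k} \<noteq> {i,j,k'}" by auto
      then show "{a \<in> A. T a = {i, j, k}} \<inter> {a \<in> A. T a = {i, j, k'}} = {}" by auto
    qed
  qed
  then show ?thesis using cS unfolding cntS_def by simp
qed

lemma design_case:
  assumes pi: "bij_betw pi {0..<6} {0..<6}"
    and C: "\<And>i j k. i < j \<Longrightarrow> j < k \<Longrightarrow> k < 6 \<Longrightarrow> cntS {i,j,k} \<le> 1 \<and> (cntS {i,j,k} \<noteq> 0 \<longrightarrow> {i,j,k} \<in> D)"
    and Dmap: "\<forall>t\<in>D. pi ` t \<in> Hblk ` {6..<16}"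
  shows "graph_iso V E H610_V H610_E"
proof -
  have injpi: "inj_on pi {0..<6}" using pi bij_betw_imp_inj_on by blast
  have Tform: "\<exists>i j k. i < j \<and> j < k \<and> k < 6 \<and> T a = {i,j,k}" if a: "a \<in> A" for a
    using sorted3[OF T_sub[OF a] card_T[OF a]] .
  have Dsub: "T a \<in> D" if a: "a \<in> A" for a
  proof -
    obtain i j k where ijk: "i < j" "j < k" "k < 6" "T a = {i,j,k}" using Tform[OF a] by blast
    have "a \<in> {a\<in>A. T a = {i,j,k}}" using a ijk by simp
    then have "cntS {i,j,k} \<noteq> 0" unfolding cntS_def using finA by auto
    then show ?thesis using C[OF ijk(1-3)] ijk(4) by simp
  qed
  have injT: "inj_on T A"
  proof (rule inj_onI)
    fix a a' assume a: "a \<in> A" and a': "a' \<in> A" and eq: "T a = T a'"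
    obtain i j k where ijk: "i < j" "j < k" "k < 6" "T a = {i,j,k}" using Tform[OF a] by blast
    have le: "card {a\<in>A. T a = {i,j,k}} \<le> 1" using C[OF ijk(1-3)] unfolding cntS_def by simp
    have "a \<in> {a\<in>A. T a = {i,j,k}}" "a' \<in> {a\<in>A. T a = {i,j,k}}" using a a' ijk eq by auto
    then show "a = a'" using le finA card_le_Suc0_iff_eq[of "{a\<in>A. T a = {i,j,k}}"] by auto
  qed
  define psi where "psi a = inv_into {6..<16} Hblk (pi ` T a)" for a
  have psi_in: "psi a \<in> {6..<16}" and psi_H: "Hblk (psi a) = pi ` T a" if a: "a \<in> A" for a
  proof -
    have m: "pi ` T a \<in> Hblk ` {6..<16}" using Dmap Dsub[OF a] by blast
    show "psi a \<in> {6..<16}" unfolding psi_def using inv_into_into[OF m] .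
    show "Hblk (psi a) = pi ` T a" unfolding psi_def using f_inv_into_f[OF m] .
  qed
  have injpsi: "inj_on psi A"
  proof (rule inj_onI)
    fix a a' assume a: "a \<in> A" and a': "a' \<in> A" and eq: "psi a = psi a'"
    then have "pi ` T a = pi ` T a'" using psi_H by metis
    then have "T a = T a'" using inj_on_image_eq_iff[OF injpi T_sub[OF a] T_sub[OF a']] by simp
    then show "a = a'" using injT a a' inj_onD by metis
  qed
  have "psi ` A \<subseteq> {6..<16}" using psi_in by blast
  moreover have "card (psi ` A) = card {6..<16::nat}" using card_image[OF injpsi] hA by simp
  ultimately have "psi ` A = {6..<16}" using card_subset_eq by (metis finite_atLeastLessThan)
  then have bpsi: "bij_betw psi A {6..<16}" using injpsi unfolding bij_betw_def by blast
  have bpb: "bij_betw (pi \<circ> beta) B {0..<6}" using bij_betw_trans[OF bij pi] .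
  define phi where "phi x = (if x \<in> B then (pi \<circ> beta) x else psi x)" for x
  have "bij_betw phi (B \<union> A) ({0..<6} \<union> {6..<16})"
    unfolding phi_def by (rule bij_betw_disjoint_Un[OF bpb bpsi]) (use disj in auto)
  moreover have "{0..<6} \<union> {6..<16} = H610_V" unfolding H610_V_def by auto
  moreover have "B \<union> A = V" using VAB by blast
  ultimately have bphi: "bij_betw phi V H610_V" by simp
  have phiB: "phi x = pi (beta x)" "phi x < 6" if "x \<in> B" for x
    using that bpb bij_betw_apply unfolding phi_def by fastforce+
  have phiA: "phi x = psi x" "6 \<le> phi x" if "x \<in> A" for x
  proof -
    have "x \<notin> B" using that disj by blast
    then show "phi x = psi x" unfolding phi_def by simp
    then show "6 \<le> phi x" using psi_in[OF that] by simp
  qed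
  have key: "E u v \<longleftrightarrow> H610_E (pi (beta u)) (psi v)" if u: "u \<in> B" and v: "v \<in> A" for u v
  proof -
    have uV: "u \<in> V" using u VAB by blast
    have "E u v \<longleftrightarrow> u \<in> N v" using N_iff Esym uV by blast
    also have "\<dots> \<longleftrightarrow> beta u \<in> T v" using memT_B[OF v u] by simp
    also have "\<dots> \<longleftrightarrow> pi (beta u) \<in> pi ` T v"
      using inj_on_image_mem_iff[OF injpi _ T_sub[OF v], of "beta u"] beta_lt[OF u] by simp
    also have "\<dots> \<longleftrightarrow> pi (beta u) \<in> Hblk (psi v)" using psi_H[OF v] by simp
    also have "\<dots> \<longleftrightarrow> H610_E (pi (beta u)) (psi v)"
      using HE_lo_hi[of "pi (beta u)" "psi v"] phiB[OF u] phiA[OF v] by simp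
    finally show ?thesis .
  qed
  have adj: "E u v \<longleftrightarrow> H610_E (phi u) (phi v)" if H: "u \<in> V" "v \<in> V" for u v
  proof -
    have uAB: "u \<in> A \<or> u \<in> B" and vAB: "v \<in> A \<or> v \<in> B" using H VAB by auto
    show ?thesis
    proof (cases "u \<in> A")
      case uA: True
      show ?thesis
      proof (cases "v \<in> A")
        case True
        then have "\<not> E u v" using uA eAB disj by blast
        then show ?thesis using HE_hi_hi phiA[OF uA] phiA[OF True] by simp
      next
        case False
        then have vB: "v \<in> B" using vAB by blast
        have "E u v \<longleftrightarrow> E v u" using Esym by blast
        also have "\<dots> \<longleftrightarrow> H610_E (pi (beta v)) (psi u)" using key[OF vB uA] .
        also have "\<dots> \<longleftrightarrow> H610_E (psi u) (pi (beta v))"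
          using HE_lo_hi HE_hi_lo phiB[OF vB] phiA[OF uA] by simp
        finally show ?thesis using phiB[OF vB] phiA[OF uA] by simp
      qed
    next
      case False
      then have uB: "u \<in> B" using uAB by blast
      show ?thesis
      proof (cases "v \<in> A")
        case True
        then show ?thesis using key[OF uB True] phiB[OF uB] phiA[OF True] by simp
      next
        case False
        then have vB: "v \<in> B" using vAB by blast
        then have "\<not> E u v" using uB eAB disj by blast
        then show ?thesis using HE_lo_lo phiB[OF uB] phiB[OF vB] by simp
      qed
    qed
  qed
  show ?thesis unfolding graph_iso_def using bphi adj by blast
qed

end

context hcase_lab begin

lemma H_iso_lab: "graph_iso V E H610_V H610_E"
proof -
  have s6: "{0..<6::nat} = {0,1,2,3,4,5}" by auto
  have "{0..<6::nat} - {0,1} = {2,3,4,5}" by auto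
  then have eq01: "cntS {0,1,2} + cntS {0,1,3} + cntS {0,1,4} + cntS {0,1,5} = 2" using pair[of 0 1] by (simp add: insert_commute)
  have "{0..<6::nat} - {0,2} = {1,3,4,5}" by auto
  then have eq02: "cntS {0,1,2} + cntS {0,2,3} + cntS {0,2,4} + cntS {0,2,5} = 2" using pair[of 0 2] by (simp add: insert_commute)
  have "{0..<6::nat} - {0,3} = {1,2,4,5}" by auto
  then have eq03: "cntS {0,1,3} + cntS {0,2,3} + cntS {0,3,4} + cntS {0,3,5} = 2" using pair[of 0 3] by (simp add: insert_commute)
  have "{0..<6::nat} - {0,4} = {1,2,3,5}" by auto
  then have eq04: "cntS {0,1,4} + cntS {0,2,4} + cntS {0,3,4} + cntS {0,4,5} = 2" using pair[of 0 4] by (simp add: insert_commute)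
  have "{0..<6::nat} - {0,5} = {1,2,3,4}" by auto
  then have eq05: "cntS {0,1,5} + cntS {0,2,5} + cntS {0,3,5} + cntS {0,4,5} = 2" using pair[of 0 5] by (simp add: insert_commute)
  have "{0..<6::nat} - {1,2} = {0,3,4,5}" by auto
  then have eq12: "cntS {0,1,2} + cntS {1,2,3} + cntS {1,2,4} + cntS {1,2,5} = 2" using pair[of 1 2] by (simp add: insert_commute)
  have "{0..<6::nat} - {1,3} = {0,2,4,5}" by auto
  then have eq13: "cntS {0,1,3} + cntS {1,2,3} + cntS {1,3,4} + cntS {1,3,5} = 2" using pair[of 1 3] by (simp add: insert_commute)
  have "{0..<6::nat} - {1,4} = {0,2,3,5}" by auto
  then have eq14: "cntS {0,1,4} + cntS {1,2,4} + cntS {1,3,4} + cntS {1,4,5} = 2" using pair[of 1 4] by (simp add: insert_commute)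
  have "{0..<6::nat} - {1,5} = {0,2,3,4}" by auto
  then have eq15: "cntS {0,1,5} + cntS {1,2,5} + cntS {1,3,5} + cntS {1,4,5} = 2" using pair[of 1 5] by (simp add: insert_commute)
  have "{0..<6::nat} - {2,3} = {0,1,4,5}" by auto
  then have eq23: "cntS {0,2,3} + cntS {1,2,3} + cntS {2,3,4} + cntS {2,3,5} = 2" using pair[of 2 3] by (simp add: insert_commute)
  have "{0..<6::nat} - {2,4} = {0,1,3,5}" by auto
  then have eq24: "cntS {0,2,4} + cntS {1,2,4} + cntS {2,3,4} + cntS {2,4,5} = 2" using pair[of 2 4] by (simp add: insert_commute)
  have "{0..<6::nat} - {2,5} = {0,1,3,4}" by auto
  then have eq25: "cntS {0,2,5} + cntS {1,2,5} + cntS {2,3,5} + cntS {2,4,5} = 2" using pair[of 2 5] by (simp add: insert_commute)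
  have "{0..<6::nat} - {3,4} = {0,1,2,5}" by auto
  then have eq34: "cntS {0,3,4} + cntS {1,3,4} + cntS {2,3,4} + cntS {3,4,5} = 2" using pair[of 3 4] by (simp add: insert_commute)
  have "{0..<6::nat} - {3,5} = {0,1,2,4}" by auto
  then have eq35: "cntS {0,3,5} + cntS {1,3,5} + cntS {2,3,5} + cntS {3,4,5} = 2" using pair[of 3 5] by (simp add: insert_commute)
  have "{0..<6::nat} - {4,5} = {0,1,2,3}" by auto
  then have eq45: "cntS {0,4,5} + cntS {1,4,5} + cntS {2,4,5} + cntS {3,4,5} = 2" using pair[of 4 5] by (simp add: insert_commute)
  have cases: "(cntS {0,1,2} = 0 \<and> cntS {0,1,3} = 0 \<and> cntS {0,1,4} = 1 \<and> cntS {0,1,5} = 1 \<and> cntS {0,2,3} = 1 \<and> cntS {0,2,4} = 0 \<and> cntS {0,2,5} = 1 \<and> cntS {0,3,4} = 1 \<and> cntS {0,3,5} = 0 \<and> cntS {0,4,5} = 0 \<and> cntS {1,2,3} = 1 \<and> cntS {1,2,4} = 1 \<and> cntS {1,2,5} = 0 \<and> cntS {1,3,4} = 0 \<and> cntS {1,3,5} = 1 \<and> cntS {1,4,5} = 0 \<and> cntS {2,3,4} = 0 \<and> cntS {2,3,5} = 0 \<and> cntS {2,4,5} = 1 \<and> cntS {3,4,5} = 1)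
   \<or> (cntS {0,1,2} = 0 \<and> cntS {0,1,3} = 0 \<and> cntS {0,1,4} = 1 \<and> cntS {0,1,5} = 1 \<and> cntS {0,2,3} = 1 \<and> cntS {0,2,4} = 1 \<and> cntS {0,2,5} = 0 \<and> cntS {0,3,4} = 0 \<and> cntS {0,3,5} = 1 \<and> cntS {0,4,5} = 0 \<and> cntS {1,2,3} = 1 \<and> cntS {1,2,4} = 0 \<and> cntS {1,2,5} = 1 \<and> cntS {1,3,4} = 1 \<and> cntS {1,3,5} = 0 \<and> cntS {1,4,5} = 0 \<and> cntS {2,3,4} = 0 \<and> cntS {2,3,5} = 0 \<and> cntS {2,4,5} = 1 \<and> cntS {3,4,5} = 1)
   \<or> (cntS {0,1,2} = 0 \<and> cntS {0,1,3} = 1 \<and> cntS {0,1,4} = 0 \<and> cntS {0,1,5} = 1 \<and> cntS {0,2,3} = 0 \<and> cntS {0,2,4} = 1 \<and> cntS {0,2,5} = 1 \<and> cntS {0,3,4} = 1 \<and> cntS {0,3,5} = 0 \<and> cntS {0,4,5} = 0 \<and> cntS {1,2,3} = 1 \<and> cntS {1,2,4} = 1 \<and> cntS {1,2,5} = 0 \<and> cntS {1,3,4} = 0 \<and> cntS {1,3,5} = 0 \<and> cntS {1,4,5} = 1 \<and> cntS {2,3,4} = 0 \<and> cntS {2,3,5} = 1 \<and> cntS {2,4,5} = 0 \<and> cntS {3,4,5} = 1)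
   \<or> (cntS {0,1,2} = 0 \<and> cntS {0,1,3} = 1 \<and> cntS {0,1,4} = 0 \<and> cntS {0,1,5} = 1 \<and> cntS {0,2,3} = 1 \<and> cntS {0,2,4} = 1 \<and> cntS {0,2,5} = 0 \<and> cntS {0,3,4} = 0 \<and> cntS {0,3,5} = 0 \<and> cntS {0,4,5} = 1 \<and> cntS {1,2,3} = 0 \<and> cntS {1,2,4} = 1 \<and> cntS {1,2,5} = 1 \<and> cntS {1,3,4} = 1 \<and> cntS {1,3,5} = 0 \<and> cntS {1,4,5} = 0 \<and> cntS {2,3,4} = 0 \<and> cntS {2,3,5} = 1 \<and> cntS {2,4,5} = 0 \<and> cntS {3,4,5} = 1)
   \<or> (cntS {0,1,2} = 0 \<and> cntS {0,1,3} = 1 \<and> cntS {0,1,4} = 1 \<and> cntS {0,1,5} = 0 \<and> cntS {0,2,3} = 0 \<and> cntS {0,2,4} = 1 \<and> cntS {0,2,5} = 1 \<and> cntS {0,3,4} = 0 \<and> cntS {0,3,5} = 1 \<and> cntS {0,4,5} = 0 \<and> cntS {1,2,3} = 1 \<and> cntS {1,2,4} = 0 \<and> cntS {1,2,5} = 1 \<and> cntS {1,3,4} = 0 \<and> cntS {1,3,5} = 0 \<and> cntS {1,4,5} = 1 \<and> cntS {2,3,4} = 1 \<and> cntS {2,3,5} = 0 \<and> cntS {2,4,5} = 0 \<and> cntS {3,4,5} = 1)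
   \<or> (cntS {0,1,2} = 0 \<and> cntS {0,1,3} = 1 \<and> cntS {0,1,4} = 1 \<and> cntS {0,1,5} = 0 \<and> cntS {0,2,3} = 1 \<and> cntS {0,2,4} = 0 \<and> cntS {0,2,5} = 1 \<and> cntS {0,3,4} = 0 \<and> cntS {0,3,5} = 0 \<and> cntS {0,4,5} = 1 \<and> cntS {1,2,3} = 0 \<and> cntS {1,2,4} = 1 \<and> cntS {1,2,5} = 1 \<and> cntS {1,3,4} = 0 \<and> cntS {1,3,5} = 1 \<and> cntS {1,4,5} = 0 \<and> cntS {2,3,4} = 1 \<and> cntS {2,3,5} = 0 \<and> cntS {2,4,5} = 0 \<and> cntS {3,4,5} = 1)
   \<or> (cntS {0,1,2} = 1 \<and> cntS {0,1,3} = 0 \<and> cntS {0,1,4} = 0 \<and> cntS {0,1,5} = 1 \<and> cntS {0,2,3} = 0 \<and> cntS {0,2,4} = 1 \<and> cntS {0,2,5} = 0 \<and> cntS {0,3,4} = 1 \<and> cntS {0,3,5} = 1 \<and> cntS {0,4,5} = 0 \<and> cntS {1,2,3} = 1 \<and> cntS {1,2,4} = 0 \<and> cntS {1,2,5} = 0 \<and> cntS {1,3,4} = 1 \<and> cntS {1,3,5} = 0 \<and> cntS {1,4,5} = 1 \<and> cntS {2,3,4} = 0 \<and> cntS {2,3,5} = 1 \<and> cntS {2,4,5} = 1 \<and> cntS {3,4,5} = 0)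
   \<or> (cntS {0,1,2} = 1 \<and> cntS {0,1,3} = 0 \<and> cntS {0,1,4} = 0 \<and> cntS {0,1,5} = 1 \<and> cntS {0,2,3} = 1 \<and> cntS {0,2,4} = 0 \<and> cntS {0,2,5} = 0 \<and> cntS {0,3,4} = 1 \<and> cntS {0,3,5} = 0 \<and> cntS {0,4,5} = 1 \<and> cntS {1,2,3} = 0 \<and> cntS {1,2,4} = 1 \<and> cntS {1,2,5} = 0 \<and> cntS {1,3,4} = 1 \<and> cntS {1,3,5} = 1 \<and> cntS {1,4,5} = 0 \<and> cntS {2,3,4} = 0 \<and> cntS {2,3,5} = 1 \<and> cntS {2,4,5} = 1 \<and> cntS {3,4,5} = 0)
   \<or> (cntS {0,1,2} = 1 \<and> cntS {0,1,3} = 0 \<and> cntS {0,1,4} = 1 \<and> cntS {0,1,5} = 0 \<and> cntS {0,2,3} = 0 \<and> cntS {0,2,4} = 0 \<and> cntS {0,2,5} = 1 \<and> cntS {0,3,4} = 1 \<and> cntS {0,3,5} = 1 \<and> cntS {0,4,5} = 0 \<and> cntS {1,2,3} = 1 \<and> cntS {1,2,4} = 0 \<and> cntS {1,2,5} = 0 \<and> cntS {1,3,4} = 0 \<and> cntS {1,3,5} = 1 \<and> cntS {1,4,5} = 1 \<and> cntS {2,3,4} = 1 \<and> cntS {2,3,5} = 0 \<and> cntS {2,4,5} = 1 \<and> cntS {3,4,5} = 0)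
   \<or> (cntS {0,1,2} = 1 \<and> cntS {0,1,3} = 0 \<and> cntS {0,1,4} = 1 \<and> cntS {0,1,5} = 0 \<and> cntS {0,2,3} = 1 \<and> cntS {0,2,4} = 0 \<and> cntS {0,2,5} = 0 \<and> cntS {0,3,4} = 0 \<and> cntS {0,3,5} = 1 \<and> cntS {0,4,5} = 1 \<and> cntS {1,2,3} = 0 \<and> cntS {1,2,4} = 0 \<and> cntS {1,2,5} = 1 \<and> cntS {1,3,4} = 1 \<and> cntS {1,3,5} = 1 \<and> cntS {1,4,5} = 0 \<and> cntS {2,3,4} = 1 \<and> cntS {2,3,5} = 0 \<and> cntS {2,4,5} = 1 \<and> cntS {3,4,5} = 0)
   \<or> (cntS {0,1,2} = 1 \<and> cntS {0,1,3} = 1 \<and> cntS {0,1,4} = 0 \<and> cntS {0,1,5} = 0 \<and> cntS {0,2,3} = 0 \<and> cntS {0,2,4} = 0 \<and> cntS {0,2,5} = 1 \<and> cntS {0,3,4} = 1 \<and> cntS {0,3,5} = 0 \<and> cntS {0,4,5} = 1 \<and> cntS {1,2,3} = 0 \<and> cntS {1,2,4} = 1 \<and> cntS {1,2,5} = 0 \<and> cntS {1,3,4} = 0 \<and> cntS {1,3,5} = 1 \<and> cntS {1,4,5} = 1 \<and> cntS {2,3,4} = 1 \<and> cntS {2,3,5} = 1 \<and> cntS {2,4,5} = 0 \<and> cntS {3,4,5} = 0)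
   \<or> (cntS {0,1,2} = 1 \<and> cntS {0,1,3} = 1 \<and> cntS {0,1,4} = 0 \<and> cntS {0,1,5} = 0 \<and> cntS {0,2,3} = 0 \<and> cntS {0,2,4} = 1 \<and> cntS {0,2,5} = 0 \<and> cntS {0,3,4} = 0 \<and> cntS {0,3,5} = 1 \<and> cntS {0,4,5} = 1 \<and> cntS {1,2,3} = 0 \<and> cntS {1,2,4} = 0 \<and> cntS {1,2,5} = 1 \<and> cntS {1,3,4} = 1 \<and> cntS {1,3,5} = 0 \<and> cntS {1,4,5} = 1 \<and> cntS {2,3,4} = 1 \<and> cntS {2,3,5} = 1 \<and> cntS {2,4,5} = 0 \<and> cntS {3,4,5} = 0)" using design_arith[of "cntS {0,1,2}" "cntS {0,1,3}" "cntS {0,1,4}" "cntS {0,1,5}" "cntS {0,2,3}" "cntS {0,2,4}" "cntS {0,2,5}" "cntS {0,3,4}" "cntS {0,3,5}" "cntS {0,4,5}" "cntS {1,2,3}" "cntS {1,2,4}" "cntS {1,2,5}" "cntS {1,3,4}" "cntS {1,3,5}" "cntS {1,4,5}" "cntS {2,3,4}" "cntS {2,3,5}" "cntS {2,4,5}" "cntS {3,4,5}", OF eq01 eq02 eq03 eq04 eq05 eq12 eq13 eq14 eq15 eq23 eq24 eq25 eq34 eq35 eq45] .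
  show ?thesis using cases
  proof (elim disjE)
    assume c: "cntS {0,1,2} = 0 \<and> cntS {0,1,3} = 0 \<and> cntS {0,1,4} = 1 \<and> cntS {0,1,5} = 1 \<and> cntS {0,2,3} = 1 \<and> cntS {0,2,4} = 0 \<and> cntS {0,2,5} = 1 \<and> cntS {0,3,4} = 1 \<and> cntS {0,3,5} = 0 \<and> cntS {0,4,5} = 0 \<and> cntS {1,2,3} = 1 \<and> cntS {1,2,4} = 1 \<and> cntS {1,2,5} = 0 \<and> cntS {1,3,4} = 0 \<and> cntS {1,3,5} = 1 \<and> cntS {1,4,5} = 0 \<and> cntS {2,3,4} = 0 \<and> cntS {2,3,5} = 0 \<and> cntS {2,4,5} = 1 \<and> cntS {3,4,5} = 1"
    show ?thesis
    proof (rule design_case[where pi = "(\<lambda>i::nat. if i = 0 then 0 else if i = 1 then 1 else if i = 2 then 2 else if i = 3 then 5 else if i = 4 then 4 else (3::nat))" and D = "{{0,1,4}, {0,1,5}, {0,2,3}, {0,2,5}, {0,3,4}, {1,2,3}, {1,2,4}, {1,3,5}, {2,4,5}, {3,4,5}}"])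
      show "bij_betw (\<lambda>i::nat. if i = 0 then 0 else if i = 1 then 1 else if i = 2 then 2 else if i = 3 then 5 else if i = 4 then 4 else (3::nat)) {0..<6} {0..<6}" unfolding bij_betw_def s6 by (simp add: insert_commute)
      show "\<forall>t\<in>{{0,1,4}, {0,1,5}, {0,2,3}, {0,2,5}, {0,3,4}, {1,2,3}, {1,2,4}, {1,3,5}, {2,4,5}, {3,4,5}}. (\<lambda>i::nat. if i = 0 then 0 else if i = 1 then 1 else if i = 2 then 2 else if i = 3 then 5 else if i = 4 then 4 else (3::nat)) ` t \<in> Hblk ` {6..<16}" unfolding Hblk_img by (simp add: insert_commute)
      fix i j k assume "i < j" "j < k" "k < (6::nat)"
      then show "cntS {i,j,k} \<le> 1 \<and> (cntS {i,j,k} \<noteq> 0 \<longrightarrow> {i,j,k} \<in> {{0,1,4}, {0,1,5}, {0,2,3}, {0,2,5}, {0,3,4}, {1,2,3}, {1,2,4}, {1,3,5}, {2,4,5}, {3,4,5}})"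
        by (rule all20[where P = "\<lambda>i j k. cntS {i,j,k} \<le> 1 \<and> (cntS {i,j,k} \<noteq> 0 \<longrightarrow> {i,j,k} \<in> {{0,1,4}, {0,1,5}, {0,2,3}, {0,2,5}, {0,3,4}, {1,2,3}, {1,2,4}, {1,3,5}, {2,4,5}, {3,4,5}})"]) (simp_all only: c, simp_all)
    qed
  next
    assume c: "cntS {0,1,2} = 0 \<and> cntS {0,1,3} = 0 \<and> cntS {0,1,4} = 1 \<and> cntS {0,1,5} = 1 \<and> cntS {0,2,3} = 1 \<and> cntS {0,2,4} = 1 \<and> cntS {0,2,5} = 0 \<and> cntS {0,3,4} = 0 \<and> cntS {0,3,5} = 1 \<and> cntS {0,4,5} = 0 \<and> cntS {1,2,3} = 1 \<and> cntS {1,2,4} = 0 \<and> cntS {1,2,5} = 1 \<and> cntS {1,3,4} = 1 \<and> cntS {1,3,5} = 0 \<and> cntS {1,4,5} = 0 \<and> cntS {2,3,4} = 0 \<and> cntS {2,3,5} = 0 \<and> cntS {2,4,5} = 1 \<and> cntS {3,4,5} = 1"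
    show ?thesis
    proof (rule design_case[where pi = "(\<lambda>i::nat. if i = 0 then 0 else if i = 1 then 1 else if i = 2 then 2 else if i = 3 then 5 else if i = 4 then 3 else (4::nat))" and D = "{{0,1,4}, {0,1,5}, {0,2,3}, {0,2,4}, {0,3,5}, {1,2,3}, {1,2,5}, {1,3,4}, {2,4,5}, {3,4,5}}"])
      show "bij_betw (\<lambda>i::nat. if i = 0 then 0 else if i = 1 then 1 else if i = 2 then 2 else if i = 3 then 5 else if i = 4 then 3 else (4::nat)) {0..<6} {0..<6}" unfolding bij_betw_def s6 by (simp add: insert_commute)
      show "\<forall>t\<in>{{0,1,4}, {0,1,5}, {0,2,3}, {0,2,4}, {0,3,5}, {1,2,3}, {1,2,5}, {1,3,4}, {2,4,5}, {3,4,5}}. (\<lambda>i::nat. if i = 0 then 0 else if i = 1 then 1 else if i = 2 then 2 else if i = 3 then 5 else if i = 4 then 3 else (4::nat)) ` t \<in> Hblk ` {6..<16}" unfolding Hblk_img by (simp add: insert_commute)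
      fix i j k assume "i < j" "j < k" "k < (6::nat)"
      then show "cntS {i,j,k} \<le> 1 \<and> (cntS {i,j,k} \<noteq> 0 \<longrightarrow> {i,j,k} \<in> {{0,1,4}, {0,1,5}, {0,2,3}, {0,2,4}, {0,3,5}, {1,2,3}, {1,2,5}, {1,3,4}, {2,4,5}, {3,4,5}})"
        by (rule all20[where P = "\<lambda>i j k. cntS {i,j,k} \<le> 1 \<and> (cntS {i,j,k} \<noteq> 0 \<longrightarrow> {i,j,k} \<in> {{0,1,4}, {0,1,5}, {0,2,3}, {0,2,4}, {0,3,5}, {1,2,3}, {1,2,5}, {1,3,4}, {2,4,5}, {3,4,5}})"]) (simp_all only: c, simp_all)
    qed
  next
    assume c: "cntS {0,1,2} = 0 \<and> cntS {0,1,3} = 1 \<and> cntS {0,1,4} = 0 \<and> cntS {0,1,5} = 1 \<and> cntS {0,2,3} = 0 \<and> cntS {0,2,4} = 1 \<and> cntS {0,2,5} = 1 \<and> cntS {0,3,4} = 1 \<and> cntS {0,3,5} = 0 \<and> cntS {0,4,5} = 0 \<and> cntS {1,2,3} = 1 \<and> cntS {1,2,4} = 1 \<and> cntS {1,2,5} = 0 \<and> cntS {1,3,4} = 0 \<and> cntS {1,3,5} = 0 \<and> cntS {1,4,5} = 1 \<and> cntS {2,3,4} = 0 \<and> cntS {2,3,5} = 1 \<and> cntS {2,4,5} = 0 \<and> cntS {3,4,5} = 1"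
    show ?thesis
    proof (rule design_case[where pi = "(\<lambda>i::nat. if i = 0 then 0 else if i = 1 then 1 else if i = 2 then 2 else if i = 3 then 4 else if i = 4 then 5 else (3::nat))" and D = "{{0,1,3}, {0,1,5}, {0,2,4}, {0,2,5}, {0,3,4}, {1,2,3}, {1,2,4}, {1,4,5}, {2,3,5}, {3,4,5}}"])
      show "bij_betw (\<lambda>i::nat. if i = 0 then 0 else if i = 1 then 1 else if i = 2 then 2 else if i = 3 then 4 else if i = 4 then 5 else (3::nat)) {0..<6} {0..<6}" unfolding bij_betw_def s6 by (simp add: insert_commute)
      show "\<forall>t\<in>{{0,1,3}, {0,1,5}, {0,2,4}, {0,2,5}, {0,3,4}, {1,2,3}, {1,2,4}, {1,4,5}, {2,3,5}, {3,4,5}}. (\<lambda>i::nat. if i = 0 then 0 else if i = 1 then 1 else if i = 2 then 2 else if i = 3 then 4 else if i = 4 then 5 else (3::nat)) ` t \<in> Hblk ` {6..<16}" unfolding Hblk_img by (simp add: insert_commute)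
      fix i j k assume "i < j" "j < k" "k < (6::nat)"
      then show "cntS {i,j,k} \<le> 1 \<and> (cntS {i,j,k} \<noteq> 0 \<longrightarrow> {i,j,k} \<in> {{0,1,3}, {0,1,5}, {0,2,4}, {0,2,5}, {0,3,4}, {1,2,3}, {1,2,4}, {1,4,5}, {2,3,5}, {3,4,5}})"
        by (rule all20[where P = "\<lambda>i j k. cntS {i,j,k} \<le> 1 \<and> (cntS {i,j,k} \<noteq> 0 \<longrightarrow> {i,j,k} \<in> {{0,1,3}, {0,1,5}, {0,2,4}, {0,2,5}, {0,3,4}, {1,2,3}, {1,2,4}, {1,4,5}, {2,3,5}, {3,4,5}})"]) (simp_all only: c, simp_all)
    qed
  next
    assume c: "cntS {0,1,2} = 0 \<and> cntS {0,1,3} = 1 \<and> cntS {0,1,4} = 0 \<and> cntS {0,1,5} = 1 \<and> cntS {0,2,3} = 1 \<and> cntS {0,2,4} = 1 \<and> cntS {0,2,5} = 0 \<and> cntS {0,3,4} = 0 \<and> cntS {0,3,5} = 0 \<and> cntS {0,4,5} = 1 \<and> cntS {1,2,3} = 0 \<and> cntS {1,2,4} = 1 \<and> cntS {1,2,5} = 1 \<and> cntS {1,3,4} = 1 \<and> cntS {1,3,5} = 0 \<and> cntS {1,4,5} = 0 \<and> cntS {2,3,4} = 0 \<and> cntS {2,3,5} = 1 \<and> cntS {2,4,5} = 0 \<and> cntS {3,4,5} = 1"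
    show ?thesis
    proof (rule design_case[where pi = "(\<lambda>i::nat. if i = 0 then 0 else if i = 1 then 1 else if i = 2 then 2 else if i = 3 then 3 else if i = 4 then 5 else (4::nat))" and D = "{{0,1,3}, {0,1,5}, {0,2,3}, {0,2,4}, {0,4,5}, {1,2,4}, {1,2,5}, {1,3,4}, {2,3,5}, {3,4,5}}"])
      show "bij_betw (\<lambda>i::nat. if i = 0 then 0 else if i = 1 then 1 else if i = 2 then 2 else if i = 3 then 3 else if i = 4 then 5 else (4::nat)) {0..<6} {0..<6}" unfolding bij_betw_def s6 by (simp add: insert_commute)
      show "\<forall>t\<in>{{0,1,3}, {0,1,5}, {0,2,3}, {0,2,4}, {0,4,5}, {1,2,4}, {1,2,5}, {1,3,4}, {2,3,5}, {3,4,5}}. (\<lambda>i::nat. if i = 0 then 0 else if i = 1 then 1 else if i = 2 then 2 else if i = 3 then 3 else if i = 4 then 5 else (4::nat)) ` t \<in> Hblk ` {6..<16}" unfolding Hblk_img by (simp add: insert_commute)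
      fix i j k assume "i < j" "j < k" "k < (6::nat)"
      then show "cntS {i,j,k} \<le> 1 \<and> (cntS {i,j,k} \<noteq> 0 \<longrightarrow> {i,j,k} \<in> {{0,1,3}, {0,1,5}, {0,2,3}, {0,2,4}, {0,4,5}, {1,2,4}, {1,2,5}, {1,3,4}, {2,3,5}, {3,4,5}})"
        by (rule all20[where P = "\<lambda>i j k. cntS {i,j,k} \<le> 1 \<and> (cntS {i,j,k} \<noteq> 0 \<longrightarrow> {i,j,k} \<in> {{0,1,3}, {0,1,5}, {0,2,3}, {0,2,4}, {0,4,5}, {1,2,4}, {1,2,5}, {1,3,4}, {2,3,5}, {3,4,5}})"]) (simp_all only: c, simp_all)
    qed
  next
    assume c: "cntS {0,1,2} = 0 \<and> cntS {0,1,3} = 1 \<and> cntS {0,1,4} = 1 \<and> cntS {0,1,5} = 0 \<and> cntS {0,2,3} = 0 \<and> cntS {0,2,4} = 1 \<and> cntS {0,2,5} = 1 \<and> cntS {0,3,4} = 0 \<and> cntS {0,3,5} = 1 \<and> cntS {0,4,5} = 0 \<and> cntS {1,2,3} = 1 \<and> cntS {1,2,4} = 0 \<and> cntS {1,2,5} = 1 \<and> cntS {1,3,4} = 0 \<and> cntS {1,3,5} = 0 \<and> cntS {1,4,5} = 1 \<and> cntS {2,3,4} = 1 \<and> cntS {2,3,5} = 0 \<and> cntS {2,4,5} = 0 \<and> cntS {3,4,5} = 1"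
    show ?thesis
    proof (rule design_case[where pi = "(\<lambda>i::nat. if i = 0 then 0 else if i = 1 then 1 else if i = 2 then 2 else if i = 3 then 4 else if i = 4 then 3 else (5::nat))" and D = "{{0,1,3}, {0,1,4}, {0,2,4}, {0,2,5}, {0,3,5}, {1,2,3}, {1,2,5}, {1,4,5}, {2,3,4}, {3,4,5}}"])
      show "bij_betw (\<lambda>i::nat. if i = 0 then 0 else if i = 1 then 1 else if i = 2 then 2 else if i = 3 then 4 else if i = 4 then 3 else (5::nat)) {0..<6} {0..<6}" unfolding bij_betw_def s6 by (simp add: insert_commute)
      show "\<forall>t\<in>{{0,1,3}, {0,1,4}, {0,2,4}, {0,2,5}, {0,3,5}, {1,2,3}, {1,2,5}, {1,4,5}, {2,3,4}, {3,4,5}}. (\<lambda>i::nat. if i = 0 then 0 else if i = 1 then 1 else if i = 2 then 2 else if i = 3 then 4 else if i = 4 then 3 else (5::nat)) ` t \<in> Hblk ` {6..<16}" unfolding Hblk_img by (simp add: insert_commute)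
      fix i j k assume "i < j" "j < k" "k < (6::nat)"
      then show "cntS {i,j,k} \<le> 1 \<and> (cntS {i,j,k} \<noteq> 0 \<longrightarrow> {i,j,k} \<in> {{0,1,3}, {0,1,4}, {0,2,4}, {0,2,5}, {0,3,5}, {1,2,3}, {1,2,5}, {1,4,5}, {2,3,4}, {3,4,5}})"
        by (rule all20[where P = "\<lambda>i j k. cntS {i,j,k} \<le> 1 \<and> (cntS {i,j,k} \<noteq> 0 \<longrightarrow> {i,j,k} \<in> {{0,1,3}, {0,1,4}, {0,2,4}, {0,2,5}, {0,3,5}, {1,2,3}, {1,2,5}, {1,4,5}, {2,3,4}, {3,4,5}})"]) (simp_all only: c, simp_all)
    qed
  next
    assume c: "cntS {0,1,2} = 0 \<and> cntS {0,1,3} = 1 \<and> cntS {0,1,4} = 1 \<and> cntS {0,1,5} = 0 \<and> cntS {0,2,3} = 1 \<and> cntS {0,2,4} = 0 \<and> cntS {0,2,5} = 1 \<and> cntS {0,3,4} = 0 \<and> cntS {0,3,5} = 0 \<and> cntS {0,4,5} = 1 \<and> cntS {1,2,3} = 0 \<and> cntS {1,2,4} = 1 \<and> cntS {1,2,5} = 1 \<and> cntS {1,3,4} = 0 \<and> cntS {1,3,5} = 1 \<and> cntS {1,4,5} = 0 \<and> cntS {2,3,4} = 1 \<and> cntS {2,3,5} = 0 \<and> cntS {2,4,5} = 0 \<and> cntS {3,4,5} = 1"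
    show ?thesis
    proof (rule design_case[where pi = "(\<lambda>i::nat. if i = 0 then 0 else if i = 1 then 1 else if i = 2 then 2 else if i = 3 then 3 else if i = 4 then 4 else (5::nat))" and D = "{{0,1,3}, {0,1,4}, {0,2,3}, {0,2,5}, {0,4,5}, {1,2,4}, {1,2,5}, {1,3,5}, {2,3,4}, {3,4,5}}"])
      show "bij_betw (\<lambda>i::nat. if i = 0 then 0 else if i = 1 then 1 else if i = 2 then 2 else if i = 3 then 3 else if i = 4 then 4 else (5::nat)) {0..<6} {0..<6}" unfolding bij_betw_def s6 by (simp add: insert_commute)
      show "\<forall>t\<in>{{0,1,3}, {0,1,4}, {0,2,3}, {0,2,5}, {0,4,5}, {1,2,4}, {1,2,5}, {1,3,5}, {2,3,4}, {3,4,5}}. (\<lambda>i::nat. if i = 0 then 0 else if i = 1 then 1 else if i = 2 then 2 else if i = 3 then 3 else if i = 4 then 4 else (5::nat)) ` t \<in> Hblk ` {6..<16}" unfolding Hblk_img by (simp add: insert_commute)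
      fix i j k assume "i < j" "j < k" "k < (6::nat)"
      then show "cntS {i,j,k} \<le> 1 \<and> (cntS {i,j,k} \<noteq> 0 \<longrightarrow> {i,j,k} \<in> {{0,1,3}, {0,1,4}, {0,2,3}, {0,2,5}, {0,4,5}, {1,2,4}, {1,2,5}, {1,3,5}, {2,3,4}, {3,4,5}})"
        by (rule all20[where P = "\<lambda>i j k. cntS {i,j,k} \<le> 1 \<and> (cntS {i,j,k} \<noteq> 0 \<longrightarrow> {i,j,k} \<in> {{0,1,3}, {0,1,4}, {0,2,3}, {0,2,5}, {0,4,5}, {1,2,4}, {1,2,5}, {1,3,5}, {2,3,4}, {3,4,5}})"]) (simp_all only: c, simp_all)
    qed
  next
    assume c: "cntS {0,1,2} = 1 \<and> cntS {0,1,3} = 0 \<and> cntS {0,1,4} = 0 \<and> cntS {0,1,5} = 1 \<and> cntS {0,2,3} = 0 \<and> cntS {0,2,4} = 1 \<and> cntS {0,2,5} = 0 \<and> cntS {0,3,4} = 1 \<and> cntS {0,3,5} = 1 \<and> cntS {0,4,5} = 0 \<and> cntS {1,2,3} = 1 \<and> cntS {1,2,4} = 0 \<and> cntS {1,2,5} = 0 \<and> cntS {1,3,4} = 1 \<and> cntS {1,3,5} = 0 \<and> cntS {1,4,5} = 1 \<and> cntS {2,3,4} = 0 \<and> cntS {2,3,5} = 1 \<and> cntS {2,4,5} = 1 \<and> cntS {3,4,5} = 0"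
    show ?thesis
    proof (rule design_case[where pi = "(\<lambda>i::nat. if i = 0 then 0 else if i = 1 then 1 else if i = 2 then 3 else if i = 3 then 5 else if i = 4 then 2 else (4::nat))" and D = "{{0,1,2}, {0,1,5}, {0,2,4}, {0,3,4}, {0,3,5}, {1,2,3}, {1,3,4}, {1,4,5}, {2,3,5}, {2,4,5}}"])
      show "bij_betw (\<lambda>i::nat. if i = 0 then 0 else if i = 1 then 1 else if i = 2 then 3 else if i = 3 then 5 else if i = 4 then 2 else (4::nat)) {0..<6} {0..<6}" unfolding bij_betw_def s6 by (simp add: insert_commute)
      show "\<forall>t\<in>{{0,1,2}, {0,1,5}, {0,2,4}, {0,3,4}, {0,3,5}, {1,2,3}, {1,3,4}, {1,4,5}, {2,3,5}, {2,4,5}}. (\<lambda>i::nat. if i = 0 then 0 else if i = 1 then 1 else if i = 2 then 3 else if i = 3 then 5 else if i = 4 then 2 else (4::nat)) ` t \<in> Hblk ` {6..<16}" unfolding Hblk_img by (simp add: insert_commute)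
      fix i j k assume "i < j" "j < k" "k < (6::nat)"
      then show "cntS {i,j,k} \<le> 1 \<and> (cntS {i,j,k} \<noteq> 0 \<longrightarrow> {i,j,k} \<in> {{0,1,2}, {0,1,5}, {0,2,4}, {0,3,4}, {0,3,5}, {1,2,3}, {1,3,4}, {1,4,5}, {2,3,5}, {2,4,5}})"
        by (rule all20[where P = "\<lambda>i j k. cntS {i,j,k} \<le> 1 \<and> (cntS {i,j,k} \<noteq> 0 \<longrightarrow> {i,j,k} \<in> {{0,1,2}, {0,1,5}, {0,2,4}, {0,3,4}, {0,3,5}, {1,2,3}, {1,3,4}, {1,4,5}, {2,3,5}, {2,4,5}})"]) (simp_all only: c, simp_all)
    qed
  next
    assume c: "cntS {0,1,2} = 1 \<and> cntS {0,1,3} = 0 \<and> cntS {0,1,4} = 0 \<and> cntS {0,1,5} = 1 \<and> cntS {0,2,3} = 1 \<and> cntS {0,2,4} = 0 \<and> cntS {0,2,5} = 0 \<and> cntS {0,3,4} = 1 \<and> cntS {0,3,5} = 0 \<and> cntS {0,4,5} = 1 \<and> cntS {1,2,3} = 0 \<and> cntS {1,2,4} = 1 \<and> cntS {1,2,5} = 0 \<and> cntS {1,3,4} = 1 \<and> cntS {1,3,5} = 1 \<and> cntS {1,4,5} = 0 \<and> cntS {2,3,4} = 0 \<and> cntS {2,3,5} = 1 \<and> cntS {2,4,5} = 1 \<and> cntS {3,4,5} = 0"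
    show ?thesis
    proof (rule design_case[where pi = "(\<lambda>i::nat. if i = 0 then 0 else if i = 1 then 1 else if i = 2 then 3 else if i = 3 then 2 else if i = 4 then 5 else (4::nat))" and D = "{{0,1,2}, {0,1,5}, {0,2,3}, {0,3,4}, {0,4,5}, {1,2,4}, {1,3,4}, {1,3,5}, {2,3,5}, {2,4,5}}"])
      show "bij_betw (\<lambda>i::nat. if i = 0 then 0 else if i = 1 then 1 else if i = 2 then 3 else if i = 3 then 2 else if i = 4 then 5 else (4::nat)) {0..<6} {0..<6}" unfolding bij_betw_def s6 by (simp add: insert_commute)
      show "\<forall>t\<in>{{0,1,2}, {0,1,5}, {0,2,3}, {0,3,4}, {0,4,5}, {1,2,4}, {1,3,4}, {1,3,5}, {2,3,5}, {2,4,5}}. (\<lambda>i::nat. if i = 0 then 0 else if i = 1 then 1 else if i = 2 then 3 else if i = 3 then 2 else if i = 4 then 5 else (4::nat)) ` t \<in> Hblk ` {6..<16}" unfolding Hblk_img by (simp add: insert_commute)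
      fix i j k assume "i < j" "j < k" "k < (6::nat)"
      then show "cntS {i,j,k} \<le> 1 \<and> (cntS {i,j,k} \<noteq> 0 \<longrightarrow> {i,j,k} \<in> {{0,1,2}, {0,1,5}, {0,2,3}, {0,3,4}, {0,4,5}, {1,2,4}, {1,3,4}, {1,3,5}, {2,3,5}, {2,4,5}})"
        by (rule all20[where P = "\<lambda>i j k. cntS {i,j,k} \<le> 1 \<and> (cntS {i,j,k} \<noteq> 0 \<longrightarrow> {i,j,k} \<in> {{0,1,2}, {0,1,5}, {0,2,3}, {0,3,4}, {0,4,5}, {1,2,4}, {1,3,4}, {1,3,5}, {2,3,5}, {2,4,5}})"]) (simp_all only: c, simp_all)
    qed
  next
    assume c: "cntS {0,1,2} = 1 \<and> cntS {0,1,3} = 0 \<and> cntS {0,1,4} = 1 \<and> cntS {0,1,5} = 0 \<and> cntS {0,2,3} = 0 \<and> cntS {0,2,4} = 0 \<and> cntS {0,2,5} = 1 \<and> cntS {0,3,4} = 1 \<and> cntS {0,3,5} = 1 \<and> cntS {0,4,5} = 0 \<and> cntS {1,2,3} = 1 \<and> cntS {1,2,4} = 0 \<and> cntS {1,2,5} = 0 \<and> cntS {1,3,4} = 0 \<and> cntS {1,3,5} = 1 \<and> cntS {1,4,5} = 1 \<and> cntS {2,3,4} = 1 \<and> cntS {2,3,5} = 0 \<and> cntS {2,4,5} = 1 \<and> cntS {3,4,5} = 0"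
    show ?thesis
    proof (rule design_case[where pi = "(\<lambda>i::nat. if i = 0 then 0 else if i = 1 then 1 else if i = 2 then 3 else if i = 3 then 5 else if i = 4 then 4 else (2::nat))" and D = "{{0,1,2}, {0,1,4}, {0,2,5}, {0,3,4}, {0,3,5}, {1,2,3}, {1,3,5}, {1,4,5}, {2,3,4}, {2,4,5}}"])
      show "bij_betw (\<lambda>i::nat. if i = 0 then 0 else if i = 1 then 1 else if i = 2 then 3 else if i = 3 then 5 else if i = 4 then 4 else (2::nat)) {0..<6} {0..<6}" unfolding bij_betw_def s6 by (simp add: insert_commute)
      show "\<forall>t\<in>{{0,1,2}, {0,1,4}, {0,2,5}, {0,3,4}, {0,3,5}, {1,2,3}, {1,3,5}, {1,4,5}, {2,3,4}, {2,4,5}}. (\<lambda>i::nat. if i = 0 then 0 else if i = 1 then 1 else if i = 2 then 3 else if i = 3 then 5 else if i = 4 then 4 else (2::nat)) ` t \<in> Hblk ` {6..<16}" unfolding Hblk_img by (simp add: insert_commute)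
      fix i j k assume "i < j" "j < k" "k < (6::nat)"
      then show "cntS {i,j,k} \<le> 1 \<and> (cntS {i,j,k} \<noteq> 0 \<longrightarrow> {i,j,k} \<in> {{0,1,2}, {0,1,4}, {0,2,5}, {0,3,4}, {0,3,5}, {1,2,3}, {1,3,5}, {1,4,5}, {2,3,4}, {2,4,5}})"
        by (rule all20[where P = "\<lambda>i j k. cntS {i,j,k} \<le> 1 \<and> (cntS {i,j,k} \<noteq> 0 \<longrightarrow> {i,j,k} \<in> {{0,1,2}, {0,1,4}, {0,2,5}, {0,3,4}, {0,3,5}, {1,2,3}, {1,3,5}, {1,4,5}, {2,3,4}, {2,4,5}})"]) (simp_all only: c, simp_all)
    qed
  next
    assume c: "cntS {0,1,2} = 1 \<and> cntS {0,1,3} = 0 \<and> cntS {0,1,4} = 1 \<and> cntS {0,1,5} = 0 \<and> cntS {0,2,3} = 1 \<and> cntS {0,2,4} = 0 \<and> cntS {0,2,5} = 0 \<and> cntS {0,3,4} = 0 \<and> cntS {0,3,5} = 1 \<and> cntS {0,4,5} = 1 \<and> cntS {1,2,3} = 0 \<and> cntS {1,2,4} = 0 \<and> cntS {1,2,5} = 1 \<and> cntS {1,3,4} = 1 \<and> cntS {1,3,5} = 1 \<and> cntS {1,4,5} = 0 \<and> cntS {2,3,4} = 1 \<and> cntS {2,3,5} = 0 \<and> cntS {2,4,5} = 1 \<and> cntS {3,4,5} = 0"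
    show ?thesis
    proof (rule design_case[where pi = "(\<lambda>i::nat. if i = 0 then 0 else if i = 1 then 1 else if i = 2 then 3 else if i = 3 then 2 else if i = 4 then 4 else (5::nat))" and D = "{{0,1,2}, {0,1,4}, {0,2,3}, {0,3,5}, {0,4,5}, {1,2,5}, {1,3,4}, {1,3,5}, {2,3,4}, {2,4,5}}"])
      show "bij_betw (\<lambda>i::nat. if i = 0 then 0 else if i = 1 then 1 else if i = 2 then 3 else if i = 3 then 2 else if i = 4 then 4 else (5::nat)) {0..<6} {0..<6}" unfolding bij_betw_def s6 by (simp add: insert_commute)
      show "\<forall>t\<in>{{0,1,2}, {0,1,4}, {0,2,3}, {0,3,5}, {0,4,5}, {1,2,5}, {1,3,4}, {1,3,5}, {2,3,4}, {2,4,5}}. (\<lambda>i::nat. if i = 0 then 0 else if i = 1 then 1 else if i = 2 then 3 else if i = 3 then 2 else if i = 4 then 4 else (5::nat)) ` t \<in> Hblk ` {6..<16}" unfolding Hblk_img by (simp add: insert_commute)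
      fix i j k assume "i < j" "j < k" "k < (6::nat)"
      then show "cntS {i,j,k} \<le> 1 \<and> (cntS {i,j,k} \<noteq> 0 \<longrightarrow> {i,j,k} \<in> {{0,1,2}, {0,1,4}, {0,2,3}, {0,3,5}, {0,4,5}, {1,2,5}, {1,3,4}, {1,3,5}, {2,3,4}, {2,4,5}})"
        by (rule all20[where P = "\<lambda>i j k. cntS {i,j,k} \<le> 1 \<and> (cntS {i,j,k} \<noteq> 0 \<longrightarrow> {i,j,k} \<in> {{0,1,2}, {0,1,4}, {0,2,3}, {0,3,5}, {0,4,5}, {1,2,5}, {1,3,4}, {1,3,5}, {2,3,4}, {2,4,5}})"]) (simp_all only: c, simp_all)
    qed
  next
    assume c: "cntS {0,1,2} = 1 \<and> cntS {0,1,3} = 1 \<and> cntS {0,1,4} = 0 \<and> cntS {0,1,5} = 0 \<and> cntS {0,2,3} = 0 \<and> cntS {0,2,4} = 0 \<and> cntS {0,2,5} = 1 \<and> cntS {0,3,4} = 1 \<and> cntS {0,3,5} = 0 \<and> cntS {0,4,5} = 1 \<and> cntS {1,2,3} = 0 \<and> cntS {1,2,4} = 1 \<and> cntS {1,2,5} = 0 \<and> cntS {1,3,4} = 0 \<and> cntS {1,3,5} = 1 \<and> cntS {1,4,5} = 1 \<and> cntS {2,3,4} = 1 \<and> cntS {2,3,5} = 1 \<and> cntS {2,4,5} = 0 \<and> cntS {3,4,5} = 0"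
    show ?thesis
    proof (rule design_case[where pi = "(\<lambda>i::nat. if i = 0 then 0 else if i = 1 then 1 else if i = 2 then 3 else if i = 3 then 4 else if i = 4 then 5 else (2::nat))" and D = "{{0,1,2}, {0,1,3}, {0,2,5}, {0,3,4}, {0,4,5}, {1,2,4}, {1,3,5}, {1,4,5}, {2,3,4}, {2,3,5}}"])
      show "bij_betw (\<lambda>i::nat. if i = 0 then 0 else if i = 1 then 1 else if i = 2 then 3 else if i = 3 then 4 else if i = 4 then 5 else (2::nat)) {0..<6} {0..<6}" unfolding bij_betw_def s6 by (simp add: insert_commute)
      show "\<forall>t\<in>{{0,1,2}, {0,1,3}, {0,2,5}, {0,3,4}, {0,4,5}, {1,2,4}, {1,3,5}, {1,4,5}, {2,3,4}, {2,3,5}}. (\<lambda>i::nat. if i = 0 then 0 else if i = 1 then 1 else if i = 2 then 3 else if i = 3 then 4 else if i = 4 then 5 else (2::nat)) ` t \<in> Hblk ` {6..<16}" unfolding Hblk_img by (simp add: insert_commute)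
      fix i j k assume "i < j" "j < k" "k < (6::nat)"
      then show "cntS {i,j,k} \<le> 1 \<and> (cntS {i,j,k} \<noteq> 0 \<longrightarrow> {i,j,k} \<in> {{0,1,2}, {0,1,3}, {0,2,5}, {0,3,4}, {0,4,5}, {1,2,4}, {1,3,5}, {1,4,5}, {2,3,4}, {2,3,5}})"
        by (rule all20[where P = "\<lambda>i j k. cntS {i,j,k} \<le> 1 \<and> (cntS {i,j,k} \<noteq> 0 \<longrightarrow> {i,j,k} \<in> {{0,1,2}, {0,1,3}, {0,2,5}, {0,3,4}, {0,4,5}, {1,2,4}, {1,3,5}, {1,4,5}, {2,3,4}, {2,3,5}})"]) (simp_all only: c, simp_all)
    qed
  next
    assume c: "cntS {0,1,2} = 1 \<and> cntS {0,1,3} = 1 \<and> cntS {0,1,4} = 0 \<and> cntS {0,1,5} = 0 \<and> cntS {0,2,3} = 0 \<and> cntS {0,2,4} = 1 \<and> cntS {0,2,5} = 0 \<and> cntS {0,3,4} = 0 \<and> cntS {0,3,5} = 1 \<and> cntS {0,4,5} = 1 \<and> cntS {1,2,3} = 0 \<and> cntS {1,2,4} = 0 \<and> cntS {1,2,5} = 1 \<and> cntS {1,3,4} = 1 \<and> cntS {1,3,5} = 0 \<and> cntS {1,4,5} = 1 \<and> cntS {2,3,4} = 1 \<and> cntS {2,3,5} = 1 \<and> cntS {2,4,5} = 0 \<and> cntS {3,4,5} = 0"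
    show ?thesis
    proof (rule design_case[where pi = "(\<lambda>i::nat. if i = 0 then 0 else if i = 1 then 1 else if i = 2 then 3 else if i = 3 then 4 else if i = 4 then 2 else (5::nat))" and D = "{{0,1,2}, {0,1,3}, {0,2,4}, {0,3,5}, {0,4,5}, {1,2,5}, {1,3,4}, {1,4,5}, {2,3,4}, {2,3,5}}"])
      show "bij_betw (\<lambda>i::nat. if i = 0 then 0 else if i = 1 then 1 else if i = 2 then 3 else if i = 3 then 4 else if i = 4 then 2 else (5::nat)) {0..<6} {0..<6}" unfolding bij_betw_def s6 by (simp add: insert_commute)
      show "\<forall>t\<in>{{0,1,2}, {0,1,3}, {0,2,4}, {0,3,5}, {0,4,5}, {1,2,5}, {1,3,4}, {1,4,5}, {2,3,4}, {2,3,5}}. (\<lambda>i::nat. if i = 0 then 0 else if i = 1 then 1 else if i = 2 then 3 else if i = 3 then 4 else if i = 4 then 2 else (5::nat)) ` t \<in> Hblk ` {6..<16}" unfolding Hblk_img by (simp add: insert_commute)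
      fix i j k assume "i < j" "j < k" "k < (6::nat)"
      then show "cntS {i,j,k} \<le> 1 \<and> (cntS {i,j,k} \<noteq> 0 \<longrightarrow> {i,j,k} \<in> {{0,1,2}, {0,1,3}, {0,2,4}, {0,3,5}, {0,4,5}, {1,2,5}, {1,3,4}, {1,4,5}, {2,3,4}, {2,3,5}})"
        by (rule all20[where P = "\<lambda>i j k. cntS {i,j,k} \<le> 1 \<and> (cntS {i,j,k} \<noteq> 0 \<longrightarrow> {i,j,k} \<in> {{0,1,2}, {0,1,3}, {0,2,4}, {0,3,5}, {0,4,5}, {1,2,5}, {1,3,4}, {1,4,5}, {2,3,4}, {2,3,5}})"]) (simp_all only: c, simp_all)
    qed
  qed
qed

end

context hcase begin

lemma H_iso: "graph_iso V E H610_V H610_E"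
proof -
  obtain beta where b: "bij_betw beta B {0..<6::nat}"
    using finite_same_card_bij[OF finB, of "{0..<6::nat}"] hB by auto
  interpret hcase_lab V E A B d1 d2 beta by unfold_locales (rule b)
  show ?thesis by (rule H_iso_lab)
qed

end

context bip begin

lemma e_eq: "card A * d1 = card B * d2"
  using card_edges bip.card_edges[OF swap] by simp

lemma d2_le: "d2 \<le> card A" using bip.d1_le[OF swap] .
lemma d2_pos: "d2 \<ge> 1" using bip.d1_pos[OF swap] .

lemma arith1:
  assumes "d1 \<le> d2" "d1 \<ge> 4 \<or> (d1 = 3 \<and> d2 \<ge> 6)"
  shows "int (card (edges V E)) > 2 * int (card V) - 3"
proof -
  define m where "m = card A"
  define n where "n = card B"
  have e: "m * d1 = n * d2" using e_eq m_def n_def by simp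
  have ce: "card (edges V E) = m * d1" using card_edges m_def by simp
  have cv: "card V = m + n" using cardV m_def n_def by simp
  show ?thesis
  proof (cases "d1 \<ge> 4")
    case True
    have "n * d1 \<le> n * d2" using assms(1) by simp
    then have "n * d1 \<le> m * d1" using e by simp
    then have "n \<le> m" using True by simp
    moreover have "m * 4 \<le> m * d1" using True by simp
    ultimately show ?thesis using ce cv by linarith
  next
    case False
    then have d: "d1 = 3" "d2 \<ge> 6" using assms(2) by auto
    have "n * 6 \<le> n * d2" using d by simp
    then have "n * 6 \<le> m * 3" using e d by simp
    moreover have "card (edges V E) = m * 3" using ce d by simp
    ultimately show ?thesis using cv by linarith
  qed
qed

lemma arith2:
  assumes "d1 \<le> d2" "d1 \<le> 3" "d2 \<le> 5"
  shows "int (card (edges V E)) \<le> 2 * int (card V) - 3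
    \<or> (d1 = 3 \<and> d2 = 4 \<and> card A = 4 \<and> card B = 3)
    \<or> (d1 = 3 \<and> d2 = 5 \<and> card A = 5 \<and> card B = 3)
    \<or> (d1 = 3 \<and> d2 = 5 \<and> card A = 10 \<and> card B = 6)"
proof -
  define m where "m = card A"
  define n where "n = card B"
  have e: "m * d1 = n * d2" using e_eq m_def n_def by simp
  have ce: "card (edges V E) = m * d1" using card_edges m_def by simp
  have cv: "card V = m + n" using cardV m_def n_def by simp
  have b: "d1 \<le> n" "d2 \<le> m" "d1 \<ge> 1" using d1_le d2_le d1_pos n_def m_def by auto
  have "d1 = 1 \<or> d1 = 2 \<or> d1 = 3" using assms b by arith
  moreover have "d2 = 1 \<or> d2 = 2 \<or> d2 = 3 \<or> d2 = 4 \<or> d2 = 5" using assms b by arith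
  ultimately have "int (m * d1) \<le> 2 * int (m + n) - 3
    \<or> (d1 = 3 \<and> d2 = 4 \<and> m = 4 \<and> n = 3)
    \<or> (d1 = 3 \<and> d2 = 5 \<and> m = 5 \<and> n = 3)
    \<or> (d1 = 3 \<and> d2 = 5 \<and> m = 10 \<and> n = 6)"
    using e b assms(1) by (elim disjE) (simp_all, presburger+)
  then show ?thesis using ce cv m_def n_def by simp
qed

lemma complete_iso:
  assumes "d2 = card A" "card B = p" "card A = q"
  shows "graph_iso V E (K_bip_V p q) (K_bip_E p q)"
proof -
  have full: "E b a" if H: "b \<in> B" "a \<in> A" for a b
  proof -
    have "nb V E b \<subseteq> A" "card (nb V E b) = card A" using nbB card_nbB assms H by auto
    then have "nb V E b = A" using finA card_subset_eq by blast
    then show ?thesis using H unfolding nb_def by blast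
  qed
  obtain g where g: "bij_betw g B {0..<p}" using finite_same_card_bij[OF finB, of "{0..<p}"] assms by auto
  obtain h where h: "bij_betw h A {p..<p+q}" using finite_same_card_bij[OF finA, of "{p..<p+q}"] assms by auto
  define phi where "phi x = (if x \<in> B then g x else h x)" for x
  have "bij_betw phi (B \<union> A) ({0..<p} \<union> {p..<p+q})"
    unfolding phi_def by (rule bij_betw_disjoint_Un[OF g h]) (use disj in auto)
  moreover have "{0..<p} \<union> {p..<p+q} = {0..<p+q}" by auto
  moreover have "B \<union> A = V" using VAB by blast
  ultimately have bij: "bij_betw phi V (K_bip_V p q)" unfolding K_bip_V_def by simp
  have pB: "phi x < p" if "x \<in> B" for x using that g bij_betw_apply unfolding phi_def by fastforce
  have pA: "p \<le> phi x \<and> phi x < p + q" if "x \<in> A" for x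
  proof -
    have "x \<notin> B" using that disj by blast
    then show ?thesis using that h bij_betw_apply unfolding phi_def by fastforce
  qed
  have adj: "E u v \<longleftrightarrow> K_bip_E p q (phi u) (phi v)" if H: "u \<in> V" "v \<in> V" for u v
  proof -
    have uAB: "u \<in> A \<or> u \<in> B" and vAB: "v \<in> A \<or> v \<in> B" using H VAB by auto
    show ?thesis
    proof (cases "u \<in> A")
      case uA: True
      show ?thesis
      proof (cases "v \<in> A")
        case True
        then have "\<not> E u v" using uA eAB disj by blast
        then show ?thesis using pA[OF uA] pA[OF True] unfolding K_bip_E_def by auto
      next
        case False
        then have vB: "v \<in> B" using vAB by blast
        then have "E u v" using full uA Esym by blast
        then show ?thesis using pA[OF uA] pB[OF vB] unfolding K_bip_E_def by auto
      qed
    next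
      case False
      then have uB: "u \<in> B" using uAB by blast
      show ?thesis
      proof (cases "v \<in> A")
        case True
        then have "E u v" using full uB by blast
        then show ?thesis using pB[OF uB] pA[OF True] unfolding K_bip_E_def by auto
      next
        case False
        then have vB: "v \<in> B" using vAB by blast
        then have "\<not> E u v" using uB eAB disj by blast
        then show ?thesis using pB[OF uB] pB[OF vB] unfolding K_bip_E_def by auto
      qed
    qed
  qed
  show ?thesis unfolding graph_iso_def using bij adj by blast
qed

lemma H_iso_bip:
  assumes "d1 = 3" "d2 = 5" "card A = 10" "card B = 6"
  shows "graph_iso V E H610_V H610_E"
proof -
  interpret hcase V E A B d1 d2 by unfold_locales (use assms in auto)
  show ?thesis by (rule hcase.H_iso) unfold_locales
qed

lemma final:
  assumes "d1 \<le> d2"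
  shows "((min_degree V E \<ge> 4 \<or> (min_degree V E = 3 \<and> max_degree V E \<ge> 6))
           \<longrightarrow> int (card (edges V E)) > 2 * int (card V) - 3)
     \<and> ((min_degree V E \<le> 3 \<and> max_degree V E \<le> 5)
           \<longrightarrow> int (card (edges V E)) \<le> 2 * int (card V) - 3
               \<or> graph_iso V E (K_bip_V 3 4) (K_bip_E 3 4)
               \<or> graph_iso V E (K_bip_V 3 5) (K_bip_E 3 5)
               \<or> graph_iso V E H610_V H610_E)"
proof -
  have mn: "min_degree V E = d1" "max_degree V E = d2" using min_deg max_deg assms by auto
  show ?thesis
  proof (intro conjI impI)
    assume "4 \<le> min_degree V E \<or> min_degree V E = 3 \<and> 6 \<le> max_degree V E"
    then show "int (card (edges V E)) > 2 * int (card V) - 3" using arith1 assms mn by simp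
  next
    assume "min_degree V E \<le> 3 \<and> max_degree V E \<le> 5"
    then have "int (card (edges V E)) \<le> 2 * int (card V) - 3
    \<or> (d1 = 3 \<and> d2 = 4 \<and> card A = 4 \<and> card B = 3)
    \<or> (d1 = 3 \<and> d2 = 5 \<and> card A = 5 \<and> card B = 3)
    \<or> (d1 = 3 \<and> d2 = 5 \<and> card A = 10 \<and> card B = 6)" using arith2 assms mn by simp
    then show "int (card (edges V E)) \<le> 2 * int (card V) - 3
               \<or> graph_iso V E (K_bip_V 3 4) (K_bip_E 3 4)
               \<or> graph_iso V E (K_bip_V 3 5) (K_bip_E 3 5)
               \<or> graph_iso V E H610_V H610_E"
    proof (elim disjE)
      assume "d1 = 3 \<and> d2 = 4 \<and> card A = 4 \<and> card B = 3"
      then have "graph_iso V E (K_bip_V 3 4) (K_bip_E 3 4)" using complete_iso[of 3 4] by simp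
      then show ?thesis by blast
    next
      assume "d1 = 3 \<and> d2 = 5 \<and> card A = 5 \<and> card B = 3"
      then have "graph_iso V E (K_bip_V 3 5) (K_bip_E 3 5)" using complete_iso[of 3 5] by simp
      then show ?thesis by blast
    next
      assume "d1 = 3 \<and> d2 = 5 \<and> card A = 10 \<and> card B = 6"
      then have "graph_iso V E H610_V H610_E" using H_iso_bip by simp
      then show ?thesis by blast
    qed simp
  qed
qed

end

theorem lemma3p4:
  fixes V :: "'a set" and E :: "'a \<Rightarrow> 'a \<Rightarrow> bool"
  assumes "simple_graph V E"
    and "connected_graph V E"
    and "edge_transitive V E"
    and "\<not> vertex_transitive V E"
  shows "((min_degree V E \<ge> 4 \<or> (min_degree V E = 3 \<and> max_degree V E \<ge> 6))
           \<longrightarrow> int (card (edges V E)) > 2 * int (card V) - 3)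
     \<and> ((min_degree V E \<le> 3 \<and> max_degree V E \<le> 5)
           \<longrightarrow> int (card (edges V E)) \<le> 2 * int (card V) - 3
               \<or> graph_iso V E (K_bip_V 3 4) (K_bip_E 3 4)
               \<or> graph_iso V E (K_bip_V 3 5) (K_bip_E 3 5)
               \<or> graph_iso V E H610_V H610_E)"
proof -
  obtain A B where S: "V = A \<union> B" "A \<inter> B = {}" "A \<noteq> {}" "B \<noteq> {}"
    "\<And>u v. E u v \<Longrightarrow> (u \<in> A \<and> v \<in> B) \<or> (u \<in> B \<and> v \<in> A)"
    "\<And>a a'. a \<in> A \<Longrightarrow> a' \<in> A \<Longrightarrow> degree V E a = degree V E a'"
    "\<And>b b'. b \<in> B \<Longrightarrow> b' \<in> B \<Longrightarrow> degree V E b = degree V E b'"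
    "\<And>a b a' b'. a \<in> A \<Longrightarrow> b \<in> B \<Longrightarrow> a' \<in> A \<Longrightarrow> b' \<in> B \<Longrightarrow> E a b \<Longrightarrow> E a' b'
       \<Longrightarrow> \<exists>f. automorphism V E f \<and> f a = a' \<and> f b = b'"
    using graph_structure[OF assms] by blast
  obtain a0 where a0: "a0 \<in> A" using S(3) by blast
  obtain b0 where b0: "b0 \<in> B" using S(4) by blast
  interpret bip V E A B "degree V E a0" "degree V E b0"
  proof
    show "degree V E a = degree V E a0" if "a \<in> A" for a using S(6) that a0 by blast
    show "degree V E b = degree V E b0" if "b \<in> B" for b using S(7) that b0 by blast
  qed (use assms S in auto)
  show ?thesis
  proof (cases "degree V E a0 \<le> degree V E b0")
    case True
    then show ?thesis using final by blast
  next
    case False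
    then show ?thesis using bip.final[OF swap] by simp
  qed
qed

end
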